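(* The reduction $\to_{\mathsf{se}}$ is sound: whenever $B\to_{\mathsf{se}}C$ and $\Phi$ is an $\mathsf{SKS}$ derivation with associated atomic flow $B$, there exists an $\mathsf{SKS}$ derivation $\Psi$ with associated atomic flow $C$ and with the same premiss and conclusion as $\Phi$.
   Context: Formulae are built from the units $\mathsf f$ and $\mathsf t$, atoms, disjunction $[\alpha\vee\beta]$ and conjunction $(\alpha\wedge\beta)$; on atoms there is an involution $a\mapsto\bar a$ with $\bar a\neq a$. An inference step of a rule $\alpha/\beta$ rewrites $\xi\{\alpha\}$ into $\xi\{\beta\}$ for an arbitrary context (formula with a hole) $\xi$. A derivation from $\alpha$ (premiss) to $\beta$ (conclusion) is a finite chain of steps from $\alpha$ to $\beta$. System $\mathsf{SKS}$: interaction $\mathsf t/[a\vee\bar a]$; weakening $\mathsf f/a$; contraction $[a\vee a]/a$; cut $(a\wedge\bar a)/\mathsf f$; coweakening $a/\mathsf t$; cocontraction $a/(a\wedge a)$; switch $(\alpha\wedge[\beta\vee\gamma])/[(\alpha\wedge\beta)\vee\gamma]$; medial $[(\alpha\wedge\beta)\vee(\gamma\wedge\delta)]/([\alpha\vee\gamma]\wedge[\beta\vee\delta])$; and $\gamma/\delta$ whenever $\gamma=\delta$ is (either direction of) an instance of commutativity or associativity of $\vee,\wedge$, $[\alpha\vee\mathsf f]=\alpha$, $(\alpha\wedge\mathsf t)=\alpha$, $[\mathsf t\vee\mathsf t]=\mathsf t$, $(\mathsf f\wedge\mathsf f)=\mathsf f$. An atomic flow is a tuple $(V,E,\eta,up,lo)$: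 finite vertex and edge sets, a labelling of vertices by interaction, cut, weakening, coweakening, contraction, cocontraction, and maps $up:E\to V\cup\{\top\}$, $lo:E\to V\cup\{\bot\}$. Upper edges of $\nu$: $lo(\epsilon)=\nu$; lower edges: $up(\epsilon)=\nu$. (Upper, lower) edge numbers: $(0,2)$ interaction, $(2,0)$ cut, $(0,1)$ weakening, $(1,0)$ coweakening, $(2,1)$ contraction, $(1,2)$ cocontraction; no directed cycles; a sign map $\pi:E\to\{+,-\}$ exists giving all edges of a (co)contraction the same sign and the two edges of an interaction/cut different signs. Edges with $up=\top$ ($lo=\bot$) are the upper (lower) edges of the flow. The atomic flow of an $\mathsf{SKS}$ derivation traces atom occurrences: occurrences in contexts and instantiated subformulae of switch, medial, $=$ keep their edge through a step; each step of an atomic rule gives a vertex with that label whose upper edges are the redex occurrences in the step's premiss and lower edges those in its conclusion; occurrences in the premiss/conclusion of the derivation have $up=\top$ / $lo=\bot$. Reduction $\to_{\mathsf{se}}$: let $B$ contain an edge $\epsilon$ from an interaction $\iota$ to a cut $\kappa$; let $\epsilon_2$ be the other lower edge of $\iota$ and $\epsilon_3$ the other upper edge of $\kappa$. Let $A$ be obtained from $B$ by deleting $\iota$, $\kappa$ and $\epsilon$, so that $\epsilon_2$ becomes an upper edge and $\epsilon_3$ a lower edge of $A$; let $\epsilon_1,\dots,\epsilon_h$ be the other upper edges and $\epsilon'_1,\dots,\epsilon'_k$ the other lower edges of $A$. Take disjoint copies $\tilde A$, $\hat A$ of $A$. Then $B\to_{\mathsf{se}}C$ where $C$ is formed by: making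 $\tilde\epsilon_2$ the lower edge of a new weakening; making $\hat\epsilon_3$ the upper edge of a new coweakening; identifying $\tilde\epsilon_3$ and $\hat\epsilon_2$ into a single edge (from the upper endpoint of $\tilde\epsilon_3$ to the lower endpoint of $\hat\epsilon_2$); for each $i\le h$ adding a cocontraction with upper edge $\epsilon_i$ and lower edges $\tilde\epsilon_i,\hat\epsilon_i$; for each $j\le k$ adding a contraction with upper edges $\tilde\epsilon'_j,\hat\epsilon'_j$ and lower edge $\epsilon'_j$. *)

theory Defs
  imports Main
begin

datatype 'x formula = Ff | Tt | At 'x | Dis "'x formula" "'x formula" | Con "'x formula" "'x formula"

datatype 'x ctx = Hole | DL "'x ctx" "'x formula" | DR "'x formula" "'x ctx"
               | CL "'x ctx" "'x formula" | CR "'x formula" "'x ctx"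

fun plug :: "'x ctx \<Rightarrow> 'x formula \<Rightarrow> 'x formula" where
  "plug Hole a = a"
| "plug (DL c b) a = Dis (plug c a) b"
| "plug (DR b c) a = Dis b (plug c a)"
| "plug (CL c b) a = Con (plug c a) b"
| "plug (CR b c) a = Con b (plug c a)"

fun atoms_of :: "'x formula \<Rightarrow> 'x list" where
  "atoms_of Ff = []"
| "atoms_of Tt = []"
| "atoms_of (At x) = [x]"
| "atoms_of (Dis a b) = atoms_of a @ atoms_of b"
| "atoms_of (Con a b) = atoms_of a @ atoms_of b"

text \<open>Atoms: a name together with a polarity; the involution flips the polarity
  (every fixed-point-free involution is of this form).\<close>
type_synonym 'n atom = "'n \<times> bool"

definition bar :: "'n atom \<Rightarrow> 'n atom" where
  "bar a = (fst a, \<not> snd a)"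

datatype 'x inst =
    RInt 'x 'x | RCut 'x 'x | RWk 'x | RCowk 'x | RCtr 'x 'x 'x | RCoctr 'x 'x 'x
  | RSw "'x formula" "'x formula" "'x formula"
  | RMed "'x formula" "'x formula" "'x formula" "'x formula"
  | RCommD "'x formula" "'x formula" | RCommC "'x formula" "'x formula"
  | RAssocD "'x formula" "'x formula" "'x formula" | RAssocD' "'x formula" "'x formula" "'x formula"
  | RAssocC "'x formula" "'x formula" "'x formula" | RAssocC' "'x formula" "'x formula" "'x formula"
  | RUnitF "'x formula" | RUnitF' "'x formula" | RUnitT "'x formula" | RUnitT' "'x formula"
  | RTT | RTT' | RFF | RFF'

fun rprem :: "'x inst \<Rightarrow> 'x formula" where
  "rprem (RInt x y) = Tt"
| "rprem (RCut x y) = Con (At x) (At y)"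
| "rprem (RWk x) = Ff"
| "rprem (RCowk x) = At x"
| "rprem (RCtr x y z) = Dis (At x) (At y)"
| "rprem (RCoctr x y z) = At x"
| "rprem (RSw a b c) = Con a (Dis b c)"
| "rprem (RMed a b c d) = Dis (Con a b) (Con c d)"
| "rprem (RCommD a b) = Dis a b"
| "rprem (RCommC a b) = Con a b"
| "rprem (RAssocD a b c) = Dis (Dis a b) c"
| "rprem (RAssocD' a b c) = Dis a (Dis b c)"
| "rprem (RAssocC a b c) = Con (Con a b) c"
| "rprem (RAssocC' a b c) = Con a (Con b c)"
| "rprem (RUnitF a) = Dis a Ff"
| "rprem (RUnitF' a) = a"
| "rprem (RUnitT a) = Con a Tt"
| "rprem (RUnitT' a) = a"
| "rprem RTT = Dis Tt Tt"
| "rprem RTT' = Tt"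
| "rprem RFF = Con Ff Ff"
| "rprem RFF' = Ff"

fun rconcl :: "'x inst \<Rightarrow> 'x formula" where
  "rconcl (RInt x y) = Dis (At x) (At y)"
| "rconcl (RCut x y) = Ff"
| "rconcl (RWk x) = At x"
| "rconcl (RCowk x) = Tt"
| "rconcl (RCtr x y z) = At z"
| "rconcl (RCoctr x y z) = Con (At y) (At z)"
| "rconcl (RSw a b c) = Dis (Con a b) c"
| "rconcl (RMed a b c d) = Con (Dis a c) (Dis b d)"
| "rconcl (RCommD a b) = Dis b a"
| "rconcl (RCommC a b) = Con b a"
| "rconcl (RAssocD a b c) = Dis a (Dis b c)"
| "rconcl (RAssocD' a b c) = Dis (Dis a b) c"
| "rconcl (RAssocC a b c) = Con a (Con b c)"
| "rconcl (RAssocC' a b c) = Con (Con a b) c"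
| "rconcl (RUnitF a) = a"
| "rconcl (RUnitF' a) = Dis a Ff"
| "rconcl (RUnitT a) = a"
| "rconcl (RUnitT' a) = Con a Tt"
| "rconcl RTT = Tt"
| "rconcl RTT' = Dis Tt Tt"
| "rconcl RFF = Ff"
| "rconcl RFF' = Con Ff Ff"

fun sks_inst :: "'n atom inst \<Rightarrow> bool" where
  "sks_inst (RInt x y) = (y = bar x)"
| "sks_inst (RCut x y) = (y = bar x)"
| "sks_inst (RCtr x y z) = (y = x \<and> z = x)"
| "sks_inst (RCoctr x y z) = (y = x \<and> z = x)"
| "sks_inst _ = True"

datatype vkind = KInt | KCut | KWk | KCowk | KCtr | KCoctr

fun is_atomic :: "'x inst \<Rightarrow> bool" where
  "is_atomic (RInt x y) = True"
| "is_atomic (RCut x y) = True"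
| "is_atomic (RWk x) = True"
| "is_atomic (RCowk x) = True"
| "is_atomic (RCtr x y z) = True"
| "is_atomic (RCoctr x y z) = True"
| "is_atomic _ = False"

fun kind :: "'x inst \<Rightarrow> vkind" where
  "kind (RInt x y) = KInt"
| "kind (RCut x y) = KCut"
| "kind (RWk x) = KWk"
| "kind (RCowk x) = KCowk"
| "kind (RCtr x y z) = KCtr"
| "kind (RCoctr x y z) = KCoctr"
| "kind _ = KInt"

type_synonym 'x deriv = "'x formula \<times> ('x ctx \<times> 'x inst) list"

fun chain_ok :: "'x formula \<Rightarrow> ('x ctx \<times> 'x inst) list \<Rightarrow> bool" where
  "chain_ok a [] = True"
| "chain_ok a ((c, r) # s) = (plug c (rprem r) = a \<and> chain_ok (plug c (rconcl r)) s)"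

fun forms :: "'x formula \<Rightarrow> ('x ctx \<times> 'x inst) list \<Rightarrow> 'x formula list" where
  "forms a [] = [a]"
| "forms a ((c, r) # s) = a # forms (plug c (rconcl r)) s"

definition premiss :: "'x deriv \<Rightarrow> 'x formula" where
  "premiss D = fst D"

definition conclusion :: "'x deriv \<Rightarrow> 'x formula" where
  "conclusion D = last (forms (fst D) (snd D))"

definition sks_deriv :: "'n atom deriv \<Rightarrow> bool" where
  "sks_deriv D \<longleftrightarrow> chain_ok (fst D) (snd D) \<and> (\<forall>(c, r) \<in> set (snd D). sks_inst r)"

record ('v, 'e) flow =
  fV :: "'v set"
  fE :: "'e set"
  flab :: "'v \<Rightarrow> vkind"
  fup :: "'e \<Rightarrow> 'v option"   \<comment> \<open>None = top\<close>
  flo :: "'e \<Rightarrow> 'v option"   \<comment> \<open>None = bottom\<close>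

fun n_upper :: "vkind \<Rightarrow> nat" where
  "n_upper KInt = 0" | "n_upper KCut = 2" | "n_upper KWk = 0"
| "n_upper KCowk = 1" | "n_upper KCtr = 2" | "n_upper KCoctr = 1"

fun n_lower :: "vkind \<Rightarrow> nat" where
  "n_lower KInt = 2" | "n_lower KCut = 0" | "n_lower KWk = 1"
| "n_lower KCowk = 0" | "n_lower KCtr = 1" | "n_lower KCoctr = 2"

definition upper_edges :: "('v, 'e) flow \<Rightarrow> 'v \<Rightarrow> 'e set" where
  "upper_edges F v = {e \<in> fE F. flo F e = Some v}"

definition lower_edges :: "('v, 'e) flow \<Rightarrow> 'v \<Rightarrow> 'e set" where
  "lower_edges F v = {e \<in> fE F. fup F e = Some v}"

definition atomic_flow :: "('v, 'e) flow \<Rightarrow> bool" where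
  "atomic_flow F \<longleftrightarrow>
     finite (fV F) \<and> finite (fE F) \<and>
     (\<forall>e \<in> fE F. (\<forall>v. fup F e = Some v \<longrightarrow> v \<in> fV F) \<and> (\<forall>v. flo F e = Some v \<longrightarrow> v \<in> fV F)) \<and>
     (\<forall>v \<in> fV F. card (upper_edges F v) = n_upper (flab F v) \<and>
                 card (lower_edges F v) = n_lower (flab F v)) \<and>
     acyclic {(u, v). \<exists>e \<in> fE F. fup F e = Some u \<and> flo F e = Some v} \<and>
     (\<exists>\<pi> :: 'e \<Rightarrow> bool. \<forall>v \<in> fV F.
        (flab F v \<in> {KCtr, KCoctr} \<longrightarrow>
           (\<forall>e1 \<in> upper_edges F v \<union> lower_edges F v. \<forall>e2 \<in> upper_edges F v \<union> lower_edges F v. \<pi> e1 = \<pi> e2)) \<and>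
        (flab F v = KInt \<longrightarrow> (\<forall>e1 \<in> lower_edges F v. \<forall>e2 \<in> lower_edges F v. e1 \<noteq> e2 \<longrightarrow> \<pi> e1 \<noteq> \<pi> e2)) \<and>
        (flab F v = KCut \<longrightarrow> (\<forall>e1 \<in> upper_edges F v. \<forall>e2 \<in> upper_edges F v. e1 \<noteq> e2 \<longrightarrow> \<pi> e1 \<noteq> \<pi> e2)))"

definition flow_iso :: "('v, 'e) flow \<Rightarrow> ('w, 'f) flow \<Rightarrow> bool" where
  "flow_iso F G \<longleftrightarrow> (\<exists>fv fe. bij_betw fv (fV F) (fV G) \<and> bij_betw fe (fE F) (fE G) \<and>
     (\<forall>v \<in> fV F. flab G (fv v) = flab F v) \<and>
     (\<forall>e \<in> fE F. fup G (fe e) = map_option fv (fup F e) \<and> flo G (fe e) = map_option fv (flo F e)))"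

text \<open>Atom occurrences are traced by annotating each atom occurrence with an edge name
  (a natural number); structural steps move annotated atoms along, atomic steps
  consume the annotated atoms of their premiss and create fresh ones.\<close>

type_synonym 'n ann_deriv = "('n atom \<times> nat) deriv"

definition lbls :: "('x \<times> nat) formula \<Rightarrow> nat set" where
  "lbls f = snd ` set (atoms_of f)"

definition erase :: "'n ann_deriv \<Rightarrow> 'n atom deriv" where
  "erase D = (map_formula fst (fst D), map (map_prod (map_ctx fst) (map_inst fst)) (snd D))"

definition ann_ok :: "'n ann_deriv \<Rightarrow> bool" where
  "ann_ok D \<longleftrightarrow> sks_deriv (erase D) \<and> chain_ok (fst D) (snd D) \<and>
     (\<forall>f \<in> set (forms (fst D) (snd D)). distinct (map snd (atoms_of f))) \<and>
     (\<forall>i < length (snd D). is_atomic (snd (snd D ! i)) \<longrightarrow>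
        (\<forall>e \<in> lbls (rconcl (snd (snd D ! i))). \<forall>j \<le> i. e \<notin> lbls (forms (fst D) (snd D) ! j)))"

definition flow_of_ann :: "'n ann_deriv \<Rightarrow> (nat, nat) flow" where
  "flow_of_ann D = (let fs = forms (fst D) (snd D); st = snd D; n = length st in
     \<lparr> fV = {i. i < n \<and> is_atomic (snd (st ! i))},
       fE = \<Union> (lbls ` set fs),
       flab = (\<lambda>i. kind (snd (st ! i))),
       fup = (\<lambda>e. if e \<in> lbls (hd fs) then None
                  else Some (THE i. i < n \<and> is_atomic (snd (st ! i)) \<and> e \<in> lbls (rconcl (snd (st ! i))))),
       flo = (\<lambda>e. if e \<in> lbls (last fs) then None
                  else Some (THE i. i < n \<and> is_atomic (snd (st ! i)) \<and> e \<in> lbls (rprem (snd (st ! i))))) \<rparr>)"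

definition is_flow_of :: "('v, 'e) flow \<Rightarrow> 'n atom deriv \<Rightarrow> bool" where
  "is_flow_of B Phi \<longleftrightarrow> (\<exists>D. ann_ok D \<and> erase D = Phi \<and> flow_iso B (flow_of_ann D))"

datatype ('v, 'e) sev = Cp bool 'v | NW | NCW | NCoc 'e | NCon 'e
datatype 'e see = ECp bool 'e | EIn 'e | EOut 'e | EMid

text \<open>Cp True / ECp True = tilde copy, Cp False / ECp False = hat copy.
  EIn e: the original upper edge e above its new cocontraction; EOut e: the original
  lower edge e below its new contraction; EMid: the identification of tilde eps3 and hat eps2.\<close>

definition se_construct :: "('v, 'e) flow \<Rightarrow> 'e \<Rightarrow> (('v, 'e) sev, 'e see) flow" where
  "se_construct B \<epsilon> = (let
      \<iota> = the (fup B \<epsilon>); \<kappa> = the (flo B \<epsilon>);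
      \<epsilon>2 = (THE e. e \<in> fE B \<and> e \<noteq> \<epsilon> \<and> fup B e = Some \<iota>);
      \<epsilon>3 = (THE e. e \<in> fE B \<and> e \<noteq> \<epsilon> \<and> flo B e = Some \<kappa>);
      VA = fV B - {\<iota>, \<kappa>};
      EA = fE B - {\<epsilon>};
      Ups = {e \<in> EA. e \<noteq> \<epsilon>2 \<and> fup B e = None};
      Los = {e \<in> EA. e \<noteq> \<epsilon>3 \<and> flo B e = None};
      upc = (\<lambda>b e. if e = \<epsilon>2 then Some NW
                    else (case fup B e of None \<Rightarrow> Some (NCoc e) | Some v \<Rightarrow> Some (Cp b v)));
      loc = (\<lambda>b e. if e = \<epsilon>3 then Some NCW
                    else (case flo B e of None \<Rightarrow> Some (NCon e) | Some v \<Rightarrow> Some (Cp b v)))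
    in
    \<lparr> fV = {Cp b v | b v. v \<in> VA} \<union> {NW, NCW} \<union> NCoc ` Ups \<union> NCon ` Los,
      fE = {ECp True e | e. e \<in> EA \<and> e \<noteq> \<epsilon>3} \<union> {ECp False e | e. e \<in> EA \<and> e \<noteq> \<epsilon>2}
           \<union> {EMid} \<union> EIn ` Ups \<union> EOut ` Los,
      flab = (\<lambda>x. case x of Cp b v \<Rightarrow> flab B v | NW \<Rightarrow> KWk | NCW \<Rightarrow> KCowk
                          | NCoc e \<Rightarrow> KCoctr | NCon e \<Rightarrow> KCtr),
      fup = (\<lambda>x. case x of ECp b e \<Rightarrow> upc b e | EIn e \<Rightarrow> None | EOut e \<Rightarrow> Some (NCon e)
                         | EMid \<Rightarrow> upc True \<epsilon>3),
      flo = (\<lambda>x. case x of ECp b e \<Rightarrow> loc b e | EIn e \<Rightarrow> Some (NCoc e) | EOut e \<Rightarrow> None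
                         | EMid \<Rightarrow> loc False \<epsilon>2) \<rparr>)"

definition se_red :: "('v, 'e) flow \<Rightarrow> ('w, 'f) flow \<Rightarrow> bool" where
  "se_red B C \<longleftrightarrow> (\<exists>\<epsilon> \<iota> \<kappa>. atomic_flow B \<and> \<epsilon> \<in> fE B \<and>
      fup B \<epsilon> = Some \<iota> \<and> flab B \<iota> = KInt \<and> flo B \<epsilon> = Some \<kappa> \<and> flab B \<kappa> = KCut \<and>
      flow_iso C (se_construct B \<epsilon>))"

end

theory Submission
  imports Defs "HOL-Library.Multiset" "HOL-Library.Countable"
begin

fun atoms_c :: "'x ctx \<Rightarrow> 'x list" where
  "atoms_c Hole = []"
| "atoms_c (DL c b) = atoms_c c @ atoms_of b"
| "atoms_c (DR b c) = atoms_of b @ atoms_c c"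
| "atoms_c (CL c b) = atoms_c c @ atoms_of b"
| "atoms_c (CR b c) = atoms_of b @ atoms_c c"

lemma mset_plug: "mset (atoms_of (plug c f)) = mset (atoms_c c) + mset (atoms_of f)"
  by (induction c) (auto simp: ac_simps)

lemma set_plug: "set (atoms_of (plug c f)) = set (atoms_c c) \<union> set (atoms_of f)"
  using mset_plug by (metis set_mset_mset set_mset_union)

definition dl :: "('x \<times> nat) formula \<Rightarrow> bool" where
  "dl f \<longleftrightarrow> distinct (map snd (atoms_of f))"

definition lblsc :: "('x \<times> nat) ctx \<Rightarrow> nat set" where
  "lblsc c = snd ` set (atoms_c c)"

definition dlc :: "('x \<times> nat) ctx \<Rightarrow> bool" where
  "dlc c \<longleftrightarrow> distinct (map snd (atoms_c c))"

lemma lbls_plug: "lbls (plug c f) = lblsc c \<union> lbls f"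
  by (auto simp: lbls_def lblsc_def set_plug)

lemma dl_plug: "dl (plug c f) \<longleftrightarrow> dlc c \<and> dl f \<and> lblsc c \<inter> lbls f = {}"
proof -
  have "mset (map snd (atoms_of (plug c f))) = mset (map snd (atoms_c c @ atoms_of f))"
    by (simp add: mset_plug)
  then have "dl (plug c f) \<longleftrightarrow> distinct (map snd (atoms_c c @ atoms_of f))"
    unfolding dl_def by (rule mset_eq_imp_distinct_iff)
  then show ?thesis by (auto simp: dl_def dlc_def lblsc_def lbls_def)
qed

lemma lbls_simps[simp]:
  "lbls Ff = {}" "lbls Tt = {}" "lbls (At x) = {snd x}"
  "lbls (Dis a b) = lbls a \<union> lbls b" "lbls (Con a b) = lbls a \<union> lbls b"
  by (auto simp: lbls_def)

lemma dl_simps[simp]: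
  "dl Ff" "dl Tt" "dl (At x)"
  "dl (Dis a b) \<longleftrightarrow> dl a \<and> dl b \<and> lbls a \<inter> lbls b = {}"
  "dl (Con a b) \<longleftrightarrow> dl a \<and> dl b \<and> lbls a \<inter> lbls b = {}"
  by (auto simp: dl_def lbls_def)

lemma struct_mset: "\<not> is_atomic r \<Longrightarrow> mset (atoms_of (rconcl r)) = mset (atoms_of (rprem r))"
  by (cases r) (auto simp: ac_simps)

lemma struct_set: "\<not> is_atomic r \<Longrightarrow> set (atoms_of (rconcl r)) = set (atoms_of (rprem r))"
  using struct_mset by (metis set_mset_mset)

lemma struct_lbls: "\<not> is_atomic r \<Longrightarrow> lbls (rconcl r) = lbls (rprem r)"
  by (simp add: lbls_def struct_set)

lemma struct_dl: "\<not> is_atomic r \<Longrightarrow> dl (plug c (rconcl r)) = dl (plug c (rprem r))"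
proof -
  assume "\<not> is_atomic r"
  then have "mset (map snd (atoms_of (plug c (rconcl r)))) = mset (map snd (atoms_of (plug c (rprem r))))"
    by (simp add: mset_plug struct_mset)
  then show ?thesis unfolding dl_def by (rule mset_eq_imp_distinct_iff)
qed

fun endf :: "'x formula \<Rightarrow> ('x ctx \<times> 'x inst) list \<Rightarrow> 'x formula" where
  "endf a [] = a"
| "endf a ((c, r) # s) = endf (plug c (rconcl r)) s"

lemma forms_ne: "forms a s \<noteq> []"
  by (induction a s rule: forms.induct) auto

lemma last_forms: "last (forms a s) = endf a s"
  by (induction a s rule: forms.induct) (auto simp: forms_ne)

lemma hd_forms: "hd (forms a s) = a"
  by (cases s) auto

lemma chain_ok_append: "chain_ok a (s1 @ s2) \<longleftrightarrow> chain_ok a s1 \<and> chain_ok (endf a s1) s2"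
  by (induction a s1 rule: chain_ok.induct) auto

lemma endf_append: "endf a (s1 @ s2) = endf (endf a s1) s2"
  by (induction a s1 rule: endf.induct) auto

fun created :: "(('x \<times> nat) ctx \<times> ('x \<times> nat) inst) list \<Rightarrow> nat set" where
  "created [] = {}"
| "created ((c, r) # s) = (if is_atomic r then lbls (rconcl r) else {}) \<union> created s"

fun consumed :: "(('x \<times> nat) ctx \<times> ('x \<times> nat) inst) list \<Rightarrow> nat set" where
  "consumed [] = {}"
| "consumed ((c, r) # s) = (if is_atomic r then lbls (rprem r) else {}) \<union> consumed s"

definition sig :: "('x \<times> nat) inst \<Rightarrow> vkind \<times> nat set \<times> nat set" where
  "sig r = (kind r, lbls (rprem r), lbls (rconcl r))"

fun sigs :: "(('x \<times> nat) ctx \<times> ('x \<times> nat) inst) list \<Rightarrow> (vkind \<times> nat set \<times> nat set) set" where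
  "sigs [] = {}"
| "sigs ((c, r) # s) = (if is_atomic r then {sig r} else {}) \<union> sigs s"

lemma created_append[simp]: "created (s1 @ s2) = created s1 \<union> created s2"
  by (induction s1 rule: created.induct) auto
lemma consumed_append[simp]: "consumed (s1 @ s2) = consumed s1 \<union> consumed s2"
  by (induction s1 rule: consumed.induct) auto
lemma sigs_append[simp]: "sigs (s1 @ s2) = sigs s1 \<union> sigs s2"
  by (induction s1 rule: sigs.induct) auto

fun goodR :: "nat set \<Rightarrow> ('x \<times> nat) formula \<Rightarrow> (('x \<times> nat) ctx \<times> ('x \<times> nat) inst) list \<Rightarrow> bool" where
  "goodR X a [] = dl a"
| "goodR X a ((c, r) # s) = (plug c (rprem r) = a \<and> dl a \<and>
      (is_atomic r \<longrightarrow> lbls (rconcl r) \<inter> (X \<union> lbls a) = {}) \<and>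
      goodR (X \<union> lbls a) (plug c (rconcl r)) s)"

definition good :: "('x \<times> nat) formula \<Rightarrow> (('x \<times> nat) ctx \<times> ('x \<times> nat) inst) list \<Rightarrow> bool" where
  "good a s = goodR {} a s"

lemma goodR_X: "goodR X a s \<longleftrightarrow> goodR {} a s \<and> X \<inter> created s = {}"
proof (induction s arbitrary: X a)
  case Nil then show ?case by simp
next
  case (Cons st s)
  obtain c r where st: "st = (c, r)" by (cases st)
  show ?case using Cons.IH[of "X \<union> lbls a"] Cons.IH[of "lbls a"] unfolding st by auto
qed

lemma good_Nil[simp]: "good a [] = dl a" by (simp add: good_def)

lemma good_Cons: "good a ((c, r) # s) \<longleftrightarrow> plug c (rprem r) = a \<and> dl a \<and>
   (is_atomic r \<longrightarrow> lbls (rconcl r) \<inter> lbls a = {}) \<and> good (plug c (rconcl r)) s \<and>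
   lbls a \<inter> created s = {}"
  unfolding good_def using goodR_X[of "lbls a" "plug c (rconcl r)" s] by auto

lemma good_dl: "good a s \<Longrightarrow> dl a"
proof (induction s)
  case (Cons st t) then show ?case by (cases st) (auto simp: good_Cons)
qed simp

lemma lbls_step: "plug c (rprem r) = a \<Longrightarrow>
   lbls (plug c (rconcl r)) \<subseteq> lbls a \<union> (if is_atomic r then lbls (rconcl r) else {})"
  by (auto simp: lbls_plug struct_lbls)

lemma good_chain: "good a s \<Longrightarrow> chain_ok a s"
  by (induction s arbitrary: a) (auto simp: good_Cons)

lemma good_end_lbls: "good a s \<Longrightarrow> lbls (endf a s) \<subseteq> lbls a \<union> created s"
proof (induction s arbitrary: a)
  case Nil then show ?case by simp
next
  case (Cons st s)
  obtain c r where st: "st = (c, r)" by (cases st)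
  from Cons.prems have "good (plug c (rconcl r)) s" "plug c (rprem r) = a" by (auto simp: st good_Cons)
  with Cons.IH lbls_step[of c r a] show ?case unfolding st by (auto split: if_splits)
qed

lemma good_endf_dl: "good a s \<Longrightarrow> dl (endf a s)"
  by (induction s arbitrary: a) (auto simp: good_Cons)

lemma good_fresh0: "good a s \<Longrightarrow> lbls a \<inter> created s = {}"
proof (induction s)
  case (Cons st t) then show ?case by (cases st) (auto simp: good_Cons)
qed simp

lemma good_append: "good a (s1 @ s2) \<longleftrightarrow>
   good a s1 \<and> good (endf a s1) s2 \<and> (lbls a \<union> created s1) \<inter> created s2 = {}"
proof (induction s1 arbitrary: a)
  case Nil
  then show ?case using good_fresh0[of a s2] good_dl[of a s2] by auto
next
  case (Cons st s1)
  obtain c r where st: "st = (c, r)" by (cases st)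
  show ?case unfolding st append_Cons good_Cons Cons.IH
    by (auto simp: lbls_plug struct_lbls)
qed


lemma all_less_Suc: "(\<forall>i<Suc n. P i) \<longleftrightarrow> P 0 \<and> (\<forall>i<n. P (Suc i))"
  by (auto simp: less_Suc_eq_0_disj)

lemma all_le_Suc: "(\<forall>j\<le>Suc i. P j) \<longleftrightarrow> P 0 \<and> (\<forall>j\<le>i. P (Suc j))"
  by (metis Suc_le_mono le0 not0_implies_Suc)

lemma goodR_index: "goodR X a s \<longleftrightarrow> chain_ok a s \<and> (\<forall>f\<in>set (forms a s). dl f) \<and>
   (\<forall>i<length s. is_atomic (snd (s ! i)) \<longrightarrow>
      (\<forall>e\<in>lbls (rconcl (snd (s ! i))). e \<notin> X \<and> (\<forall>j\<le>i. e \<notin> lbls (forms a s ! j))))"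
proof (induction s arbitrary: X a)
  case Nil then show ?case by simp
next
  case (Cons st s)
  obtain c r where st: "st = (c, r)" by (cases st)
  show ?case unfolding st length_Cons all_less_Suc
    by (simp add: Cons.IH all_le_Suc) blast
qed

definition sksA :: "(('n atom \<times> nat) ctx \<times> ('n atom \<times> nat) inst) list \<Rightarrow> bool" where
  "sksA s \<longleftrightarrow> (\<forall>(c, r)\<in>set s. sks_inst (map_inst fst r))"

definition mapS :: "('x \<Rightarrow> 'y) \<Rightarrow> ('x ctx \<times> 'x inst) list \<Rightarrow> ('y ctx \<times> 'y inst) list" where
  "mapS h s = map (map_prod (map_ctx h) (map_inst h)) s"

lemma plug_map: "plug (map_ctx h c) (map_formula h f) = map_formula h (plug c f)"
  by (induction c) auto

lemma rprem_map: "rprem (map_inst h r) = map_formula h (rprem r)"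
  by (cases r) auto
lemma rconcl_map: "rconcl (map_inst h r) = map_formula h (rconcl r)"
  by (cases r) auto
lemma is_atomic_map[simp]: "is_atomic (map_inst h r) = is_atomic r"
  by (cases r) auto
lemma kind_map[simp]: "kind (map_inst h r) = kind r"
  by (cases r) auto
lemma atoms_of_map: "atoms_of (map_formula h f) = map h (atoms_of f)"
  by (induction f) auto

lemma mapS_Nil[simp]: "mapS h [] = []" by (simp add: mapS_def)
lemma mapS_Cons[simp]: "mapS h ((c, r) # s) = (map_ctx h c, map_inst h r) # mapS h s"
  by (simp add: mapS_def)
lemma mapS_append[simp]: "mapS h (s1 @ s2) = mapS h s1 @ mapS h s2"
  by (simp add: mapS_def)

lemma chain_ok_map: "chain_ok a s \<Longrightarrow> chain_ok (map_formula h a) (mapS h s)"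
  by (induction a s rule: chain_ok.induct) (auto simp: plug_map rprem_map rconcl_map)

lemma endf_map: "endf (map_formula h a) (mapS h s) = map_formula h (endf a s)"
  by (induction a s rule: endf.induct) (auto simp: plug_map rconcl_map)

lemma forms_map: "forms (map_formula h a) (mapS h s) = map (map_formula h) (forms a s)"
  by (induction a s rule: forms.induct) (auto simp: plug_map rconcl_map)

lemma erase_eq: "erase D = (map_formula fst (fst D), mapS fst (snd D))"
  by (simp add: erase_def mapS_def)

lemma sks_deriv_erase: "chain_ok a s \<Longrightarrow> sksA s \<Longrightarrow> sks_deriv (erase (a, s))"
  unfolding sks_deriv_def erase_eq sksA_def
  using chain_ok_map[of a s fst] by (auto simp: mapS_def)

lemma ann_ok_iff: "ann_ok D \<longleftrightarrow> good (fst D) (snd D) \<and> sksA (snd D)"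
proof -
  have 1: "sks_deriv (erase D) \<Longrightarrow> sksA (snd D)"
    unfolding sks_deriv_def erase_eq sksA_def mapS_def by auto
  show ?thesis unfolding ann_ok_def good_def goodR_index
    using 1 sks_deriv_erase[of "fst D" "snd D"] by (auto simp: dl_def)
qed

lemma created_set: "created s = (\<Union>(c, r)\<in>set s. if is_atomic r then lbls (rconcl r) else {})"
  by (induction s rule: created.induct) auto
lemma consumed_set: "consumed s = (\<Union>(c, r)\<in>set s. if is_atomic r then lbls (rprem r) else {})"
  by (induction s rule: consumed.induct) auto
lemma sigs_set: "sigs s = {sig r | c r. (c, r) \<in> set s \<and> is_atomic r}"
  by (induction s rule: sigs.induct) auto

lemma good_G2: "good a s \<Longrightarrow> lbls (endf a s) \<union> consumed s = lbls a \<union> created s"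
proof (induction s arbitrary: a)
  case Nil then show ?case by simp
next
  case (Cons st s)
  obtain c r where st: "st = (c, r)" by (cases st)
  from Cons.prems have g: "good (plug c (rconcl r)) s" "plug c (rprem r) = a" by (auto simp: st good_Cons)
  have IH: "lbls (endf (plug c (rconcl r)) s) \<union> consumed s = lblsc c \<union> lbls (rconcl r) \<union> created s"
    using Cons.IH[OF g(1)] by (simp add: lbls_plug)
  have A: "lbls a = lblsc c \<union> lbls (rprem r)" using g(2) by (auto simp: lbls_plug)
  show ?case
  proof (cases "is_atomic r")
    case True then show ?thesis using IH A unfolding st by auto
  next
    case False then show ?thesis using IH A struct_lbls[OF False] unfolding st by auto
  qed
qed

lemma good_G3: "good a s \<Longrightarrow> consumed s \<inter> lbls (endf a s) = {}"
proof (induction s arbitrary: a)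
  case Nil then show ?case by simp
next
  case (Cons st s)
  obtain c r where st: "st = (c, r)" by (cases st)
  from Cons.prems have g: "good (plug c (rconcl r)) s" "plug c (rprem r) = a" "dl a"
    "is_atomic r \<longrightarrow> lbls (rconcl r) \<inter> lbls a = {}" "lbls a \<inter> created s = {}"
    by (auto simp: st good_Cons)
  have "lbls (endf (plug c (rconcl r)) s) \<subseteq> lbls (plug c (rconcl r)) \<union> created s"
    using good_end_lbls[OF g(1)] .
  moreover have "is_atomic r \<Longrightarrow> lbls (rprem r) \<inter> lbls (plug c (rconcl r)) = {}"
    using g(2,3,4) by (auto simp: lbls_plug dl_plug)
  moreover have "lbls (rprem r) \<subseteq> lbls a" using g(2) by (auto simp: lbls_plug)
  ultimately show ?case using Cons.IH[OF g(1)] g(5) unfolding st by (simp; blast)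
qed

lemma good_allL: "good a s \<Longrightarrow> (\<Union>f\<in>set (forms a s). lbls f) = lbls a \<union> created s"
proof (induction s arbitrary: a)
  case Nil then show ?case by simp
next
  case (Cons st s)
  obtain c r where st: "st = (c, r)" by (cases st)
  from Cons.prems have g: "good (plug c (rconcl r)) s" "plug c (rprem r) = a" by (auto simp: st good_Cons)
  show ?case using Cons.IH[OF g(1)] g(2) unfolding st
    by (auto simp: lbls_plug struct_lbls)
qed

lemma created_mem: "(c, r) \<in> set s \<Longrightarrow> is_atomic r \<Longrightarrow> lbls (rconcl r) \<subseteq> created s"
  by (auto simp: created_set)
lemma consumed_mem: "(c, r) \<in> set s \<Longrightarrow> is_atomic r \<Longrightarrow> lbls (rprem r) \<subseteq> consumed s"
  by (auto simp: consumed_set)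

lemma good_later: "good a (s1 @ (c, r) # s2) \<Longrightarrow> is_atomic r \<Longrightarrow>
   lbls (rconcl r) \<inter> created s2 = {} \<and> lbls (rprem r) \<inter> consumed s2 = {}"
proof -
  assume g0: "good a (s1 @ (c, r) # s2)" and at: "is_atomic r"
  let ?b = "endf a s1"
  from g0 have g: "good ?b ((c, r) # s2)" by (simp add: good_append)
  then have h: "plug c (rprem r) = ?b" "dl ?b" "lbls (rconcl r) \<inter> lbls ?b = {}"
     "good (plug c (rconcl r)) s2" "lbls ?b \<inter> created s2 = {}"
    using at by (auto simp: good_Cons)
  have 1: "lbls (rconcl r) \<inter> created s2 = {}"
    using good_fresh0[OF h(4)] by (auto simp: lbls_plug)
  have "consumed s2 \<subseteq> lbls (plug c (rconcl r)) \<union> created s2"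
    using good_G2[OF h(4)] by auto
  moreover have "lblsc c \<inter> lbls (rprem r) = {}" using h(2) unfolding h(1)[symmetric] by (simp add: dl_plug)
  moreover have "lbls (rprem r) \<subseteq> lbls ?b" unfolding h(1)[symmetric] by (simp add: lbls_plug)
  ultimately have 2: "lbls (rprem r) \<inter> consumed s2 = {}"
  proof -
    assume C: "consumed s2 \<subseteq> lbls (plug c (rconcl r)) \<union> created s2"
      and D1: "lblsc c \<inter> lbls (rprem r) = {}" and S: "lbls (rprem r) \<subseteq> lbls ?b"
    { fix x assume x1: "x \<in> lbls (rprem r)" and x2: "x \<in> consumed s2"
      have xb: "x \<in> lbls ?b" using x1 S by blast
      have "x \<in> lblsc c \<or> x \<in> lbls (rconcl r) \<or> x \<in> created s2"
        using x2 C by (auto simp: lbls_plug)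
      then have False
      proof (elim disjE)
        assume "x \<in> lblsc c" then show False using D1 x1 by blast
      next
        assume "x \<in> lbls (rconcl r)" then show False using h(3) xb by blast
      next
        assume "x \<in> created s2" then show False using h(5) xb by blast
      qed }
    then show ?thesis by blast
  qed
  show ?thesis using 1 2 by blast
qed

lemma good_earlier: "good a (s1 @ (c, r) # s2) \<Longrightarrow> is_atomic r \<Longrightarrow>
   lbls (rconcl r) \<inter> created s1 = {} \<and> lbls (rprem r) \<inter> consumed s1 = {}"
proof -
  assume g0: "good a (s1 @ (c, r) # s2)" and at: "is_atomic r"
  let ?b = "endf a s1"
  from g0 have g: "good ?b ((c, r) # s2)" "good a s1" "(lbls a \<union> created s1) \<inter> created ((c,r)#s2) = {}"
    by (auto simp: good_append)
  then have h: "plug c (rprem r) = ?b" by (auto simp: good_Cons)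
  have 1: "lbls (rconcl r) \<inter> created s1 = {}" using g(3) at by auto
  have "lbls (rprem r) \<subseteq> lbls ?b" unfolding h[symmetric] by (simp add: lbls_plug)
  then have 2: "lbls (rprem r) \<inter> consumed s1 = {}" using good_G3[OF g(2)] by auto
  show ?thesis using 1 2 by blast
qed

lemma atomic_nonempty: "is_atomic r \<Longrightarrow> lbls (rprem r) \<union> lbls (rconcl r) \<noteq> {}"
  by (cases r) auto

lemma good_pos_disj: "good a s \<Longrightarrow> i < j \<Longrightarrow> j < length s \<Longrightarrow>
   is_atomic (snd (s ! i)) \<Longrightarrow> is_atomic (snd (s ! j)) \<Longrightarrow>
   lbls (rconcl (snd (s ! i))) \<inter> lbls (rconcl (snd (s ! j))) = {} \<and>
   lbls (rprem (snd (s ! i))) \<inter> lbls (rprem (snd (s ! j))) = {}"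
proof -
  assume g: "good a s" and ij: "i < j" "j < length s" and at: "is_atomic (snd (s ! i))" "is_atomic (snd (s ! j))"
  obtain c r where cr: "s ! i = (c, r)" by (cases "s ! i")
  have i: "i < length s" using ij by simp
  have s: "s = take i s @ (c, r) # drop (Suc i) s" using id_take_nth_drop[OF i] cr by simp
  have e1: "drop (Suc i) s ! (j - Suc i) = s ! j" using ij by simp
  have e2: "j - Suc i < length (drop (Suc i) s)" using ij by simp
  have "s ! j \<in> set (drop (Suc i) s)" using nth_mem[OF e2] e1 by simp
  moreover obtain c' r' where m2: "s ! j = (c', r')" by (cases "s ! j")
  ultimately have m: "(c', r') \<in> set (drop (Suc i) s)" "s ! j = (c', r')" by auto
  have l: "lbls (rconcl r) \<inter> created (drop (Suc i) s) = {} \<and> lbls (rprem r) \<inter> consumed (drop (Suc i) s) = {}"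
    using good_later[of a "take i s" c r "drop (Suc i) s"] g s at cr by simp
  show ?thesis using l created_mem[OF m(1)] consumed_mem[OF m(1)] at cr m(2) by auto
qed

lemma good_sig_inj: "good a s \<Longrightarrow> inj_on (\<lambda>i. sig (snd (s ! i))) {i. i < length s \<and> is_atomic (snd (s ! i))}"
proof (rule inj_onI)
  fix i j
  assume g: "good a s" and iA: "i \<in> {i. i < length s \<and> is_atomic (snd (s ! i))}"
    and jA: "j \<in> {i. i < length s \<and> is_atomic (snd (s ! i))}"
    and eq: "sig (snd (s ! i)) = sig (snd (s ! j))"
  show "i = j"
  proof (rule ccontr)
    assume "i \<noteq> j"
    then have "i < j \<or> j < i" by arith
    then have "lbls (rconcl (snd (s ! i))) \<inter> lbls (rconcl (snd (s ! j))) = {} \<and>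
      lbls (rprem (snd (s ! i))) \<inter> lbls (rprem (snd (s ! j))) = {}"
      using good_pos_disj[OF g] iA jA by auto
    then show False using eq atomic_nonempty[of "snd (s ! i)"] iA by (auto simp: sig_def)
  qed
qed

lemma sigs_nth: "sigs s = (\<lambda>i. sig (snd (s ! i))) ` {i. i < length s \<and> is_atomic (snd (s ! i))}"
proof
  show "sigs s \<subseteq> (\<lambda>i. sig (snd (s ! i))) ` {i. i < length s \<and> is_atomic (snd (s ! i))}"
  proof
    fix x assume "x \<in> sigs s"
    then obtain c r where cr: "x = sig r" "(c, r) \<in> set s" "is_atomic r" unfolding sigs_set by blast
    then obtain i where "i < length s" "s ! i = (c, r)" by (auto simp: in_set_conv_nth)
    then show "x \<in> (\<lambda>i. sig (snd (s ! i))) ` {i. i < length s \<and> is_atomic (snd (s ! i))}"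
      using cr by force
  qed
next
  show "(\<lambda>i. sig (snd (s ! i))) ` {i. i < length s \<and> is_atomic (snd (s ! i))} \<subseteq> sigs s"
  proof
    fix x assume "x \<in> (\<lambda>i. sig (snd (s ! i))) ` {i. i < length s \<and> is_atomic (snd (s ! i))}"
    then obtain i where i: "i < length s" "is_atomic (snd (s ! i))" "x = sig (snd (s ! i))" by blast
    have "(fst (s ! i), snd (s ! i)) \<in> set s" using i(1) by simp
    then show "x \<in> sigs s" unfolding sigs_set using i by blast
  qed
qed

lemma sigs_outs: "\<sigma> \<in> sigs s \<Longrightarrow> snd (snd \<sigma>) \<subseteq> created s"
  unfolding sigs_set created_set sig_def by auto
lemma sigs_ins: "\<sigma> \<in> sigs s \<Longrightarrow> fst (snd \<sigma>) \<subseteq> consumed s"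
  unfolding sigs_set consumed_set sig_def by auto
lemma created_sigs: "created s = \<Union> ((snd \<circ> snd) ` sigs s)"
  by (induction s rule: created.induct) (auto simp: sig_def)
lemma consumed_sigs: "consumed s = \<Union> ((fst \<circ> snd) ` sigs s)"
  by (induction s rule: consumed.induct) (auto simp: sig_def)

lemma good_sigs_disj: "good a s \<Longrightarrow> \<sigma>1 \<in> sigs s \<Longrightarrow> \<sigma>2 \<in> sigs s \<Longrightarrow> \<sigma>1 \<noteq> \<sigma>2 \<Longrightarrow>
   snd (snd \<sigma>1) \<inter> snd (snd \<sigma>2) = {} \<and> fst (snd \<sigma>1) \<inter> fst (snd \<sigma>2) = {}"
proof -
  assume g: "good a s" and m: "\<sigma>1 \<in> sigs s" "\<sigma>2 \<in> sigs s" and ne: "\<sigma>1 \<noteq> \<sigma>2"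
  obtain i where i: "i < length s" "is_atomic (snd (s ! i))" "\<sigma>1 = sig (snd (s ! i))"
    using m(1) sigs_nth by blast
  obtain j where j: "j < length s" "is_atomic (snd (s ! j))" "\<sigma>2 = sig (snd (s ! j))"
    using m(2) sigs_nth by blast
  have "i \<noteq> j" using i j ne by auto
  then have "i < j \<or> j < i" by arith
  then show ?thesis using good_pos_disj[OF g] i j by (auto simp: sig_def)
qed

definition sigflow :: "nat set \<Rightarrow> (vkind \<times> nat set \<times> nat set) set \<Rightarrow> nat set \<Rightarrow>
    (vkind \<times> nat set \<times> nat set, nat) flow" where
  "sigflow P Sg Q = \<lparr> fV = Sg, fE = P \<union> \<Union> ((snd \<circ> snd) ` Sg), flab = fst,
     fup = (\<lambda>e. if e \<in> P then None else Some (THE \<sigma>. \<sigma> \<in> Sg \<and> e \<in> snd (snd \<sigma>))),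
     flo = (\<lambda>e. if e \<in> Q then None else Some (THE \<sigma>. \<sigma> \<in> Sg \<and> e \<in> fst (snd \<sigma>))) \<rparr>"

abbreviation "SF a s \<equiv> sigflow (lbls a) (sigs s) (lbls (endf a s))"

lemma the_sig_out: "good a s \<Longrightarrow> \<sigma> \<in> sigs s \<Longrightarrow> e \<in> snd (snd \<sigma>) \<Longrightarrow>
   (THE \<sigma>. \<sigma> \<in> sigs s \<and> e \<in> snd (snd \<sigma>)) = \<sigma>"
  by (rule the_equality) (use good_sigs_disj in blast)+

lemma the_sig_in: "good a s \<Longrightarrow> \<sigma> \<in> sigs s \<Longrightarrow> e \<in> fst (snd \<sigma>) \<Longrightarrow>
   (THE \<sigma>. \<sigma> \<in> sigs s \<and> e \<in> fst (snd \<sigma>)) = \<sigma>"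
  by (rule the_equality) (use good_sigs_disj in blast)+

lemma flow_of_ann_SF:
  assumes g: "good a s"
  shows "flow_iso (flow_of_ann (a, s)) (SF a s)"
proof -
  let ?V = "{i. i < length s \<and> is_atomic (snd (s ! i))}"
  let ?fv = "\<lambda>i. sig (snd (s ! i))"
  have E1: "fE (flow_of_ann (a, s)) = lbls a \<union> created s"
    using good_allL[OF g] by (simp add: flow_of_ann_def Let_def)
  have E2: "fE (SF a s) = lbls a \<union> created s"
    by (simp add: sigflow_def created_sigs)
  have V: "fV (flow_of_ann (a, s)) = ?V" by (simp add: flow_of_ann_def Let_def)
  have bv: "bij_betw ?fv ?V (sigs s)"
    using good_sig_inj[OF g] sigs_nth[of s] by (simp add: bij_betw_def)
  have up: "fup (SF a s) e = map_option ?fv (fup (flow_of_ann (a, s)) e)"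
    if e: "e \<in> lbls a \<union> created s" for e
  proof (cases "e \<in> lbls a")
    case True then show ?thesis by (simp add: sigflow_def flow_of_ann_def Let_def hd_forms)
  next
    case False
    then have "e \<in> created s" using e by simp
    then obtain c r where cr: "(c, r) \<in> set s" "is_atomic r" "e \<in> lbls (rconcl r)"
      by (auto simp: created_set split: if_splits)
    then obtain i where i: "i < length s" "s ! i = (c, r)" by (auto simp: in_set_conv_nth)
    have th: "(THE i. i < length s \<and> is_atomic (snd (s ! i)) \<and> e \<in> lbls (rconcl (snd (s ! i)))) = i"
    proof (rule the_equality)
      show "i < length s \<and> is_atomic (snd (s ! i)) \<and> e \<in> lbls (rconcl (snd (s ! i)))" using i cr by simp
    next
      fix j assume j: "j < length s \<and> is_atomic (snd (s ! j)) \<and> e \<in> lbls (rconcl (snd (s ! j)))"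
      show "j = i"
      proof (rule ccontr)
        assume "j \<noteq> i" then have "i < j \<or> j < i" by arith
        then show False using good_pos_disj[OF g] i j cr by fastforce
      qed
    qed
    have sm: "sig r \<in> sigs s" using cr by (auto simp: sigs_set)
    have "(THE \<sigma>. \<sigma> \<in> sigs s \<and> e \<in> snd (snd \<sigma>)) = sig r"
      using the_sig_out[OF g sm] cr by (simp add: sig_def)
    then show ?thesis using False th i by (simp add: sigflow_def flow_of_ann_def Let_def hd_forms)
  qed
  have lo: "flo (SF a s) e = map_option ?fv (flo (flow_of_ann (a, s)) e)"
    if e: "e \<in> lbls a \<union> created s" for e
  proof (cases "e \<in> lbls (endf a s)")
    case True then show ?thesis by (simp add: sigflow_def flow_of_ann_def Let_def last_forms)
  next
    case False
    then have "e \<in> consumed s" using e good_G2[OF g] by blast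
    then obtain c r where cr: "(c, r) \<in> set s" "is_atomic r" "e \<in> lbls (rprem r)"
      by (auto simp: consumed_set split: if_splits)
    then obtain i where i: "i < length s" "s ! i = (c, r)" by (auto simp: in_set_conv_nth)
    have th: "(THE i. i < length s \<and> is_atomic (snd (s ! i)) \<and> e \<in> lbls (rprem (snd (s ! i)))) = i"
    proof (rule the_equality)
      show "i < length s \<and> is_atomic (snd (s ! i)) \<and> e \<in> lbls (rprem (snd (s ! i)))" using i cr by simp
    next
      fix j assume j: "j < length s \<and> is_atomic (snd (s ! j)) \<and> e \<in> lbls (rprem (snd (s ! j)))"
      show "j = i"
      proof (rule ccontr)
        assume "j \<noteq> i" then have "i < j \<or> j < i" by arith
        then show False using good_pos_disj[OF g] i j cr by fastforce
      qed
    qed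
    have sm: "sig r \<in> sigs s" using cr by (auto simp: sigs_set)
    have "(THE \<sigma>. \<sigma> \<in> sigs s \<and> e \<in> fst (snd \<sigma>)) = sig r"
      using the_sig_in[OF g sm] cr by (simp add: sig_def)
    then show ?thesis using False th i by (simp add: sigflow_def flow_of_ann_def Let_def last_forms)
  qed
  show ?thesis unfolding flow_iso_def
  proof (intro exI conjI)
    show "bij_betw ?fv (fV (flow_of_ann (a, s))) (fV (SF a s))" using bv V by (simp add: sigflow_def)
    show "bij_betw id (fE (flow_of_ann (a, s))) (fE (SF a s))" using E1 E2 by simp
    show "\<forall>v\<in>fV (flow_of_ann (a, s)). flab (SF a s) (?fv v) = flab (flow_of_ann (a, s)) v"
      by (simp add: sigflow_def flow_of_ann_def Let_def sig_def)
    show "\<forall>e\<in>fE (flow_of_ann (a, s)). fup (SF a s) (id e) = map_option ?fv (fup (flow_of_ann (a, s)) e) \<and>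
        flo (SF a s) (id e) = map_option ?fv (flo (flow_of_ann (a, s)) e)"
      using up lo E1 by simp
  qed
qed


section \<open>Context lifting\<close>

fun cc :: "'x ctx \<Rightarrow> 'x ctx \<Rightarrow> 'x ctx" where
  "cc Hole d = d"
| "cc (DL c b) d = DL (cc c d) b"
| "cc (DR b c) d = DR b (cc c d)"
| "cc (CL c b) d = CL (cc c d) b"
| "cc (CR b c) d = CR b (cc c d)"

lemma plug_cc[simp]: "plug (cc c d) f = plug c (plug d f)"
  by (induction c) auto

definition liftS :: "'x ctx \<Rightarrow> ('x ctx \<times> 'x inst) list \<Rightarrow> ('x ctx \<times> 'x inst) list" where
  "liftS c0 s = map (\<lambda>(c, r). (cc c0 c, r)) s"

lemma liftS_Nil[simp]: "liftS c0 [] = []" by (simp add: liftS_def)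
lemma liftS_Cons[simp]: "liftS c0 ((c, r) # s) = (cc c0 c, r) # liftS c0 s" by (simp add: liftS_def)
lemma liftS_append[simp]: "liftS c0 (s1 @ s2) = liftS c0 s1 @ liftS c0 s2" by (simp add: liftS_def)

lemma endf_lift: "endf (plug c0 a) (liftS c0 s) = plug c0 (endf a s)"
  by (induction a s rule: endf.induct) auto

lemma created_lift[simp]: "created (liftS c0 s) = created s"
  by (induction s rule: created.induct) auto
lemma consumed_lift[simp]: "consumed (liftS c0 s) = consumed s"
  by (induction s rule: consumed.induct) auto
lemma sigs_lift[simp]: "sigs (liftS c0 s) = sigs s"
  by (induction s rule: sigs.induct) auto

lemma sksA_lift[simp]: "sksA (liftS c0 s) = sksA s"
  by (auto simp: sksA_def liftS_def)

lemma good_lift: "good a s \<Longrightarrow> dl (plug c0 a) \<Longrightarrow> lblsc c0 \<inter> created s = {} \<Longrightarrow>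
    good (plug c0 a) (liftS c0 s)"
proof (induction s arbitrary: a)
  case Nil then show ?case by simp
next
  case (Cons st s)
  obtain c r where st: "st = (c, r)" by (cases st)
  from Cons.prems have g: "plug c (rprem r) = a" "dl a" "is_atomic r \<longrightarrow> lbls (rconcl r) \<inter> lbls a = {}"
     "good (plug c (rconcl r)) s" "lbls a \<inter> created s = {}"
    by (auto simp: st good_Cons)
  have d0: "dl (plug c0 a)" "lblsc c0 \<inter> created ((c, r) # s) = {}" using Cons.prems st by auto
  have lb: "lbls (plug c (rconcl r)) \<subseteq> lbls a \<union> (if is_atomic r then lbls (rconcl r) else {})"
    using lbls_step[OF g(1)] .
  have dn: "dl (plug c (rconcl r))" using good_dl[OF g(4)] .
  have dd: "dl (plug c0 (plug c (rconcl r)))"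
    unfolding dl_plug[of c0] using d0 dn lb by (auto simp: dl_plug split: if_splits)
  have ih: "good (plug c0 (plug c (rconcl r))) (liftS c0 s)"
    using Cons.IH[OF g(4) dd] d0 by auto
  show ?case unfolding st liftS_Cons good_Cons
    using g d0 ih by (auto simp: lbls_plug)
qed

section \<open>Relabelling\<close>

abbreviation rlf :: "(nat \<Rightarrow> nat) \<Rightarrow> ('x \<times> nat) formula \<Rightarrow> ('x \<times> nat) formula" where
  "rlf g f \<equiv> map_formula (apsnd g) f"

abbreviation rlS where "rlS g s \<equiv> mapS (apsnd g) s"

definition rsig :: "(nat \<Rightarrow> nat) \<Rightarrow> vkind \<times> nat set \<times> nat set \<Rightarrow> vkind \<times> nat set \<times> nat set" where
  "rsig g \<sigma> = (fst \<sigma>, g ` fst (snd \<sigma>), g ` snd (snd \<sigma>))"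

lemma lbls_rl[simp]: "lbls (rlf g f) = g ` lbls f"
  by (auto simp: lbls_def atoms_of_map image_image)

lemma map_snd_apsnd: "map snd (map (apsnd g) xs) = map g (map snd xs)"
  by (induction xs) auto

lemma distinct_map_inj: "inj g \<Longrightarrow> distinct (map g ys) = distinct ys"
  by (simp add: distinct_map inj_on_subset[of g UNIV])

lemma dl_rl: "inj g \<Longrightarrow> dl (rlf g f) = dl f"
  unfolding dl_def atoms_of_map map_snd_apsnd by (rule distinct_map_inj)

lemma created_rl: "created (rlS g s) = g ` created s"
  by (induction s rule: created.induct) (auto simp: rconcl_map)
lemma consumed_rl: "consumed (rlS g s) = g ` consumed s"
  by (induction s rule: consumed.induct) (auto simp: rprem_map)
lemma sigs_rl: "sigs (rlS g s) = rsig g ` sigs s"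
  by (induction s rule: sigs.induct) (auto simp: rprem_map rconcl_map sig_def rsig_def)

lemma sksA_rl: "sksA (rlS g s) = sksA s"
  by (auto simp: sksA_def mapS_def inst.map_comp comp_def)

lemma good_rl: "inj g \<Longrightarrow> good a s \<Longrightarrow> good (rlf g a) (rlS g s)"
proof (induction s arbitrary: a)
  case Nil then show ?case by (simp add: dl_rl)
next
  case (Cons st s)
  obtain c r where st: "st = (c, r)" by (cases st)
  from Cons.prems have g: "plug c (rprem r) = a" "dl a" "is_atomic r \<longrightarrow> lbls (rconcl r) \<inter> lbls a = {}"
     "good (plug c (rconcl r)) s" "lbls a \<inter> created s = {}"
    by (auto simp: st good_Cons)
  have ih: "good (rlf g (plug c (rconcl r))) (rlS g s)" using Cons.IH[OF Cons.prems(1) g(4)] .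
  show ?case unfolding st mapS_Cons good_Cons
    using g ih Cons.prems(1)
    by (auto simp: plug_map rprem_map rconcl_map dl_rl created_rl image_Int[symmetric])
qed

lemma erase_rl: "map_formula fst (rlf g f) = map_formula fst f"
  by (simp add: formula.map_comp comp_def)

section \<open>Substitution of a unit for a labelled atom\<close>

fun sf :: "nat \<Rightarrow> ('x \<times> nat) formula \<Rightarrow> ('x \<times> nat) formula \<Rightarrow> ('x \<times> nat) formula" where
  "sf l u Ff = Ff"
| "sf l u Tt = Tt"
| "sf l u (At x) = (if snd x = l then u else At x)"
| "sf l u (Dis a b) = Dis (sf l u a) (sf l u b)"
| "sf l u (Con a b) = Con (sf l u a) (sf l u b)"

fun sc :: "nat \<Rightarrow> ('x \<times> nat) formula \<Rightarrow> ('x \<times> nat) ctx \<Rightarrow> ('x \<times> nat) ctx" where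
  "sc l u Hole = Hole"
| "sc l u (DL c b) = DL (sc l u c) (sf l u b)"
| "sc l u (DR b c) = DR (sf l u b) (sc l u c)"
| "sc l u (CL c b) = CL (sc l u c) (sf l u b)"
| "sc l u (CR b c) = CR (sf l u b) (sc l u c)"

fun si :: "nat \<Rightarrow> ('x \<times> nat) formula \<Rightarrow> ('x \<times> nat) inst \<Rightarrow> ('x \<times> nat) inst" where
  "si l u (RSw a b c) = RSw (sf l u a) (sf l u b) (sf l u c)"
| "si l u (RMed a b c d) = RMed (sf l u a) (sf l u b) (sf l u c) (sf l u d)"
| "si l u (RCommD a b) = RCommD (sf l u a) (sf l u b)"
| "si l u (RCommC a b) = RCommC (sf l u a) (sf l u b)"
| "si l u (RAssocD a b c) = RAssocD (sf l u a) (sf l u b) (sf l u c)"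
| "si l u (RAssocD' a b c) = RAssocD' (sf l u a) (sf l u b) (sf l u c)"
| "si l u (RAssocC a b c) = RAssocC (sf l u a) (sf l u b) (sf l u c)"
| "si l u (RAssocC' a b c) = RAssocC' (sf l u a) (sf l u b) (sf l u c)"
| "si l u (RUnitF a) = RUnitF (sf l u a)"
| "si l u (RUnitF' a) = RUnitF' (sf l u a)"
| "si l u (RUnitT a) = RUnitT (sf l u a)"
| "si l u (RUnitT' a) = RUnitT' (sf l u a)"
| "si l u r = r"

lemma plug_sub: "plug (sc l u c) (sf l u f) = sf l u (plug c f)"
  by (induction c) auto

lemma sf_id: "l \<notin> lbls f \<Longrightarrow> sf l u f = f"
  by (induction f) auto

lemma si_atomic: "is_atomic r \<Longrightarrow> si l u r = r"
  by (cases r) auto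

lemma is_atomic_si[simp]: "is_atomic (si l u r) = is_atomic r"
  by (cases r) auto

lemma si_struct: "\<not> is_atomic r \<Longrightarrow> rprem (si l u r) = sf l u (rprem r) \<and> rconcl (si l u r) = sf l u (rconcl r)"
  by (cases r) auto

definition noL :: "nat \<Rightarrow> (('x \<times> nat) ctx \<times> ('x \<times> nat) inst) list \<Rightarrow> bool" where
  "noL l s \<longleftrightarrow> (\<forall>(c, r)\<in>set s. is_atomic r \<longrightarrow> l \<notin> lbls (rprem r) \<and> l \<notin> lbls (rconcl r))"

definition subS :: "nat \<Rightarrow> ('x \<times> nat) formula \<Rightarrow> (('x \<times> nat) ctx \<times> ('x \<times> nat) inst) list \<Rightarrow>
    (('x \<times> nat) ctx \<times> ('x \<times> nat) inst) list" where
  "subS l u s = map (\<lambda>(c, r). (sc l u c, si l u r)) s"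

lemma subS_Nil[simp]: "subS l u [] = []" by (simp add: subS_def)
lemma subS_Cons[simp]: "subS l u ((c, r) # s) = (sc l u c, si l u r) # subS l u s" by (simp add: subS_def)
lemma noL_Nil[simp]: "noL l []" by (simp add: noL_def)
lemma noL_Cons[simp]: "noL l ((c, r) # s) \<longleftrightarrow> (is_atomic r \<longrightarrow> l \<notin> lbls (rprem r) \<and> l \<notin> lbls (rconcl r)) \<and> noL l s"
  by (simp add: noL_def)

lemma sub_step: "noL l [(c, r)] \<Longrightarrow> rprem (si l u r) = sf l u (rprem r) \<and> rconcl (si l u r) = sf l u (rconcl r)"
  by (cases "is_atomic r") (auto simp: si_struct si_atomic sf_id noL_def)

lemma endf_sub: "noL l s \<Longrightarrow> endf (sf l u a) (subS l u s) = sf l u (endf a s)"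
proof (induction a s rule: endf.induct)
  case (2 a c r s)
  then show ?case using sub_step[of l c r u] by (simp add: plug_sub)
qed simp

lemma atoms_sf: "atoms_of u = [] \<Longrightarrow> atoms_of (sf l u f) = filter (\<lambda>x. snd x \<noteq> l) (atoms_of f)"
  by (induction f) auto

lemma lbls_sf: "atoms_of u = [] \<Longrightarrow> lbls (sf l u f) = lbls f - {l}"
  by (auto simp: lbls_def atoms_sf)

lemma dl_sf: "atoms_of u = [] \<Longrightarrow> dl f \<Longrightarrow> dl (sf l u f)"
  by (simp add: dl_def atoms_sf distinct_map_filter)

lemma created_sub[simp]: "created (subS l u s) = created s"
  by (induction s rule: created.induct) (auto simp: si_atomic)
lemma consumed_sub[simp]: "consumed (subS l u s) = consumed s"
  by (induction s rule: consumed.induct) (auto simp: si_atomic)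
lemma sigs_sub[simp]: "sigs (subS l u s) = sigs s"
  by (induction s rule: sigs.induct) (auto simp: si_atomic)

lemma sks_si: "sks_inst (map_inst fst r) \<Longrightarrow> sks_inst (map_inst fst (si l u r))"
  by (cases r) auto

lemma sksA_sub: "sksA s \<Longrightarrow> sksA (subS l u s)"
  by (auto simp: sksA_def subS_def sks_si)

lemma good_sub: "atoms_of u = [] \<Longrightarrow> noL l s \<Longrightarrow> good a s \<Longrightarrow> good (sf l u a) (subS l u s)"
proof (induction s arbitrary: a)
  case Nil then show ?case by (simp add: dl_sf)
next
  case (Cons st s)
  obtain c r where st: "st = (c, r)" by (cases st)
  from Cons.prems have g: "plug c (rprem r) = a" "dl a" "is_atomic r \<longrightarrow> lbls (rconcl r) \<inter> lbls a = {}"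
     "good (plug c (rconcl r)) s" "lbls a \<inter> created s = {}" "noL l s" "noL l [(c, r)]"
    by (auto simp: st good_Cons)
  have ih: "good (sf l u (plug c (rconcl r))) (subS l u s)" using Cons.IH[OF Cons.prems(1) g(6) g(4)] .
  show ?case unfolding st subS_Cons good_Cons
    using g ih sub_step[OF g(7), of u] Cons.prems(1)
    by (auto simp: plug_sub dl_sf lbls_sf si_atomic)
qed

section \<open>Structural derivations\<close>

definition structural :: "('x ctx \<times> 'x inst) list \<Rightarrow> bool" where
  "structural s \<longleftrightarrow> (\<forall>(c, r)\<in>set s. \<not> is_atomic r)"

lemma structural_Cons[simp]: "structural ((c, r) # s) \<longleftrightarrow> \<not> is_atomic r \<and> structural s"
  by (simp add: structural_def)
lemma structural_Nil[simp]: "structural []"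
  by (simp add: structural_def)
lemma structural_append[simp]: "structural (s1 @ s2) \<longleftrightarrow> structural s1 \<and> structural s2"
  by (auto simp: structural_def)
lemma structural_lift[simp]: "structural (liftS c s) = structural s"
  by (auto simp: structural_def liftS_def)

lemma structural_props: "structural s \<Longrightarrow> created s = {} \<and> consumed s = {} \<and> sigs s = {}"
  by (induction s rule: created.induct) auto

lemma structural_good: "structural s \<Longrightarrow> chain_ok a s \<Longrightarrow> dl a \<Longrightarrow> good a s \<and> lbls (endf a s) = lbls a"
proof (induction s arbitrary: a)
  case Nil then show ?case by simp
next
  case (Cons st s)
  obtain c r where st: "st = (c, r)" by (cases st)
  from Cons.prems have h: "\<not> is_atomic r" "structural s" "plug c (rprem r) = a" "chain_ok (plug c (rconcl r)) s"
    by (auto simp: st)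
  have d: "dl (plug c (rconcl r))" using struct_dl[OF h(1), of c] h(3) Cons.prems(3) by simp
  have l: "lbls (plug c (rconcl r)) = lbls a" using h(1,3) by (auto simp: lbls_plug struct_lbls)
  show ?case using Cons.IH[OF h(2) h(4) d] h Cons.prems(3) l structural_props[OF h(2)]
    unfolding st by (simp add: good_Cons)
qed

lemma structural_sksA: "structural s \<Longrightarrow> sksA s"
proof -
  have "\<not> is_atomic r \<Longrightarrow> sks_inst (map_inst fst r)" for r :: "('n atom \<times> nat) inst"
    by (cases r) auto
  then show "structural s \<Longrightarrow> sksA s" unfolding structural_def sksA_def by auto
qed

lemma good_single: "good a [(c, r)] \<longleftrightarrow> plug c (rprem r) = a \<and> dl a \<and>
   (is_atomic r \<longrightarrow> lbls (rconcl r) \<inter> lbls a = {}) \<and> dl (plug c (rconcl r))"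
  by (simp add: good_Cons)


lemma sksA_append[simp]: "sksA (s1 @ s2) \<longleftrightarrow> sksA s1 \<and> sksA s2"
  by (auto simp: sksA_def)
lemma sksA_Cons[simp]: "sksA ((c, r) # s) \<longleftrightarrow> sks_inst (map_inst fst r) \<and> sksA s"
  by (auto simp: sksA_def)
lemma sksA_Nil[simp]: "sksA []"
  by (auto simp: sksA_def)

lemma plug_inj[simp]: "plug c x = plug c y \<longleftrightarrow> x = y"
  by (induction c) auto

lemma chain_ok_liftS: "chain_ok (plug c0 a) (liftS c0 s) = chain_ok a s"
  by (induction a s rule: chain_ok.induct) auto

lemma lift1_simps[simp]:
  "chain_ok (Dis a b) (liftS (DL Hole b) s) = chain_ok a s"
  "chain_ok (Dis b a) (liftS (DR b Hole) s) = chain_ok a s"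
  "chain_ok (Con a b) (liftS (CL Hole b) s) = chain_ok a s"
  "chain_ok (Con b a) (liftS (CR b Hole) s) = chain_ok a s"
  "endf (Dis a b) (liftS (DL Hole b) s) = Dis (endf a s) b"
  "endf (Dis b a) (liftS (DR b Hole) s) = Dis b (endf a s)"
  "endf (Con a b) (liftS (CL Hole b) s) = Con (endf a s) b"
  "endf (Con b a) (liftS (CR b Hole) s) = Con b (endf a s)"
  using chain_ok_liftS[of "DL Hole b" a s] chain_ok_liftS[of "DR b Hole" a s]
    chain_ok_liftS[of "CL Hole b" a s] chain_ok_liftS[of "CR b Hole" a s]
    endf_lift[of "DL Hole b" a s] endf_lift[of "DR b Hole" a s]
    endf_lift[of "CL Hole b" a s] endf_lift[of "CR b Hole" a s]
  by simp_all

lemma lblsc1[simp]: "lblsc (DL Hole b) = lbls b" "lblsc (DR b Hole) = lbls b"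
   "lblsc (CL Hole b) = lbls b" "lblsc (CR b Hole) = lbls b" "lblsc Hole = {}"
  by (auto simp: lblsc_def lbls_def)

lemma good_lift1:
  "good a s \<Longrightarrow> dl (Dis a b) \<Longrightarrow> lbls b \<inter> created s = {} \<Longrightarrow> good (Dis a b) (liftS (DL Hole b) s)"
  "good a s \<Longrightarrow> dl (Dis b a) \<Longrightarrow> lbls b \<inter> created s = {} \<Longrightarrow> good (Dis b a) (liftS (DR b Hole) s)"
  "good a s \<Longrightarrow> dl (Con a b) \<Longrightarrow> lbls b \<inter> created s = {} \<Longrightarrow> good (Con a b) (liftS (CL Hole b) s)"
  "good a s \<Longrightarrow> dl (Con b a) \<Longrightarrow> lbls b \<inter> created s = {} \<Longrightarrow> good (Con b a) (liftS (CR b Hole) s)"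
  using good_lift[of a s "DL Hole b"] good_lift[of a s "DR b Hole"]
    good_lift[of a s "CL Hole b"] good_lift[of a s "CR b Hole"] by simp_all

section \<open>Pulling a disjunct out of a context, pushing a conjunct in\<close>

fun pull :: "'x ctx \<Rightarrow> 'x formula \<Rightarrow> 'x formula \<Rightarrow> ('x ctx \<times> 'x inst) list" where
  "pull Hole g d = []"
| "pull (DL c b) g d = liftS (DL Hole b) (pull c g d) @
     [(Hole, RAssocD (plug c g) d b), (DR (plug c g) Hole, RCommD d b), (Hole, RAssocD' (plug c g) b d)]"
| "pull (DR b c) g d = liftS (DR b Hole) (pull c g d) @ [(Hole, RAssocD' b (plug c g) d)]"
| "pull (CL c b) g d = liftS (CL Hole b) (pull c g d) @
     [(Hole, RCommC (Dis (plug c g) d) b), (Hole, RSw b (plug c g) d), (DL Hole d, RCommC b (plug c g))]"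
| "pull (CR b c) g d = liftS (CR b Hole) (pull c g d) @ [(Hole, RSw b (plug c g) d)]"

lemma pull_chain: "chain_ok (plug c (Dis g d)) (pull c g d) \<and> endf (plug c (Dis g d)) (pull c g d) = Dis (plug c g) d"
  by (induction c) (auto simp: chain_ok_append endf_append)

lemma pull_struct: "structural (pull c g d)"
  by (induction c) auto

fun push :: "'x ctx \<Rightarrow> 'x formula \<Rightarrow> 'x formula \<Rightarrow> ('x ctx \<times> 'x inst) list" where
  "push Hole g d = []"
| "push (DL c b) g d = [(Hole, RCommC (Dis (plug c g) b) d), (Hole, RSw d (plug c g) b),
     (DL Hole b, RCommC d (plug c g))] @ liftS (DL Hole b) (push c g d)"
| "push (DR b c) g d = [(Hole, RCommC (Dis b (plug c g)) d), (CR d Hole, RCommD b (plug c g)),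
     (Hole, RSw d (plug c g) b), (DL Hole b, RCommC d (plug c g)), (Hole, RCommD (Con (plug c g) d) b)]
     @ liftS (DR b Hole) (push c g d)"
| "push (CL c b) g d = [(Hole, RAssocC (plug c g) b d), (CR (plug c g) Hole, RCommC b d),
     (Hole, RAssocC' (plug c g) d b)] @ liftS (CL Hole b) (push c g d)"
| "push (CR b c) g d = [(Hole, RAssocC b (plug c g) d)] @ liftS (CR b Hole) (push c g d)"

lemma push_chain: "chain_ok (Con (plug c g) d) (push c g d) \<and> endf (Con (plug c g) d) (push c g d) = plug c (Con g d)"
  by (induction c) (auto simp: chain_ok_append endf_append)

lemma push_struct: "structural (push c g d)"
  by (induction c) auto

section \<open>Cocontraction and contraction of formulas\<close>

fun cocon :: "(nat \<Rightarrow> nat) \<Rightarrow> (nat \<Rightarrow> nat) \<Rightarrow> (nat \<Rightarrow> nat) \<Rightarrow> ('x \<times> nat) formula \<Rightarrow>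
    (('x \<times> nat) ctx \<times> ('x \<times> nat) inst) list" where
  "cocon g0 g1 g2 Ff = [(Hole, RFF')]"
| "cocon g0 g1 g2 Tt = [(Hole, RUnitT' Tt)]"
| "cocon g0 g1 g2 (At x) = [(Hole, RCoctr (apsnd g0 x) (apsnd g1 x) (apsnd g2 x))]"
| "cocon g0 g1 g2 (Dis A B) = liftS (DL Hole (rlf g0 B)) (cocon g0 g1 g2 A) @
     liftS (DR (Con (rlf g1 A) (rlf g2 A)) Hole) (cocon g0 g1 g2 B) @
     [(Hole, RMed (rlf g1 A) (rlf g2 A) (rlf g1 B) (rlf g2 B))]"
| "cocon g0 g1 g2 (Con A B) = liftS (CL Hole (rlf g0 B)) (cocon g0 g1 g2 A) @
     liftS (CR (Con (rlf g1 A) (rlf g2 A)) Hole) (cocon g0 g1 g2 B) @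
     [(Hole, RAssocC (rlf g1 A) (rlf g2 A) (Con (rlf g1 B) (rlf g2 B))),
      (CR (rlf g1 A) Hole, RAssocC' (rlf g2 A) (rlf g1 B) (rlf g2 B)),
      (CR (rlf g1 A) (CL Hole (rlf g2 B)), RCommC (rlf g2 A) (rlf g1 B)),
      (CR (rlf g1 A) Hole, RAssocC (rlf g1 B) (rlf g2 A) (rlf g2 B)),
      (Hole, RAssocC' (rlf g1 A) (rlf g1 B) (Con (rlf g2 A) (rlf g2 B)))]"

lemma cocon_chain: "chain_ok (rlf g0 f) (cocon g0 g1 g2 f) \<and>
   endf (rlf g0 f) (cocon g0 g1 g2 f) = Con (rlf g1 f) (rlf g2 f)"
  by (induction f) (auto simp: chain_ok_append endf_append)

lemma cocon_sksA: "sksA (cocon g0 g1 g2 (f :: ('n atom \<times> nat) formula))"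
  by (induction f) auto

lemma cocon_good:
  assumes i0: "inj g0" and i1: "inj g1" and i2: "inj g2"
    and d01: "\<And>x y. g0 x \<noteq> g1 y" and d02: "\<And>x y. g0 x \<noteq> g2 y" and d12: "\<And>x y. g1 x \<noteq> g2 y"
  shows "dl f \<Longrightarrow> good (rlf g0 f) (cocon g0 g1 g2 f) \<and>
     created (cocon g0 g1 g2 f) = g1 ` lbls f \<union> g2 ` lbls f \<and>
     sigs (cocon g0 g1 g2 f) = (\<lambda>l. (KCoctr, {g0 l}, {g1 l, g2 l})) ` lbls f"
proof (induction f)
  case (Dis A B)
  let ?s1 = "liftS (DL Hole (rlf g0 B)) (cocon g0 g1 g2 A)"
  let ?s2 = "liftS (DR (Con (rlf g1 A) (rlf g2 A)) Hole) (cocon g0 g1 g2 B)"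
  let ?s3 = "[(Hole, RMed (rlf g1 A) (rlf g2 A) (rlf g1 B) (rlf g2 B))]"
  have dA: "dl A" "dl B" "lbls A \<inter> lbls B = {}" using Dis.prems by auto
  note IA = Dis.IH(1)[OF dA(1)] and IB = Dis.IH(2)[OF dA(2)]
  note inj = inj_eq[OF i0] inj_eq[OF i1] inj_eq[OF i2]
  have dis: "g0 x \<noteq> g1 y" "g0 x \<noteq> g2 y" "g1 x \<noteq> g2 y" "g1 y \<noteq> g0 x" "g2 y \<noteq> g0 x" "g2 y \<noteq> g1 x" for x y
    using d01 d02 d12 by metis+
  have g1: "good (Dis (rlf g0 A) (rlf g0 B)) ?s1"
    by (rule good_lift1(1)) (use IA dA in \<open>auto simp: dl_rl i0 inj dis\<close>)
  have g2: "good (Dis (Con (rlf g1 A) (rlf g2 A)) (rlf g0 B)) ?s2"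
    by (rule good_lift1(2)) (use IB dA in \<open>auto simp: dl_rl i0 i1 i2 inj dis\<close>)
  have g3: "good (Dis (Con (rlf g1 A) (rlf g2 A)) (Con (rlf g1 B) (rlf g2 B))) ?s3"
    using dA by (auto simp: good_single dl_rl i0 i1 i2 inj dis)
  have g23: "good (Dis (Con (rlf g1 A) (rlf g2 A)) (rlf g0 B)) (?s2 @ ?s3)"
    unfolding good_append using g2 g3 IB cocon_chain[of g0 B g1 g2] by (auto simp: i1 i2)
  have "good (Dis (rlf g0 A) (rlf g0 B)) (?s1 @ ?s2 @ ?s3)"
    unfolding good_append[of _ ?s1] using g1 g23 IA IB cocon_chain[of g0 A g1 g2] dA
    by (auto simp: inj dis)
  then show ?case using IA IB by auto
next
  case (Con A B)
  let ?s1 = "liftS (CL Hole (rlf g0 B)) (cocon g0 g1 g2 A)"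
  let ?s2 = "liftS (CR (Con (rlf g1 A) (rlf g2 A)) Hole) (cocon g0 g1 g2 B)"
  let ?s3 = "[(Hole, RAssocC (rlf g1 A) (rlf g2 A) (Con (rlf g1 B) (rlf g2 B))),
      (CR (rlf g1 A) Hole, RAssocC' (rlf g2 A) (rlf g1 B) (rlf g2 B)),
      (CR (rlf g1 A) (CL Hole (rlf g2 B)), RCommC (rlf g2 A) (rlf g1 B)),
      (CR (rlf g1 A) Hole, RAssocC (rlf g1 B) (rlf g2 A) (rlf g2 B)),
      (Hole, RAssocC' (rlf g1 A) (rlf g1 B) (Con (rlf g2 A) (rlf g2 B)))]"
  have dA: "dl A" "dl B" "lbls A \<inter> lbls B = {}" using Con.prems by auto
  note IA = Con.IH(1)[OF dA(1)] and IB = Con.IH(2)[OF dA(2)]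
  note inj = inj_eq[OF i0] inj_eq[OF i1] inj_eq[OF i2]
  have dis: "g0 x \<noteq> g1 y" "g0 x \<noteq> g2 y" "g1 x \<noteq> g2 y" "g1 y \<noteq> g0 x" "g2 y \<noteq> g0 x" "g2 y \<noteq> g1 x" for x y
    using d01 d02 d12 by metis+
  have g1: "good (Con (rlf g0 A) (rlf g0 B)) ?s1"
    by (rule good_lift1(3)) (use IA dA in \<open>auto simp: dl_rl i0 inj dis\<close>)
  have g2: "good (Con (Con (rlf g1 A) (rlf g2 A)) (rlf g0 B)) ?s2"
    by (rule good_lift1(4)) (use IB dA in \<open>auto simp: dl_rl i0 i1 i2 inj dis\<close>)
  have st: "structural ?s3" by simp
  have ch3: "chain_ok (Con (Con (rlf g1 A) (rlf g2 A)) (Con (rlf g1 B) (rlf g2 B))) ?s3" by simp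
  have dl3: "dl (Con (Con (rlf g1 A) (rlf g2 A)) (Con (rlf g1 B) (rlf g2 B)))"
    using dA by (auto simp: dl_rl i0 i1 i2 inj dis)
  have g3: "good (Con (Con (rlf g1 A) (rlf g2 A)) (Con (rlf g1 B) (rlf g2 B))) ?s3"
    using structural_good[OF st ch3 dl3] by simp
  have g23: "good (Con (Con (rlf g1 A) (rlf g2 A)) (rlf g0 B)) (?s2 @ ?s3)"
    unfolding good_append using g2 g3 IB cocon_chain[of g0 B g1 g2] structural_props[OF st] by auto
  have "good (Con (rlf g0 A) (rlf g0 B)) (?s1 @ ?s2 @ ?s3)"
    unfolding good_append[of _ ?s1] using g1 g23 IA IB cocon_chain[of g0 A g1 g2] dA
    structural_props[OF st] by (auto simp: inj dis)
  then show ?case using IA IB structural_props[OF st] by auto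
qed (auto simp: good_single sig_def d01 d02 d12 inj_eq[OF i1] inj_eq[OF i2])

fun contr :: "(nat \<Rightarrow> nat) \<Rightarrow> (nat \<Rightarrow> nat) \<Rightarrow> (nat \<Rightarrow> nat) \<Rightarrow> ('x \<times> nat) formula \<Rightarrow>
    (('x \<times> nat) ctx \<times> ('x \<times> nat) inst) list" where
  "contr g0 g1 g2 Ff = [(Hole, RUnitF Ff)]"
| "contr g0 g1 g2 Tt = [(Hole, RTT)]"
| "contr g0 g1 g2 (At x) = [(Hole, RCtr (apsnd g1 x) (apsnd g2 x) (apsnd g0 x))]"
| "contr g0 g1 g2 (Con A B) = [(Hole, RMed (rlf g1 A) (rlf g1 B) (rlf g2 A) (rlf g2 B))] @
     liftS (CL Hole (Dis (rlf g1 B) (rlf g2 B))) (contr g0 g1 g2 A) @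
     liftS (CR (rlf g0 A) Hole) (contr g0 g1 g2 B)"
| "contr g0 g1 g2 (Dis A B) =
     [(Hole, RAssocD (rlf g1 A) (rlf g1 B) (Dis (rlf g2 A) (rlf g2 B))),
      (DR (rlf g1 A) Hole, RAssocD' (rlf g1 B) (rlf g2 A) (rlf g2 B)),
      (DR (rlf g1 A) (DL Hole (rlf g2 B)), RCommD (rlf g1 B) (rlf g2 A)),
      (DR (rlf g1 A) Hole, RAssocD (rlf g2 A) (rlf g1 B) (rlf g2 B)),
      (Hole, RAssocD' (rlf g1 A) (rlf g2 A) (Dis (rlf g1 B) (rlf g2 B)))] @
     liftS (DL Hole (Dis (rlf g1 B) (rlf g2 B))) (contr g0 g1 g2 A) @
     liftS (DR (rlf g0 A) Hole) (contr g0 g1 g2 B)"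

lemma contr_chain: "chain_ok (Dis (rlf g1 f) (rlf g2 f)) (contr g0 g1 g2 f) \<and>
   endf (Dis (rlf g1 f) (rlf g2 f)) (contr g0 g1 g2 f) = rlf g0 f"
  by (induction f) (auto simp: chain_ok_append endf_append)

lemma contr_sksA: "sksA (contr g0 g1 g2 (f :: ('n atom \<times> nat) formula))"
  by (induction f) auto

lemma contr_good:
  assumes i0: "inj g0" and i1: "inj g1" and i2: "inj g2"
    and d01: "\<And>x y. g0 x \<noteq> g1 y" and d02: "\<And>x y. g0 x \<noteq> g2 y" and d12: "\<And>x y. g1 x \<noteq> g2 y"
  shows "dl f \<Longrightarrow> good (Dis (rlf g1 f) (rlf g2 f)) (contr g0 g1 g2 f) \<and>
     created (contr g0 g1 g2 f) = g0 ` lbls f \<and>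
     sigs (contr g0 g1 g2 f) = (\<lambda>l. (KCtr, {g1 l, g2 l}, {g0 l})) ` lbls f"
proof (induction f)
  case (Con A B)
  let ?s1 = "[(Hole, RMed (rlf g1 A) (rlf g1 B) (rlf g2 A) (rlf g2 B))]"
  let ?s2 = "liftS (CL Hole (Dis (rlf g1 B) (rlf g2 B))) (contr g0 g1 g2 A)"
  let ?s3 = "liftS (CR (rlf g0 A) Hole) (contr g0 g1 g2 B)"
  have dA: "dl A" "dl B" "lbls A \<inter> lbls B = {}" using Con.prems by auto
  note IA = Con.IH(1)[OF dA(1)] and IB = Con.IH(2)[OF dA(2)]
  note inj = inj_eq[OF i0] inj_eq[OF i1] inj_eq[OF i2]
  have dis: "g0 x \<noteq> g1 y" "g0 x \<noteq> g2 y" "g1 x \<noteq> g2 y" "g1 y \<noteq> g0 x" "g2 y \<noteq> g0 x" "g2 y \<noteq> g1 x" for x y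
    using d01 d02 d12 by metis+
  have g1: "good (Dis (Con (rlf g1 A) (rlf g1 B)) (Con (rlf g2 A) (rlf g2 B))) ?s1"
    using dA by (auto simp: good_single dl_rl i0 i1 i2 inj dis)
  have g2: "good (Con (Dis (rlf g1 A) (rlf g2 A)) (Dis (rlf g1 B) (rlf g2 B))) ?s2"
    by (rule good_lift1(3)) (use IA dA in \<open>auto simp: dl_rl i0 i1 i2 inj dis\<close>)
  have g3: "good (Con (rlf g0 A) (Dis (rlf g1 B) (rlf g2 B))) ?s3"
    by (rule good_lift1(4)) (use IB dA in \<open>auto simp: dl_rl i0 i1 i2 inj dis\<close>)
  have g23: "good (Con (Dis (rlf g1 A) (rlf g2 A)) (Dis (rlf g1 B) (rlf g2 B))) (?s2 @ ?s3)"
    unfolding good_append using g2 g3 IA IB contr_chain[of g1 A g2 g0] dA by (auto simp: inj dis)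
  have "good (Dis (Con (rlf g1 A) (rlf g1 B)) (Con (rlf g2 A) (rlf g2 B))) (?s1 @ ?s2 @ ?s3)"
    unfolding good_append[of _ ?s1] using g1 g23 IA IB dA
    by (auto simp: inj dis)
  then show ?case using IA IB by (auto simp: sig_def)
next
  case (Dis A B)
  let ?s1 = "[(Hole, RAssocD (rlf g1 A) (rlf g1 B) (Dis (rlf g2 A) (rlf g2 B))),
      (DR (rlf g1 A) Hole, RAssocD' (rlf g1 B) (rlf g2 A) (rlf g2 B)),
      (DR (rlf g1 A) (DL Hole (rlf g2 B)), RCommD (rlf g1 B) (rlf g2 A)),
      (DR (rlf g1 A) Hole, RAssocD (rlf g2 A) (rlf g1 B) (rlf g2 B)),
      (Hole, RAssocD' (rlf g1 A) (rlf g2 A) (Dis (rlf g1 B) (rlf g2 B)))]"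
  let ?s2 = "liftS (DL Hole (Dis (rlf g1 B) (rlf g2 B))) (contr g0 g1 g2 A)"
  let ?s3 = "liftS (DR (rlf g0 A) Hole) (contr g0 g1 g2 B)"
  have dA: "dl A" "dl B" "lbls A \<inter> lbls B = {}" using Dis.prems by auto
  note IA = Dis.IH(1)[OF dA(1)] and IB = Dis.IH(2)[OF dA(2)]
  note inj = inj_eq[OF i0] inj_eq[OF i1] inj_eq[OF i2]
  have dis: "g0 x \<noteq> g1 y" "g0 x \<noteq> g2 y" "g1 x \<noteq> g2 y" "g1 y \<noteq> g0 x" "g2 y \<noteq> g0 x" "g2 y \<noteq> g1 x" for x y
    using d01 d02 d12 by metis+
  have st: "structural ?s1" by simp
  have ch1: "chain_ok (Dis (Dis (rlf g1 A) (rlf g1 B)) (Dis (rlf g2 A) (rlf g2 B))) ?s1" by simp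
  have dl1: "dl (Dis (Dis (rlf g1 A) (rlf g1 B)) (Dis (rlf g2 A) (rlf g2 B)))"
    using dA by (auto simp: dl_rl i0 i1 i2 inj dis)
  have g1: "good (Dis (Dis (rlf g1 A) (rlf g1 B)) (Dis (rlf g2 A) (rlf g2 B))) ?s1"
    using structural_good[OF st ch1 dl1] by simp
  have g2: "good (Dis (Dis (rlf g1 A) (rlf g2 A)) (Dis (rlf g1 B) (rlf g2 B))) ?s2"
    by (rule good_lift1(1)) (use IA dA in \<open>auto simp: dl_rl i0 i1 i2 inj dis\<close>)
  have g3: "good (Dis (rlf g0 A) (Dis (rlf g1 B) (rlf g2 B))) ?s3"
    by (rule good_lift1(2)) (use IB dA in \<open>auto simp: dl_rl i0 i1 i2 inj dis\<close>)
  have g23: "good (Dis (Dis (rlf g1 A) (rlf g2 A)) (Dis (rlf g1 B) (rlf g2 B))) (?s2 @ ?s3)"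
    unfolding good_append using g2 g3 IA IB contr_chain[of g1 A g2 g0] dA by (auto simp: inj dis)
  have "good (Dis (Dis (rlf g1 A) (rlf g1 B)) (Dis (rlf g2 A) (rlf g2 B))) (?s1 @ ?s2 @ ?s3)"
    unfolding good_append[of _ ?s1] using g1 g23 IA IB dA structural_props[OF st]
    by (auto simp: inj dis)
  then show ?case using IA IB structural_props[OF st] by (auto simp: sig_def)
qed (auto simp: good_single sig_def d01 d02 d12 d01[symmetric] d02[symmetric] d12[symmetric] inj_eq[OF i0] insert_commute)


lemma lblsc_simps[simp]:
  "lblsc (DL c b) = lblsc c \<union> lbls b" "lblsc (DR b c) = lbls b \<union> lblsc c"
  "lblsc (CL c b) = lblsc c \<union> lbls b" "lblsc (CR b c) = lbls b \<union> lblsc c"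
  by (auto simp: lblsc_def lbls_def)

lemma sc_id: "l \<notin> lblsc c \<Longrightarrow> sc l u c = c"
  by (induction c) (auto simp: sf_id)

lemma bar_bar[simp]: "bar (bar a) = a"
  by (simp add: bar_def)

lemma good_Cons_struct: "\<not> is_atomic r \<Longrightarrow> plug c (rprem r) = a \<Longrightarrow> good (plug c (rconcl r)) s \<Longrightarrow>
  good a ((c, r) # s)"
  using good_dl[of "plug c (rconcl r)" s] struct_dl[of r c] struct_lbls[of r] good_fresh0[of "plug c (rconcl r)" s]
  by (auto simp: good_Cons lbls_plug)

lemma good_atom_const: "good a s \<Longrightarrow> (A, l) \<in> set (atoms_of a) \<Longrightarrow>
   (A', l) \<in> set (atoms_of (endf a s)) \<Longrightarrow> A = A'"
proof (induction s arbitrary: a)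
  case Nil
  then have "dl a" by simp
  then have "inj_on snd (set (atoms_of a))" by (simp add: dl_def distinct_map)
  then show ?case using inj_onD[of snd _ "(A, l)" "(A', l)"] Nil.prems(2,3) by auto
next
  case (Cons st s)
  obtain c r where st: "st = (c, r)" by (cases st)
  from Cons.prems(1) have g: "plug c (rprem r) = a" "dl a" "is_atomic r \<longrightarrow> lbls (rconcl r) \<inter> lbls a = {}"
     "good (plug c (rconcl r)) s" "lbls a \<inter> created s = {}"
    by (auto simp: st good_Cons)
  have la: "l \<in> lbls a" using Cons.prems(2) by (force simp: lbls_def)
  have "l \<in> lbls (endf (plug c (rconcl r)) s)" using Cons.prems(3) st by (force simp: lbls_def)
  then have lb: "l \<in> lbls (plug c (rconcl r))" using good_end_lbls[OF g(4)] g(5) la by blast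
  have "(A, l) \<in> set (atoms_of (plug c (rconcl r)))"
  proof -
    have "(A, l) \<in> set (atoms_c c) \<or> (A, l) \<in> set (atoms_of (rprem r))"
    proof -
      have "(A, l) \<in> set (atoms_of (plug c (rprem r)))" using Cons.prems(2) g(1) by simp
      then show ?thesis by (simp add: set_plug)
    qed
    then show ?thesis
    proof
      assume "(A, l) \<in> set (atoms_c c)" then show ?thesis by (simp add: set_plug)
    next
      assume A: "(A, l) \<in> set (atoms_of (rprem r))"
      show ?thesis
      proof (cases "is_atomic r")
        case False then show ?thesis using A struct_set[OF False] by (simp add: set_plug)
      next
        case True
        have "l \<in> lbls (rprem r)" using A by (force simp: lbls_def)
        moreover have "lblsc c \<inter> lbls (rprem r) = {}" using g(1,2) dl_plug by blast
        ultimately show ?thesis using lb g(3) True la by (auto simp: lbls_plug)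
      qed
    qed
  qed
  then show ?case using Cons.IH[OF g(4)] Cons.prems(3) st by simp
qed

lemma good_appI: "good a s1 \<Longrightarrow> endf a s1 = b \<Longrightarrow> good b s2 \<Longrightarrow> (lbls a \<union> created s1) \<inter> created s2 = {} \<Longrightarrow>
   good a (s1 @ s2)"
  by (simp add: good_append)

locale dec =
  fixes a :: "('n atom \<times> nat) formula"
    and S1 :: "(('n atom \<times> nat) ctx \<times> ('n atom \<times> nat) inst) list"
    and c :: "('n atom \<times> nat) ctx" and x y :: "'n atom \<times> nat"
    and S2 :: "(('n atom \<times> nat) ctx \<times> ('n atom \<times> nat) inst) list"
    and c' :: "('n atom \<times> nat) ctx" and x' y' :: "'n atom \<times> nat"
    and S3 :: "(('n atom \<times> nat) ctx \<times> ('n atom \<times> nat) inst) list"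
    and le :: nat
  assumes gS: "good a (S1 @ (c, RInt x y) # S2 @ (c', RCut x' y') # S3)"
    and sS: "sksA (S1 @ (c, RInt x y) # S2 @ (c', RCut x' y') # S3)"
    and le1: "le = snd x \<or> le = snd y" and le2: "le = snd x' \<or> le = snd y'"
begin

abbreviation "S \<equiv> S1 @ (c, RInt x y) # S2 @ (c', RCut x' y') # S3"
definition "w = (if snd x = le then y else x)"
definition "z = (if snd x' = le then y' else x')"
abbreviation "l2 \<equiv> snd w"
abbreviation "l3 \<equiv> snd z"
abbreviation "b1 \<equiv> plug c (Dis (At x) (At y))"
abbreviation "pq \<equiv> plug c' (Con (At x') (At y'))"
abbreviation "b3 \<equiv> plug c' Ff"
abbreviation "pn \<equiv> endf b3 S3"

lemma ch: "endf a S1 = plug c Tt" "endf b1 S2 = pq" "endf a S = pn"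
proof -
  have c0: "chain_ok a S" using good_chain[OF gS] .
  then show "endf a S1 = plug c Tt" by (simp add: chain_ok_append)
  have "chain_ok b1 (S2 @ (c', RCut x' y') # S3)" using c0 by (simp add: chain_ok_append endf_append)
  then show "endf b1 S2 = pq" by (simp add: chain_ok_append)
  show "endf a S = pn" using c0 by (simp add: chain_ok_append endf_append \<open>endf b1 S2 = pq\<close>)
qed

lemma goods: "good a S1" "good (plug c Tt) ((c, RInt x y) # S2 @ (c', RCut x' y') # S3)"
   "good b1 (S2 @ (c', RCut x' y') # S3)" "good b1 S2" "good pq ((c', RCut x' y') # S3)" "good b3 S3"
proof -
  show g1: "good a S1" using gS by (simp add: good_append)
  show g2: "good (plug c Tt) ((c, RInt x y) # S2 @ (c', RCut x' y') # S3)" using gS ch(1) by (simp add: good_append)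
  show g3: "good b1 (S2 @ (c', RCut x' y') # S3)" using g2 by (simp add: good_Cons)
  show "good b1 S2" using g3 by (simp add: good_append)
  show g5: "good pq ((c', RCut x' y') # S3)" using g3 ch(2) by (simp add: good_append)
  show "good b3 S3" using g5 by (simp add: good_Cons)
qed

lemma dls: "dl b1" "dl pq" "dlc c" "dlc c'" "snd x \<noteq> snd y" "snd x' \<noteq> snd y'"
  "snd x \<notin> lblsc c" "snd y \<notin> lblsc c" "snd x' \<notin> lblsc c'" "snd y' \<notin> lblsc c'"
proof -
  show d1: "dl b1" using good_dl[OF goods(3)] .
  show d2: "dl pq" using good_dl[OF goods(5)] .
  show "dlc c" "snd x \<noteq> snd y" "snd x \<notin> lblsc c" "snd y \<notin> lblsc c" using d1 by (auto simp: dl_plug)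
  show "dlc c'" "snd x' \<noteq> snd y'" "snd x' \<notin> lblsc c'" "snd y' \<notin> lblsc c'" using d2 by (auto simp: dl_plug)
qed

lemma disj:
  "(lbls a \<union> created S1) \<inter> ({snd x, snd y} \<union> created S2 \<union> created S3) = {}"
  "{snd x, snd y} \<inter> (created S2 \<union> created S3) = {}"
  "lblsc c \<inter> (created S2 \<union> created S3) = {}"
  "(lbls b1 \<union> created S2) \<inter> created S3 = {}"
  "{snd x, snd y} \<inter> created S1 = {}"
  "{snd x', snd y'} \<inter> (consumed S1 \<union> consumed S2 \<union> consumed S3) = {}"
  "lbls pq \<inter> created S3 = {}"
proof -
  show "(lbls a \<union> created S1) \<inter> ({snd x, snd y} \<union> created S2 \<union> created S3) = {}"
    using gS by (simp add: good_append Int_Un_distrib)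
  have l: "lbls (rconcl (RInt x y)) \<inter> created (S2 @ (c', RCut x' y') # S3) = {} \<and>
    lbls (rprem (RInt x y)) \<inter> consumed (S2 @ (c', RCut x' y') # S3) = {}"
    by (rule good_later[of a S1 c _ "S2 @ (c', RCut x' y') # S3"]) (use gS in auto)
  then show "{snd x, snd y} \<inter> (created S2 \<union> created S3) = {}" by auto
  show "lblsc c \<inter> (created S2 \<union> created S3) = {}"
    using goods(2) by (auto simp: good_Cons lbls_plug)
  show "(lbls b1 \<union> created S2) \<inter> created S3 = {}"
    using goods(3)[unfolded good_append] by simp
  have e: "lbls (rconcl (RInt x y)) \<inter> created S1 = {} \<and> lbls (rprem (RInt x y)) \<inter> consumed S1 = {}"
    by (rule good_earlier[of a S1 c _ "S2 @ (c', RCut x' y') # S3"]) (use gS in auto)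
  then show "{snd x, snd y} \<inter> created S1 = {}" by auto
  have e2: "lbls (rconcl (RCut x' y')) \<inter> created (S1 @ (c, RInt x y) # S2) = {} \<and>
     lbls (rprem (RCut x' y')) \<inter> consumed (S1 @ (c, RInt x y) # S2) = {}"
    by (rule good_earlier[of a "S1 @ (c, RInt x y) # S2" c' _ S3]) (use gS in auto)
  have e3: "lbls (rconcl (RCut x' y')) \<inter> created S3 = {} \<and>
     lbls (rprem (RCut x' y')) \<inter> consumed S3 = {}"
    by (rule good_later[of a "S1 @ (c, RInt x y) # S2" c' _ S3]) (use gS in auto)
  show "{snd x', snd y'} \<inter> (consumed S1 \<union> consumed S2 \<union> consumed S3) = {}"
    using e2 e3 by auto
  show "lbls pq \<inter> created S3 = {}" using goods(5) by (simp add: good_Cons)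
qed

lemma le_facts: "le \<notin> lbls a" "le \<notin> created S1" "le \<notin> created S2" "le \<notin> created S3"
  "le \<notin> consumed S1" "le \<notin> consumed S2" "le \<notin> consumed S3" "le \<notin> lblsc c" "le \<notin> lblsc c'"
proof -
  have A: "le \<in> {snd x, snd y}" "le \<in> {snd x', snd y'}" using le1 le2 by auto
  show "le \<notin> lbls a" using disj(1) A(1) by blast
  show "le \<notin> created S1" using disj(5) A(1) by blast
  show "le \<notin> created S2" using disj(2) A(1) by blast
  show "le \<notin> created S3" using disj(2) A(1) by blast
  show "le \<notin> consumed S1" using disj(6) A(2) by blast
  show "le \<notin> consumed S2" using disj(6) A(2) by blast
  show "le \<notin> consumed S3" using disj(6) A(2) by blast
  show "le \<notin> lblsc c" using dls(7,8) le1 by auto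
  show "le \<notin> lblsc c'" using dls(9,10) le2 by auto
qed

lemma noL2: "noL le S2"
  unfolding noL_def using le_facts(3,6) created_mem consumed_mem by fastforce

lemma w_z: "snd w \<noteq> le" "snd z \<noteq> le" "snd w \<in> {snd x, snd y}" "snd z \<in> {snd x', snd y'}"
  using dls le1 le2 unfolding w_def z_def by auto

lemma sf_b1: "sf le u b1 = plug c (if snd x = le then Dis u (At y) else Dis (At x) u)"
  using le_facts dls le1 by (auto simp: plug_sub[symmetric] sc_id)

lemma sf_pq: "sf le u pq = plug c' (if snd x' = le then Con u (At y') else Con (At x') u)"
  using le_facts dls le2 by (auto simp: plug_sub[symmetric] sc_id)

lemma atom_eq: "fst w = fst z"
proof -
  define xa where "xa = (if snd x = le then x else y)"
  define xk where "xk = (if snd x' = le then x' else y')"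
  have "(fst xa, le) \<in> set (atoms_of b1)" using le1 dls by (auto simp: xa_def set_plug)
  moreover have "(fst xk, le) \<in> set (atoms_of (endf b1 S2))" using le2 ch(2) dls by (auto simp: xk_def set_plug)
  ultimately have e: "fst xa = fst xk" using good_atom_const[OF goods(4)] by blast
  have s1: "fst y = bar (fst x)" "fst y' = bar (fst x')"
    using sS by (auto simp: sksA_def)
  have "fst w = bar (fst xa)" using s1 by (auto simp: w_def xa_def)
  moreover have "fst z = bar (fst xk)" using s1 by (auto simp: z_def xk_def)
  ultimately show ?thesis using e by simp
qed

definition "tI = (if snd x = le then [(c, RUnitF' Tt), (cc c (DR Tt Hole), RWk y)]
   else [(c, RUnitF' Tt), (c, RCommD Tt Ff), (cc c (DL Hole Tt), RWk x)])"
definition "tK = (if snd x' = le then [(c', RCommC Tt (At y')), (c', RUnitT (At y')), (c', RUnitF' (At y')), (c', RCommD (At y') Ff)]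
   else [(c', RUnitT (At x')), (c', RUnitF' (At x')), (c', RCommD (At x') Ff)])"
definition "T0 = S1 @ tI @ subS le Tt S2 @ tK @ pull c' Ff (At z) @ liftS (DL Hole (At z)) S3"

lemma tI_props: "good (plug c Tt) tI" "endf (plug c Tt) tI = sf le Tt b1" "created tI = {l2}"
   "sigs tI = {(KWk, {}, {l2})}" "sksA tI"
proof -
  show "good (plug c Tt) tI" using dls le1 by (auto simp: tI_def good_Cons lbls_plug dl_plug w_def)
  show "endf (plug c Tt) tI = sf le Tt b1" using le1 dls by (auto simp: tI_def sf_b1)
  show "created tI = {l2}" using le1 dls by (auto simp: tI_def w_def)
  show "sigs tI = {(KWk, {}, {l2})}" using le1 dls by (auto simp: tI_def w_def sig_def)
  show "sksA tI" by (simp add: tI_def)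
qed

lemma tK_props: "structural tK" "chain_ok (sf le Tt pq) tK" "endf (sf le Tt pq) tK = plug c' (Dis Ff (At z))"
   "sksA tK"
  using le2 dls by (auto simp: tK_def sf_pq z_def structural_sksA)

lemma T0_props: "good a T0" "endf a T0 = Dis pn (At z)"
  "created T0 = created S1 \<union> {l2} \<union> created S2 \<union> created S3"
  "sigs T0 = sigs S1 \<union> sigs S2 \<union> sigs S3 \<union> {(KWk, {}, {l2})}" "sksA T0"
proof -
  have zl: "l3 \<in> lbls pq" using w_z by (auto simp: lbls_plug)
  have g6: "good (Dis b3 (At z)) (liftS (DL Hole (At z)) S3)"
    by (rule good_lift1(1)[OF goods(6)]) (use good_dl[OF goods(6)] dls zl disj(7) w_z in \<open>auto simp: dl_plug lbls_plug\<close>)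
  have dpl: "dl (plug c' (Dis Ff (At z)))" using dls w_z by (auto simp: dl_plug)
  have g5: "good (plug c' (Dis Ff (At z))) (pull c' Ff (At z))"
    using structural_good[OF pull_struct pull_chain[THEN conjunct1] dpl] by simp
  have g56: "good (plug c' (Dis Ff (At z))) (pull c' Ff (At z) @ liftS (DL Hole (At z)) S3)"
    by (rule good_appI[OF g5 pull_chain[THEN conjunct2] g6])
       (use structural_props[OF pull_struct[of c' Ff "At z"]] disj(7) dls zl in \<open>auto simp: lbls_plug\<close>)
  have dsq: "dl (sf le Tt pq)" using dl_sf[OF _ dls(2)] by simp
  have g4: "good (sf le Tt pq) tK" using structural_good[OF tK_props(1,2) dsq] by simp
  have g46: "good (sf le Tt pq) (tK @ pull c' Ff (At z) @ liftS (DL Hole (At z)) S3)"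
    by (rule good_appI[OF g4 tK_props(3) g56])
       (use structural_props[OF tK_props(1)] structural_props[OF pull_struct[of c' Ff "At z"]] disj(7)
        in \<open>auto simp: lbls_sf\<close>)
  have g3: "good (sf le Tt b1) (subS le Tt S2)" using good_sub[OF _ noL2 goods(4)] by simp
  have e3: "endf (sf le Tt b1) (subS le Tt S2) = sf le Tt pq" using endf_sub[OF noL2] ch(2) by simp
  have g36: "good (sf le Tt b1) (subS le Tt S2 @ tK @ pull c' Ff (At z) @ liftS (DL Hole (At z)) S3)"
    by (rule good_appI[OF g3 e3 g46])
       (use structural_props[OF tK_props(1)] structural_props[OF pull_struct[of c' Ff "At z"]] disj(4) in \<open>auto simp: lbls_sf\<close>)
  have g26: "good (plug c Tt) (tI @ subS le Tt S2 @ tK @ pull c' Ff (At z) @ liftS (DL Hole (At z)) S3)"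
    by (rule good_appI[OF tI_props(1,2) g36])
       (use structural_props[OF tK_props(1)] structural_props[OF pull_struct[of c' Ff "At z"]] disj(2,3) w_z tI_props(3)
        in \<open>auto simp: lbls_plug\<close>)
  show "good a T0" unfolding T0_def
    by (rule good_appI[OF goods(1) ch(1) g26])
       (use structural_props[OF tK_props(1)] structural_props[OF pull_struct[of c' Ff "At z"]] disj(1) w_z tI_props(3)
        in \<open>auto\<close>)
  show "endf a T0 = Dis pn (At z)" unfolding T0_def
    using ch(1) tI_props(2) e3 tK_props(3) pull_chain[of c' Ff "At z"] by (simp add: endf_append)
  show "created T0 = created S1 \<union> {l2} \<union> created S2 \<union> created S3" unfolding T0_def
    using structural_props[OF tK_props(1)] structural_props[OF pull_struct[of c' Ff "At z"]] tI_props(3) by auto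
  show "sigs T0 = sigs S1 \<union> sigs S2 \<union> sigs S3 \<union> {(KWk, {}, {l2})}" unfolding T0_def
    using structural_props[OF tK_props(1)] structural_props[OF pull_struct[of c' Ff "At z"]] tI_props(4) by auto
  have sA: "sksA S1" "sksA S2" "sksA S3" using sS by auto
  show "sksA T0" unfolding T0_def
    using sA tI_props(5) tK_props(4) structural_sksA[OF pull_struct] sksA_sub by auto
qed

definition "hI = push c Tt (At w) @ [(c, RCommC Tt (At w)), (c, RUnitT (At w)), (c, RUnitF' (At w))] @
   (if snd x = le then [(c, RCommD (At w) Ff)] else [])"
definition "hK = (if snd x' = le then [(cc c' (CR Ff Hole), RCowk y'), (c', RUnitT Ff)]
   else [(cc c' (CL Hole Ff), RCowk x'), (c', RCommC Tt Ff), (c', RUnitT Ff)])"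
definition "H0 = liftS (CL Hole (At w)) S1 @ hI @ subS le Ff S2 @ hK @ S3"

lemma hI_props: "structural hI" "chain_ok (Con (plug c Tt) (At w)) hI" "endf (Con (plug c Tt) (At w)) hI = sf le Ff b1"
   "sksA hI"
proof -
  show "structural hI" by (simp add: hI_def push_struct)
  show "chain_ok (Con (plug c Tt) (At w)) hI"
    using push_chain[of c Tt "At w"] by (simp add: hI_def chain_ok_append)
  show "endf (Con (plug c Tt) (At w)) hI = sf le Ff b1"
    using push_chain[of c Tt "At w"] le1 dls by (auto simp: hI_def endf_append chain_ok_append sf_b1 w_def)
  show "sksA hI" using structural_sksA \<open>structural hI\<close> by blast
qed

lemma hK_props: "good (sf le Ff pq) hK" "endf (sf le Ff pq) hK = b3" "created hK = {}"
   "sigs hK = {(KCowk, {l3}, {})}" "sksA hK"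
proof -
  show "good (sf le Ff pq) hK" using dls le2 by (auto simp: hK_def good_Cons lbls_plug dl_plug sf_pq)
  show "endf (sf le Ff pq) hK = b3" using le2 dls by (auto simp: hK_def sf_pq)
  show "created hK = {}" by (auto simp: hK_def)
  show "sigs hK = {(KCowk, {l3}, {})}" using le2 dls by (auto simp: hK_def z_def sig_def)
  show "sksA hK" by (simp add: hK_def)
qed

lemma H0_props: "good (Con a (At w)) H0" "endf (Con a (At w)) H0 = pn"
  "created H0 = created S1 \<union> created S2 \<union> created S3"
  "sigs H0 = sigs S1 \<union> sigs S2 \<union> sigs S3 \<union> {(KCowk, {l3}, {})}" "sksA H0"
proof -
  have g45: "good (sf le Ff pq) (hK @ S3)"
    by (rule good_appI[OF hK_props(1,2) goods(6)]) (use hK_props(3) disj(7) in \<open>auto simp: lbls_sf\<close>)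
  have g3: "good (sf le Ff b1) (subS le Ff S2)" using good_sub[OF _ noL2 goods(4)] by simp
  have e3: "endf (sf le Ff b1) (subS le Ff S2) = sf le Ff pq" using endf_sub[OF noL2] ch(2) by simp
  have g35: "good (sf le Ff b1) (subS le Ff S2 @ hK @ S3)"
    by (rule good_appI[OF g3 e3 g45]) (use hK_props(3) disj(4) in \<open>auto simp: lbls_sf\<close>)
  have dh: "dl (Con (plug c Tt) (At w))" using dls w_z by (auto simp: dl_plug lbls_plug)
  have g2: "good (Con (plug c Tt) (At w)) hI" using structural_good[OF hI_props(1,2) dh] by simp
  have g25: "good (Con (plug c Tt) (At w)) (hI @ subS le Ff S2 @ hK @ S3)"
    by (rule good_appI[OF g2 hI_props(3) g35])
       (use structural_props[OF hI_props(1)] hK_props(3) disj(2,3) w_z in \<open>auto simp: lbls_plug\<close>)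
  have da: "dl (Con a (At w))" using good_dl[OF goods(1)] disj(1) w_z by auto
  have g1: "good (Con a (At w)) (liftS (CL Hole (At w)) S1)"
    by (rule good_lift1(3)[OF goods(1) da]) (use disj(5) w_z in auto)
  show "good (Con a (At w)) H0" unfolding H0_def
    by (rule good_appI[OF g1 _ g25]) (use ch(1) structural_props[OF hI_props(1)] hK_props(3) disj(1,2) w_z in auto)
  show "endf (Con a (At w)) H0 = pn" unfolding H0_def
    using ch(1) hI_props(3) e3 hK_props(2) by (simp add: endf_append)
  show "created H0 = created S1 \<union> created S2 \<union> created S3" unfolding H0_def
    using structural_props[OF hI_props(1)] hK_props(3) by auto
  show "sigs H0 = sigs S1 \<union> sigs S2 \<union> sigs S3 \<union> {(KCowk, {l3}, {})}" unfolding H0_def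
    using structural_props[OF hI_props(1)] hK_props(4) by auto
  have sA: "sksA S1" "sksA S2" "sksA S3" using sS by auto
  show "sksA H0" unfolding H0_def
    using sA hI_props(4) hK_props(5) sksA_sub by auto
qed

end


instance see :: (countable) countable by countable_datatype

lemma rlf_cong: "(\<And>l. l \<in> lbls f \<Longrightarrow> g l = g' l) \<Longrightarrow> rlf g f = rlf g' f"
  by (induction f) auto

context dec
begin

definition "gT l = to_nat (if l = l3 then (EMid :: nat see) else ECp True l)"
definition "gH l = to_nat (if l = l2 then (EMid :: nat see) else ECp False l)"
definition "gTp l = to_nat (ECp True l :: nat see)"
definition "gHp l = to_nat (ECp False l :: nat see)"
definition "gI l = to_nat (EIn l :: nat see)"
definition "gO l = to_nat (EOut l :: nat see)"

lemma g_inj: "inj gT" "inj gH" "inj gTp" "inj gHp" "inj gI" "inj gO"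
  by (auto simp: inj_def gT_def gH_def gTp_def gHp_def gI_def gO_def split: if_splits)

lemma g_dis: "gI l \<noteq> gT m" "gI l \<noteq> gHp m" "gT l \<noteq> gHp m" "gO l \<noteq> gTp m" "gO l \<noteq> gH m" "gTp l \<noteq> gH m"
  "gI l \<noteq> gH m" "gI l \<noteq> gO m" "gT l \<noteq> gO m" "gH l \<noteq> gO m" "gI l \<noteq> gTp m"
  "gT m \<noteq> gI l" "gHp m \<noteq> gI l" "gHp m \<noteq> gT l" "gTp m \<noteq> gO l" "gH m \<noteq> gO l" "gH m \<noteq> gTp l"
  "gH m \<noteq> gI l" "gO m \<noteq> gI l" "gO m \<noteq> gT l" "gO m \<noteq> gH l" "gTp m \<noteq> gI l"
  "gHp l \<noteq> gO m" "gO m \<noteq> gHp l" "gHp l \<noteq> gTp m" "gTp m \<noteq> gHp l"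
  by (auto simp: gT_def gH_def gTp_def gHp_def gI_def gO_def)

lemma g_eq2: "gH l = gT m \<longleftrightarrow> l = l2 \<and> m = l3" "gT m = gH l \<longleftrightarrow> l = l2 \<and> m = l3"
  "gHp l = gH m \<longleftrightarrow> l = m \<and> m \<noteq> l2" "gH m = gHp l \<longleftrightarrow> l = m \<and> m \<noteq> l2"
  "gT l = gTp m \<longleftrightarrow> l = m \<and> l \<noteq> l3" "gTp m = gT l \<longleftrightarrow> l = m \<and> l \<noteq> l3"
  by (auto simp: gT_def gH_def gTp_def gHp_def)

lemma l3_pn: "l3 \<notin> lbls pn"
proof -
  have "l3 \<in> consumed S" using w_z by auto
  then show ?thesis using good_G3[OF gS] ch(3) by auto
qed

lemma le_pn: "le \<notin> lbls pn"
proof -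
  have "le \<in> consumed S" using le2 by auto
  then show ?thesis using good_G3[OF gS] ch(3) by auto
qed

lemma l2_a: "l2 \<notin> lbls a" using disj(1) w_z by auto
lemma le_a: "le \<notin> lbls a" using le_facts by auto

lemma createdS: "created S = created S1 \<union> {snd x, snd y} \<union> created S2 \<union> created S3" by auto

lemma l2_cr: "l2 \<notin> created S1" "l2 \<notin> created S2" "l2 \<notin> created S3"
  using disj(2,5) w_z by auto

lemma a_cr: "lbls a \<inter> created S = {}" using good_fresh0[OF gS] .

abbreviation "Ta \<equiv> rlf gT a"
abbreviation "Ha \<equiv> rlf gH a"
abbreviation "P \<equiv> rlf gT pn"
abbreviation "zT \<equiv> At (apsnd gT z)"

lemma Ha_eq: "rlf gHp a = Ha" by (rule rlf_cong) (use l2_a in \<open>auto simp: gH_def gHp_def\<close>)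
lemma P_eq: "rlf gTp pn = P" by (rule rlf_cong) (use l3_pn in \<open>auto simp: gT_def gTp_def\<close>)
lemma zw: "apsnd gH w = apsnd gT z"
  using atom_eq by (cases w; cases z) (auto simp: gH_def gT_def)

definition "COC = cocon gI gT gHp a"
definition "TT = liftS (CL Hole Ha) (rlS gT T0)"
definition "SW = [(Hole, RCommC (Dis P zT) Ha), (CR Ha Hole, RCommD P zT), (Hole, RSw Ha zT P)]"
definition "HH = liftS (DL Hole P) (rlS gH H0)"
definition "CM = [(Hole, RCommD (rlf gH pn) P)]"
definition "CON = contr gO gTp gH pn"
definition "Psi = COC @ TT @ SW @ HH @ CM @ CON"
abbreviation "P0 \<equiv> rlf gI a"

lemma dla: "dl a" using good_dl[OF gS] .
lemma dlpn: "dl pn" using good_endf_dl[OF gS] ch(3) by simp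

lemma COC_props: "good P0 COC" "endf P0 COC = Con Ta Ha" "created COC = gT ` lbls a \<union> gHp ` lbls a"
  "sigs COC = (\<lambda>l. (KCoctr, {gI l}, {gT l, gHp l})) ` lbls a" "sksA COC"
proof -
  have h: "good (rlf gI a) (cocon gI gT gHp a) \<and> created (cocon gI gT gHp a) = gT ` lbls a \<union> gHp ` lbls a \<and>
     sigs (cocon gI gT gHp a) = (\<lambda>l. (KCoctr, {gI l}, {gT l, gHp l})) ` lbls a"
    by (rule cocon_good[OF g_inj(5,1,4)]) (use g_dis dla in auto)
  then show "good P0 COC" "created COC = gT ` lbls a \<union> gHp ` lbls a"
    "sigs COC = (\<lambda>l. (KCoctr, {gI l}, {gT l, gHp l})) ` lbls a" by (auto simp: COC_def)
  show "endf P0 COC = Con Ta Ha" using cocon_chain[of gI a gT gHp] Ha_eq by (simp add: COC_def)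
  show "sksA COC" by (simp add: COC_def cocon_sksA)
qed

lemma CON_props: "good (Dis P (rlf gH pn)) CON" "endf (Dis P (rlf gH pn)) CON = rlf gO pn"
  "created CON = gO ` lbls pn"
  "sigs CON = (\<lambda>l. (KCtr, {gTp l, gH l}, {gO l})) ` lbls pn" "sksA CON"
proof -
  have h: "good (Dis (rlf gTp pn) (rlf gH pn)) (contr gO gTp gH pn) \<and> created (contr gO gTp gH pn) = gO ` lbls pn \<and>
     sigs (contr gO gTp gH pn) = (\<lambda>l. (KCtr, {gTp l, gH l}, {gO l})) ` lbls pn"
    by (rule contr_good[OF g_inj(6,3,2)]) (use g_dis dlpn in auto)
  then show "good (Dis P (rlf gH pn)) CON" "created CON = gO ` lbls pn"
    "sigs CON = (\<lambda>l. (KCtr, {gTp l, gH l}, {gO l})) ` lbls pn" using P_eq by (auto simp: CON_def)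
  show "endf (Dis P (rlf gH pn)) CON = rlf gO pn" using contr_chain[of gTp pn gH gO] P_eq by (simp add: CON_def)
  show "sksA CON" by (simp add: CON_def contr_sksA)
qed

lemma Psi_props: "good P0 Psi" "endf P0 Psi = rlf gO pn" "sksA Psi"
  "sigs Psi = (\<lambda>l. (KCoctr, {gI l}, {gT l, gHp l})) ` lbls a \<union>
      rsig gT ` (sigs S1 \<union> sigs S2 \<union> sigs S3 \<union> {(KWk, {}, {l2})}) \<union>
      rsig gH ` (sigs S1 \<union> sigs S2 \<union> sigs S3 \<union> {(KCowk, {l3}, {})}) \<union>
      (\<lambda>l. (KCtr, {gTp l, gH l}, {gO l})) ` lbls pn"
proof -
  have sw: "structural SW" "structural CM" by (auto simp: SW_def CM_def)
  have eTT: "endf (Con Ta Ha) TT = Con (Dis P zT) Ha"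
    using T0_props(2) endf_map[of "apsnd gT" a T0] by (simp add: TT_def)
  have eSW: "endf (Con (Dis P zT) Ha) SW = Dis (Con Ha zT) P" by (simp add: SW_def)
  have sH: "rlf gH (Con a (At w)) = Con Ha zT" using zw by simp
  have eHH: "endf (Dis (Con Ha zT) P) HH = Dis (rlf gH pn) P"
    using H0_props(2) endf_map[of "apsnd gH" "Con a (At w)" H0] sH by (simp add: HH_def)
  have eCM: "endf (Dis (rlf gH pn) P) CM = Dis P (rlf gH pn)" by (simp add: CM_def)
  have cTT: "created TT = gT ` created T0" by (simp add: TT_def created_rl)
  have cHH: "created HH = gH ` created H0" by (simp add: HH_def created_rl)
  have cSW: "created SW = {}" "created CM = {}" using structural_props[OF sw(1)] structural_props[OF sw(2)] by auto
  note inj = inj_eq[OF g_inj(1)] inj_eq[OF g_inj(2)] inj_eq[OF g_inj(3)] inj_eq[OF g_inj(4)]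
    inj_eq[OF g_inj(5)] inj_eq[OF g_inj(6)]
  have cT0: "created T0 = created S1 \<union> {l2} \<union> created S2 \<union> created S3" using T0_props(3) .
  have cH0: "created H0 = created S1 \<union> created S2 \<union> created S3" using H0_props(3) .
  have sub: "created S1 \<union> {l2} \<union> created S2 \<union> created S3 \<subseteq> created S" using w_z(3) by auto
  have acr: "lbls a \<inter> (created S1 \<union> {l2} \<union> created S2 \<union> created S3) = {}"
    using a_cr sub by blast
  have l2n: "l2 \<notin> created S1 \<union> created S2 \<union> created S3" using l2_cr by auto
  have gTT: "good (Con Ta Ha) TT" unfolding TT_def
  proof (rule good_lift1(3))
    show "good Ta (rlS gT T0)" by (rule good_rl[OF g_inj(1) T0_props(1)])
    show "dl (Con Ta Ha)" using good_endf_dl[OF COC_props(1)] COC_props(2) by simp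
    show "lbls Ha \<inter> created (rlS gT T0) = {}"
      using acr l2n l2_a unfolding created_rl cT0 by (auto simp: gT_def gH_def split: if_splits)
  qed
  have dlSW: "dl (Con (Dis P zT) Ha)" using good_endf_dl[OF gTT] eTT by simp
  have gSW: "good (Con (Dis P zT) Ha) SW"
    using structural_good[OF sw(1) _ dlSW] by (simp add: SW_def)
  have gHH: "good (Dis (Con Ha zT) P) HH" unfolding HH_def
  proof (rule good_lift1(1))
    show "good (Con Ha zT) (rlS gH H0)" using good_rl[OF g_inj(2) H0_props(1)] sH by simp
    show "dl (Dis (Con Ha zT) P)" using good_endf_dl[OF gSW] eSW by simp
    show "lbls P \<inter> created (rlS gH H0) = {}"
      using l2n l3_pn unfolding created_rl cH0 by (auto simp: gT_def gH_def split: if_splits)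
  qed
  have dlCM: "dl (Dis (rlf gH pn) P)" using good_endf_dl[OF gHH] eHH by simp
  have gCM: "good (Dis (rlf gH pn) P) CM"
    using structural_good[OF sw(2) _ dlCM] by (simp add: CM_def)
  have g56: "good (Dis (rlf gH pn) P) (CM @ CON)"
    by (rule good_appI[OF gCM eCM CON_props(1)]) (use cSW CON_props(3) g_dis in auto)
  have g46: "good (Dis (Con Ha zT) P) (HH @ CM @ CON)"
    by (rule good_appI[OF gHH eHH g56])
       (use cSW CON_props(3) g_dis in \<open>auto simp: cHH\<close>)
  have g36: "good (Con (Dis P zT) Ha) (SW @ HH @ CM @ CON)"
    by (rule good_appI[OF gSW eSW g46])
       (use cSW CON_props(3) g_dis l3_pn l2n acr in \<open>auto simp: cHH cH0 g_eq2 inj\<close>)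
  have g26: "good (Con Ta Ha) (TT @ SW @ HH @ CM @ CON)"
    by (rule good_appI[OF gTT eTT g36])
       (use cSW CON_props(3) g_dis acr l2n in \<open>auto simp: cHH cTT cT0 cH0 g_eq2 inj\<close>)
  show "good P0 Psi" unfolding Psi_def
    by (rule good_appI[OF COC_props(1,2) g26])
       (use cSW CON_props(3) COC_props(3) g_dis acr l2n in \<open>auto simp: cHH cTT cT0 cH0 g_eq2 inj\<close>)
  show "endf P0 Psi = rlf gO pn" unfolding Psi_def
    using COC_props(2) eTT eSW eHH eCM CON_props(2) by (simp add: endf_append)
  show "sksA Psi" unfolding Psi_def TT_def HH_def
    using COC_props(5) CON_props(5) T0_props(5) H0_props(5) structural_sksA[OF sw(1)] structural_sksA[OF sw(2)]
    by (simp add: sksA_rl)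
  show "sigs Psi = (\<lambda>l. (KCoctr, {gI l}, {gT l, gHp l})) ` lbls a \<union>
      rsig gT ` (sigs S1 \<union> sigs S2 \<union> sigs S3 \<union> {(KWk, {}, {l2})}) \<union>
      rsig gH ` (sigs S1 \<union> sigs S2 \<union> sigs S3 \<union> {(KCowk, {l3}, {})}) \<union>
      (\<lambda>l. (KCtr, {gTp l, gH l}, {gO l})) ` lbls pn"
    unfolding Psi_def TT_def HH_def using COC_props(4) CON_props(4) T0_props(4) H0_props(4)
      structural_props[OF sw(1)] structural_props[OF sw(2)]
    by (simp add: sigs_rl Un_assoc)
qed

end


lemma flow_iso_trans: "flow_iso F G \<Longrightarrow> flow_iso G H \<Longrightarrow> flow_iso F H"
proof -
  assume "flow_iso F G" "flow_iso G H"
  then obtain fv fe gv ge where f: "bij_betw fv (fV F) (fV G)" "bij_betw fe (fE F) (fE G)"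
     "\<forall>v\<in>fV F. flab G (fv v) = flab F v"
     "\<forall>e\<in>fE F. fup G (fe e) = map_option fv (fup F e) \<and> flo G (fe e) = map_option fv (flo F e)"
    and g: "bij_betw gv (fV G) (fV H)" "bij_betw ge (fE G) (fE H)"
     "\<forall>v\<in>fV G. flab H (gv v) = flab G v"
     "\<forall>e\<in>fE G. fup H (ge e) = map_option gv (fup G e) \<and> flo H (ge e) = map_option gv (flo G e)"
    unfolding flow_iso_def by blast
  show "flow_iso F H" unfolding flow_iso_def
  proof (intro exI conjI ballI)
    show "bij_betw (gv \<circ> fv) (fV F) (fV H)" using f(1) g(1) by (rule bij_betw_trans)
    show "bij_betw (ge \<circ> fe) (fE F) (fE H)" using f(2) g(2) by (rule bij_betw_trans)
    fix v assume v: "v \<in> fV F"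
    then have "fv v \<in> fV G" using f(1) by (auto simp: bij_betw_def)
    then show "flab H ((gv \<circ> fv) v) = flab F v" using f(3) g(3) v by simp
  next
    fix e assume e: "e \<in> fE F"
    then have "fe e \<in> fE G" using f(2) by (auto simp: bij_betw_def)
    then show "fup H ((ge \<circ> fe) e) = map_option (gv \<circ> fv) (fup F e)"
      "flo H ((ge \<circ> fe) e) = map_option (gv \<circ> fv) (flo F e)"
      using f(4) g(4) e by (auto simp: option.map_comp)
  qed
qed

lemma flow_iso_sym:
  assumes af: "\<forall>e\<in>fE F. (\<forall>v. fup F e = Some v \<longrightarrow> v \<in> fV F) \<and> (\<forall>v. flo F e = Some v \<longrightarrow> v \<in> fV F)"
    and iso: "flow_iso F G"
  shows "flow_iso G F"
proof -
  obtain fv fe where f: "bij_betw fv (fV F) (fV G)" "bij_betw fe (fE F) (fE G)"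
     "\<forall>v\<in>fV F. flab G (fv v) = flab F v"
     "\<forall>e\<in>fE F. fup G (fe e) = map_option fv (fup F e) \<and> flo G (fe e) = map_option fv (flo F e)"
    using iso unfolding flow_iso_def by blast
  let ?gv = "inv_into (fV F) fv" and ?ge = "inv_into (fE F) fe"
  have gv: "bij_betw ?gv (fV G) (fV F)" using f(1) by (rule bij_betw_inv_into)
  have ge: "bij_betw ?ge (fE G) (fE F)" using f(2) by (rule bij_betw_inv_into)
  show ?thesis unfolding flow_iso_def
  proof (intro exI conjI ballI)
    show "bij_betw ?gv (fV G) (fV F)" by (rule gv)
    show "bij_betw ?ge (fE G) (fE F)" by (rule ge)
    fix v assume v: "v \<in> fV G"
    then have "?gv v \<in> fV F" "fv (?gv v) = v" using f(1) gv
      by (auto simp: bij_betw_def f_inv_into_f)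
    then show "flab F (?gv v) = flab G v" using f(3) by metis
  next
    fix e assume e: "e \<in> fE G"
    then have e1: "?ge e \<in> fE F" "fe (?ge e) = e" using f(2) ge
      by (auto simp: bij_betw_def f_inv_into_f)
    have inv: "?gv (fv u) = u" if "u \<in> fV F" for u
      using f(1) that by (simp add: bij_betw_def inv_into_f_f)
    have "fup G e = map_option fv (fup F (?ge e))" using f(4) e1 by metis
    then show "fup F (?ge e) = map_option ?gv (fup G e)"
      using af e1(1) inv by (cases "fup F (?ge e)") auto
    have "flo G e = map_option fv (flo F (?ge e))" using f(4) e1 by metis
    then show "flo F (?ge e) = map_option ?gv (flo G e)"
      using af e1(1) inv by (cases "flo F (?ge e)") auto
  qed
qed

lemma iso_crit:
  fixes F :: "('v, 'e) flow"
  assumes bv: "bij_betw fv (fV F) Sg"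
    and be: "bij_betw fe (fE F) (P \<union> \<Union> ((snd \<circ> snd) ` Sg))"
    and lab: "\<forall>v\<in>fV F. fst (fv v) = flab F v"
    and up: "\<forall>x\<in>fE F. (fup F x = None \<longleftrightarrow> fe x \<in> P) \<and>
               (\<forall>v. fup F x = Some v \<longrightarrow> v \<in> fV F \<and> fe x \<in> snd (snd (fv v)))"
    and lo: "\<forall>x\<in>fE F. (flo F x = None \<longleftrightarrow> fe x \<in> Q) \<and>
               (\<forall>v. flo F x = Some v \<longrightarrow> v \<in> fV F \<and> fe x \<in> fst (snd (fv v)))"
    and dj: "\<forall>s1\<in>Sg. \<forall>s2\<in>Sg. s1 \<noteq> s2 \<longrightarrow> snd (snd s1) \<inter> snd (snd s2) = {} \<and> fst (snd s1) \<inter> fst (snd s2) = {}"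
  shows "flow_iso F (sigflow P Sg Q)"
  unfolding flow_iso_def
proof (intro exI conjI ballI)
  show "bij_betw fv (fV F) (fV (sigflow P Sg Q))" using bv by (simp add: sigflow_def)
  show "bij_betw fe (fE F) (fE (sigflow P Sg Q))" using be by (simp add: sigflow_def)
  fix v assume "v \<in> fV F" then show "flab (sigflow P Sg Q) (fv v) = flab F v" using lab by (simp add: sigflow_def)
next
  fix x assume x: "x \<in> fE F"
  have fvS: "fv v \<in> Sg" if "v \<in> fV F" for v using bv that by (auto simp: bij_betw_def)
  show "fup (sigflow P Sg Q) (fe x) = map_option fv (fup F x)"
  proof (cases "fup F x")
    case None then show ?thesis using up x by (simp add: sigflow_def)
  next
    case (Some v)
    then have v: "v \<in> fV F" "fe x \<in> snd (snd (fv v))" "fe x \<notin> P" using up x by auto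
    have "(THE \<sigma>. \<sigma> \<in> Sg \<and> fe x \<in> snd (snd \<sigma>)) = fv v"
      by (rule the_equality) (use v fvS dj in blast)+
    then show ?thesis using Some v by (simp add: sigflow_def)
  qed
  show "flo (sigflow P Sg Q) (fe x) = map_option fv (flo F x)"
  proof (cases "flo F x")
    case None then show ?thesis using lo x by (simp add: sigflow_def)
  next
    case (Some v)
    then have v: "v \<in> fV F" "fe x \<in> fst (snd (fv v))" "fe x \<notin> Q" using lo x by auto
    have "(THE \<sigma>. \<sigma> \<in> Sg \<and> fe x \<in> fst (snd \<sigma>)) = fv v"
      by (rule the_equality) (use v fvS dj in blast)+
    then show ?thesis using Some v by (simp add: sigflow_def)
  qed
qed

lemma se_parts:
  fixes B :: "('v, 'e) flow"
  assumes "\<iota> = the (fup B \<epsilon>)" "\<kappa> = the (flo B \<epsilon>)"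
    "\<epsilon>2 = (THE e. e \<in> fE B \<and> e \<noteq> \<epsilon> \<and> fup B e = Some \<iota>)"
    "\<epsilon>3 = (THE e. e \<in> fE B \<and> e \<noteq> \<epsilon> \<and> flo B e = Some \<kappa>)"
  shows "fV (se_construct B \<epsilon>) = {Cp b v | b v. v \<in> fV B - {\<iota>, \<kappa>}} \<union> {NW, NCW}
      \<union> NCoc ` {e \<in> fE B - {\<epsilon>}. e \<noteq> \<epsilon>2 \<and> fup B e = None}
      \<union> NCon ` {e \<in> fE B - {\<epsilon>}. e \<noteq> \<epsilon>3 \<and> flo B e = None}"
   and "fE (se_construct B \<epsilon>) = {ECp True e | e. e \<in> fE B - {\<epsilon>} \<and> e \<noteq> \<epsilon>3}
      \<union> {ECp False e | e. e \<in> fE B - {\<epsilon>} \<and> e \<noteq> \<epsilon>2} \<union> {EMid}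
      \<union> EIn ` {e \<in> fE B - {\<epsilon>}. e \<noteq> \<epsilon>2 \<and> fup B e = None}
      \<union> EOut ` {e \<in> fE B - {\<epsilon>}. e \<noteq> \<epsilon>3 \<and> flo B e = None}"
   and "flab (se_construct B \<epsilon>) = (\<lambda>x. case x of Cp b v \<Rightarrow> flab B v | NW \<Rightarrow> KWk | NCW \<Rightarrow> KCowk
                          | NCoc e \<Rightarrow> KCoctr | NCon e \<Rightarrow> KCtr)"
   and "fup (se_construct B \<epsilon>) = (\<lambda>x. case x of
          ECp b e \<Rightarrow> (if e = \<epsilon>2 then Some NW
                    else (case fup B e of None \<Rightarrow> Some (NCoc e) | Some v \<Rightarrow> Some (Cp b v)))
        | EIn e \<Rightarrow> None | EOut e \<Rightarrow> Some (NCon e)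
        | EMid \<Rightarrow> (if \<epsilon>3 = \<epsilon>2 then Some NW
                    else (case fup B \<epsilon>3 of None \<Rightarrow> Some (NCoc \<epsilon>3) | Some v \<Rightarrow> Some (Cp True v))))"
   and "flo (se_construct B \<epsilon>) = (\<lambda>x. case x of
          ECp b e \<Rightarrow> (if e = \<epsilon>3 then Some NCW
                    else (case flo B e of None \<Rightarrow> Some (NCon e) | Some v \<Rightarrow> Some (Cp b v)))
        | EIn e \<Rightarrow> Some (NCoc e) | EOut e \<Rightarrow> None
        | EMid \<Rightarrow> (if \<epsilon>2 = \<epsilon>3 then Some NCW
                    else (case flo B \<epsilon>2 of None \<Rightarrow> Some (NCon \<epsilon>2) | Some v \<Rightarrow> Some (Cp False v))))"
  unfolding assms by (simp_all add: se_construct_def Let_def)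


lemma created_ex: "l \<in> created s \<Longrightarrow> \<exists>\<sigma>\<in>sigs s. l \<in> snd (snd \<sigma>)"
  unfolding created_sigs by auto
lemma consumed_ex: "l \<in> consumed s \<Longrightarrow> \<exists>\<sigma>\<in>sigs s. l \<in> fst (snd \<sigma>)"
  unfolding consumed_sigs by auto

locale bdec = dec a S1 c x y S2 c' x' y' S3 le
  for a :: "('n atom \<times> nat) formula" and S1 c x y S2 c' x' y' S3 le +
  fixes B :: "('v, 'e) flow" and \<epsilon> :: 'e and \<iota> \<kappa> :: 'v
    and fvB :: "'v \<Rightarrow> vkind \<times> nat set \<times> nat set" and feB :: "'e \<Rightarrow> nat"
  assumes afB: "\<forall>e\<in>fE B. (\<forall>v. fup B e = Some v \<longrightarrow> v \<in> fV B) \<and> (\<forall>v. flo B e = Some v \<longrightarrow> v \<in> fV B)"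
    and epsE: "\<epsilon> \<in> fE B" and upe: "fup B \<epsilon> = Some \<iota>" and loe: "flo B \<epsilon> = Some \<kappa>"
    and bvB: "bij_betw fvB (fV B) (sigs (S1 @ (c, RInt x y) # S2 @ (c', RCut x' y') # S3))"
    and beB: "bij_betw feB (fE B) (lbls a \<union> created (S1 @ (c, RInt x y) # S2 @ (c', RCut x' y') # S3))"
    and labB: "\<forall>v\<in>fV B. fst (fvB v) = flab B v"
    and isoB: "\<forall>e\<in>fE B. fup (SF a (S1 @ (c, RInt x y) # S2 @ (c', RCut x' y') # S3)) (feB e) = map_option fvB (fup B e) \<and>
                flo (SF a (S1 @ (c, RInt x y) # S2 @ (c', RCut x' y') # S3)) (feB e) = map_option fvB (flo B e)"
    and s_iota: "fvB \<iota> = sig (RInt x y)" and s_kappa: "fvB \<kappa> = sig (RCut x' y')" and fe_eps: "feB \<epsilon> = le"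
begin

lemma feB_img: "feB ` fE B = lbls a \<union> created S" using beB unfolding bij_betw_def by (rule conjunct2)
lemma feB_in: "e \<in> fE B \<Longrightarrow> feB e \<in> lbls a \<union> created S" using feB_img by blast
lemma feB_inj: "e \<in> fE B \<Longrightarrow> e' \<in> fE B \<Longrightarrow> feB e = feB e' \<longleftrightarrow> e = e'"
  using beB unfolding bij_betw_def inj_on_def by blast
lemma feB_surj: assumes "l \<in> lbls a \<union> created S" shows "\<exists>e\<in>fE B. feB e = l"
proof -
  from assms have "l \<in> feB ` fE B" unfolding feB_img .
  then show ?thesis by blast
qed
lemma fvB_img: "fvB ` fV B = sigs S" using bvB unfolding bij_betw_def by (rule conjunct2)
lemma fvB_in: "v \<in> fV B \<Longrightarrow> fvB v \<in> sigs S" using fvB_img by blast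
lemma fvB_inj: "v \<in> fV B \<Longrightarrow> v' \<in> fV B \<Longrightarrow> fvB v = fvB v' \<longleftrightarrow> v = v'"
  using bvB unfolding bij_betw_def inj_on_def by blast

lemma EQ: "lbls a \<union> created S = lbls pn \<union> consumed S" using good_G2[OF gS] ch(3) by simp

lemma G3S: "consumed S \<inter> lbls pn = {}" using good_G3[OF gS] unfolding ch(3) .

lemma iota_V: "\<iota> \<in> fV B" and kappa_V: "\<kappa> \<in> fV B" using afB epsE upe loe by auto

lemma B1: "e \<in> fE B \<Longrightarrow> fup B e = None \<longleftrightarrow> feB e \<in> lbls a"
  using isoB by (cases "fup B e") (auto simp: sigflow_def split: if_splits)

lemma B3: "e \<in> fE B \<Longrightarrow> flo B e = None \<longleftrightarrow> feB e \<in> lbls pn"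
  using isoB ch(3) by (cases "flo B e") (auto simp: sigflow_def split: if_splits)

lemma B2: assumes e: "e \<in> fE B" and u: "fup B e = Some v" shows "v \<in> fV B" "feB e \<in> snd (snd (fvB v))"
proof -
  show v: "v \<in> fV B" using afB e u by auto
  have n: "feB e \<notin> lbls a" using B1[OF e] u by simp
  then have "feB e \<in> created S" using feB_in[OF e] by blast
  then obtain \<sigma> where \<sigma>: "\<sigma> \<in> sigs S" "feB e \<in> snd (snd \<sigma>)" using created_ex by blast
  have "fup (SF a S) (feB e) = Some (fvB v)" using isoB e u by auto
  then have "(THE \<sigma>. \<sigma> \<in> sigs S \<and> feB e \<in> snd (snd \<sigma>)) = fvB v" using n by (simp add: sigflow_def)
  moreover have "(THE \<sigma>. \<sigma> \<in> sigs S \<and> feB e \<in> snd (snd \<sigma>)) = \<sigma>" using the_sig_out[OF gS \<sigma>] .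
  ultimately show "feB e \<in> snd (snd (fvB v))" using \<sigma> by simp
qed

lemma B4: assumes e: "e \<in> fE B" and u: "flo B e = Some v" shows "v \<in> fV B" "feB e \<in> fst (snd (fvB v))"
proof -
  show v: "v \<in> fV B" using afB e u by auto
  have n: "feB e \<notin> lbls pn" using B3[OF e] u by simp
  then have "feB e \<in> consumed S" using feB_in[OF e] EQ by blast
  then obtain \<sigma> where \<sigma>: "\<sigma> \<in> sigs S" "feB e \<in> fst (snd \<sigma>)" using consumed_ex by blast
  have "flo (SF a S) (feB e) = Some (fvB v)" using isoB e u by auto
  then have "(THE \<sigma>. \<sigma> \<in> sigs S \<and> feB e \<in> fst (snd \<sigma>)) = fvB v" using n ch(3) by (simp add: sigflow_def)
  moreover have "(THE \<sigma>. \<sigma> \<in> sigs S \<and> feB e \<in> fst (snd \<sigma>)) = \<sigma>" using the_sig_in[OF gS \<sigma>] .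
  ultimately show "feB e \<in> fst (snd (fvB v))" using \<sigma> by simp
qed

lemma B5: assumes v: "v \<in> fV B" and l: "l \<in> snd (snd (fvB v))"
  shows "\<exists>e\<in>fE B. feB e = l \<and> fup B e = Some v"
proof -
  have lc: "l \<in> created S" using sigs_outs[OF fvB_in[OF v]] l by blast
  then obtain e where e: "e \<in> fE B" "feB e = l" using feB_surj by blast
  have n: "l \<notin> lbls a" using lc a_cr by blast
  have "fup (SF a S) l = Some (fvB v)"
    using n the_sig_out[OF gS fvB_in[OF v] l] by (simp add: sigflow_def)
  then have "map_option fvB (fup B e) = Some (fvB v)" using isoB e by auto
  then obtain v' where v': "fup B e = Some v'" "fvB v' = fvB v" by auto
  have "v' \<in> fV B" using afB e v' by auto
  then have "v' = v" using v v' fvB_inj by blast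
  then show ?thesis using e v' by blast
qed

lemma B6: assumes v: "v \<in> fV B" and l: "l \<in> fst (snd (fvB v))"
  shows "\<exists>e\<in>fE B. feB e = l \<and> flo B e = Some v"
proof -
  have lc: "l \<in> consumed S" using sigs_ins[OF fvB_in[OF v]] l by blast
  then have "l \<in> lbls a \<union> created S" using EQ by blast
  then obtain e where e: "e \<in> fE B" "feB e = l" using feB_surj by blast
  have n: "l \<notin> lbls pn" using lc G3S by blast
  have "flo (SF a S) l = Some (fvB v)"
    using n the_sig_in[OF gS fvB_in[OF v] l] ch(3) by (simp add: sigflow_def)
  then have "map_option fvB (flo B e) = Some (fvB v)" using isoB e by auto
  then obtain v' where v': "flo B e = Some v'" "fvB v' = fvB v" by auto
  have "v' \<in> fV B" using afB e v' by auto
  then have "v' = v" using v v' fvB_inj by blast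
  then show ?thesis using e v' by blast
qed

definition "\<epsilon>2 = (THE e. e \<in> fE B \<and> e \<noteq> \<epsilon> \<and> fup B e = Some \<iota>)"
definition "\<epsilon>3 = (THE e. e \<in> fE B \<and> e \<noteq> \<epsilon> \<and> flo B e = Some \<kappa>)"

lemma outs_iota: "snd (snd (fvB \<iota>)) = {le, l2}" and ins_iota: "fst (snd (fvB \<iota>)) = {}"
  using s_iota w_z le1 dls by (auto simp: sig_def w_def)
lemma ins_kappa: "fst (snd (fvB \<kappa>)) = {le, l3}" and outs_kappa: "snd (snd (fvB \<kappa>)) = {}"
  using s_kappa w_z le2 dls by (auto simp: sig_def z_def)

lemma eps2: "\<epsilon>2 \<in> fE B" "\<epsilon>2 \<noteq> \<epsilon>" "fup B \<epsilon>2 = Some \<iota>" "feB \<epsilon>2 = l2"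
proof -
  obtain e0 where e0: "e0 \<in> fE B" "feB e0 = l2" "fup B e0 = Some \<iota>"
    using B5[OF iota_V, of l2] outs_iota by auto
  have ne: "e0 \<noteq> \<epsilon>" using e0(2) fe_eps w_z by auto
  have "\<epsilon>2 = e0" unfolding \<epsilon>2_def
  proof (rule the_equality)
    show "e0 \<in> fE B \<and> e0 \<noteq> \<epsilon> \<and> fup B e0 = Some \<iota>" using e0 ne by simp
  next
    fix e assume e: "e \<in> fE B \<and> e \<noteq> \<epsilon> \<and> fup B e = Some \<iota>"
    then have "feB e \<in> {le, l2}" using B2[of e \<iota>] outs_iota by auto
    moreover have "feB e \<noteq> le" using e feB_inj[OF _ epsE] fe_eps by auto
    ultimately have "feB e = feB e0" using e0 by auto
    then show "e = e0" using feB_inj e e0 by blast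
  qed
  then show "\<epsilon>2 \<in> fE B" "\<epsilon>2 \<noteq> \<epsilon>" "fup B \<epsilon>2 = Some \<iota>" "feB \<epsilon>2 = l2" using e0 ne by auto
qed

lemma eps3: "\<epsilon>3 \<in> fE B" "\<epsilon>3 \<noteq> \<epsilon>" "flo B \<epsilon>3 = Some \<kappa>" "feB \<epsilon>3 = l3"
proof -
  obtain e0 where e0: "e0 \<in> fE B" "feB e0 = l3" "flo B e0 = Some \<kappa>"
    using B6[OF kappa_V, of l3] ins_kappa by auto
  have ne: "e0 \<noteq> \<epsilon>" using e0(2) fe_eps w_z by auto
  have "\<epsilon>3 = e0" unfolding \<epsilon>3_def
  proof (rule the_equality)
    show "e0 \<in> fE B \<and> e0 \<noteq> \<epsilon> \<and> flo B e0 = Some \<kappa>" using e0 ne by simp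
  next
    fix e assume e: "e \<in> fE B \<and> e \<noteq> \<epsilon> \<and> flo B e = Some \<kappa>"
    then have "feB e \<in> {le, l3}" using B4[of e \<kappa>] ins_kappa by auto
    moreover have "feB e \<noteq> le" using e feB_inj[OF _ epsE] fe_eps by auto
    ultimately have "feB e = feB e0" using e0 by auto
    then show "e = e0" using feB_inj e e0 by blast
  qed
  then show "\<epsilon>3 \<in> fE B" "\<epsilon>3 \<noteq> \<epsilon>" "flo B \<epsilon>3 = Some \<kappa>" "feB \<epsilon>3 = l3" using e0 ne by auto
qed

lemma sig_rest: "fvB ` (fV B - {\<iota>, \<kappa>}) = sigs S1 \<union> sigs S2 \<union> sigs S3"
proof -
  have i1: "fvB \<iota> \<notin> sigs S1 \<union> sigs S2 \<union> sigs S3"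
  proof
    assume "fvB \<iota> \<in> sigs S1 \<union> sigs S2 \<union> sigs S3"
    then have "le \<in> created S1 \<union> created S2 \<union> created S3"
      using sigs_outs[of "fvB \<iota>" S1] sigs_outs[of "fvB \<iota>" S2] sigs_outs[of "fvB \<iota>" S3] outs_iota by blast
    then show False using le_facts by blast
  qed
  have k1: "fvB \<kappa> \<notin> sigs S1 \<union> sigs S2 \<union> sigs S3"
  proof
    assume "fvB \<kappa> \<in> sigs S1 \<union> sigs S2 \<union> sigs S3"
    then have "le \<in> consumed S1 \<union> consumed S2 \<union> consumed S3"
      using sigs_ins[of "fvB \<kappa>" S1] sigs_ins[of "fvB \<kappa>" S2] sigs_ins[of "fvB \<kappa>" S3] ins_kappa by blast
    then show False using le_facts by blast
  qed
  have sS': "sigs S = sigs S1 \<union> {fvB \<iota>} \<union> sigs S2 \<union> {fvB \<kappa>} \<union> sigs S3"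
    using s_iota s_kappa by auto
  have "fvB ` (fV B - {\<iota>, \<kappa>}) = fvB ` fV B - {fvB \<iota>, fvB \<kappa>}"
    using bvB iota_V kappa_V by (auto simp: bij_betw_def inj_on_def)
  also have "\<dots> = sigs S1 \<union> sigs S2 \<union> sigs S3" unfolding fvB_img sS' using i1 k1 by blast
  finally show ?thesis .
qed

end


context bdec
begin

abbreviation "F \<equiv> se_construct B \<epsilon>"
definition "Ups = {e \<in> fE B - {\<epsilon>}. e \<noteq> \<epsilon>2 \<and> fup B e = None}"
definition "Los = {e \<in> fE B - {\<epsilon>}. e \<noteq> \<epsilon>3 \<and> flo B e = None}"

lemma iota_the: "\<iota> = the (fup B \<epsilon>)" using upe by simp
lemma kappa_the: "\<kappa> = the (flo B \<epsilon>)" using loe by simp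

lemmas SE = se_parts[OF iota_the kappa_the \<epsilon>2_def \<epsilon>3_def]

lemma FV: "fV F = {Cp b v | b v. v \<in> fV B - {\<iota>, \<kappa>}} \<union> {NW, NCW} \<union> NCoc ` Ups \<union> NCon ` Los"
  using SE(1) by (simp add: Ups_def Los_def)
lemma FE: "fE F = {ECp True e | e. e \<in> fE B - {\<epsilon>} \<and> e \<noteq> \<epsilon>3} \<union> {ECp False e | e. e \<in> fE B - {\<epsilon>} \<and> e \<noteq> \<epsilon>2}
   \<union> {EMid} \<union> EIn ` Ups \<union> EOut ` Los"
  using SE(2) by (simp add: Ups_def Los_def)
lemmas Flab = SE(3) and Fup = SE(4) and Flo = SE(5)

definition fe' :: "'e see \<Rightarrow> nat" where "fe' xx = to_nat (map_see feB xx)"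
definition fv' :: "('v, 'e) sev \<Rightarrow> vkind \<times> nat set \<times> nat set" where
  "fv' v = (case v of Cp b u \<Rightarrow> rsig (if b then gT else gH) (fvB u) | NW \<Rightarrow> (KWk, {}, {gT l2})
     | NCW \<Rightarrow> (KCowk, {gH l3}, {}) | NCoc e \<Rightarrow> (KCoctr, {gI (feB e)}, {gT (feB e), gHp (feB e)})
     | NCon e \<Rightarrow> (KCtr, {gTp (feB e), gH (feB e)}, {gO (feB e)}))"

lemma fe'_simps[simp]: "fe' (ECp True e) = gTp (feB e)" "fe' (ECp False e) = gHp (feB e)"
  "fe' EMid = to_nat (EMid :: nat see)" "fe' (EIn e) = gI (feB e)" "fe' (EOut e) = gO (feB e)"
  by (simp_all add: fe'_def gTp_def gHp_def gI_def gO_def)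

lemma fv'_simps[simp]: "fv' (Cp True u) = rsig gT (fvB u)" "fv' (Cp False u) = rsig gH (fvB u)"
  "fv' NW = (KWk, {}, {gT l2})" "fv' NCW = (KCowk, {gH l3}, {})"
  "fv' (NCoc e) = (KCoctr, {gI (feB e)}, {gT (feB e), gHp (feB e)})"
  "fv' (NCon e) = (KCtr, {gTp (feB e), gH (feB e)}, {gO (feB e)})"
  by (simp_all add: fv'_def)

lemma gT_ne: "l \<noteq> l3 \<Longrightarrow> gT l = gTp l" by (simp add: gT_def gTp_def)
lemma gH_ne: "l \<noteq> l2 \<Longrightarrow> gH l = gHp l" by (simp add: gH_def gHp_def)
lemma gT_l3: "gT l3 = to_nat (EMid :: nat see)" by (simp add: gT_def)
lemma gH_l2: "gH l2 = to_nat (EMid :: nat see)" by (simp add: gH_def)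
lemma gTp_ne_mid: "gTp l \<noteq> to_nat (EMid :: nat see)" "gHp l \<noteq> to_nat (EMid :: nat see)"
  "gI l \<noteq> to_nat (EMid :: nat see)" "gO l \<noteq> to_nat (EMid :: nat see)"
  "to_nat (EMid :: nat see) \<noteq> gTp l" "to_nat (EMid :: nat see) \<noteq> gHp l"
  "to_nat (EMid :: nat see) \<noteq> gI l" "to_nat (EMid :: nat see) \<noteq> gO l"
  by (simp_all add: gTp_def gHp_def gI_def gO_def)

lemma mid_notin[simp]: "to_nat (EMid :: nat see) \<notin> gI ` A" "to_nat (EMid :: nat see) \<notin> gO ` A"
  by (auto simp: gI_def gO_def)

lemma rsig_simps[simp]: "fst (rsig g \<sigma>) = fst \<sigma>" "fst (snd (rsig g \<sigma>)) = g ` fst (snd \<sigma>)"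
  "snd (snd (rsig g \<sigma>)) = g ` snd (snd \<sigma>)"
  by (simp_all add: rsig_def)

lemma le_ne: "l2 \<noteq> le" "l3 \<noteq> le" using w_z by auto
lemma e23: "\<epsilon>2 = \<epsilon>3 \<longleftrightarrow> l2 = l3" using eps2 eps3 feB_inj by metis

lemma up_iota: "e \<in> fE B \<Longrightarrow> fup B e = Some \<iota> \<Longrightarrow> e = \<epsilon> \<or> e = \<epsilon>2"
proof -
  assume e: "e \<in> fE B" "fup B e = Some \<iota>"
  then have "feB e \<in> {le, l2}" using B2[OF e] outs_iota by simp
  then have "feB e = feB \<epsilon> \<or> feB e = feB \<epsilon>2" using eps2 fe_eps by auto
  then show ?thesis using e(1) epsE eps2(1) feB_inj by blast
qed
lemma lo_kappa: "e \<in> fE B \<Longrightarrow> flo B e = Some \<kappa> \<Longrightarrow> e = \<epsilon> \<or> e = \<epsilon>3"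
proof -
  assume e: "e \<in> fE B" "flo B e = Some \<kappa>"
  then have "feB e \<in> {le, l3}" using B4[OF e] ins_kappa by simp
  then have "feB e = feB \<epsilon> \<or> feB e = feB \<epsilon>3" using eps3 fe_eps by auto
  then show ?thesis using e(1) epsE eps3(1) feB_inj by blast
qed
lemma up_kappa: "e \<in> fE B \<Longrightarrow> fup B e \<noteq> Some \<kappa>"
  using B2 outs_kappa by fastforce
lemma lo_iota: "e \<in> fE B \<Longrightarrow> flo B e \<noteq> Some \<iota>"
  using B4 ins_iota by fastforce

lemma Ups_a: "e \<in> Ups \<Longrightarrow> feB e \<in> lbls a" using B1 by (auto simp: Ups_def)
lemma Los_pn: "e \<in> Los \<Longrightarrow> feB e \<in> lbls pn" using B3 by (auto simp: Los_def)
lemma Ups_E: "e \<in> Ups \<Longrightarrow> e \<in> fE B" by (auto simp: Ups_def)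
lemma Los_E: "e \<in> Los \<Longrightarrow> e \<in> fE B" by (auto simp: Los_def)

lemma FE_cases:
  assumes "xx \<in> fE F"
  obtains (T) e where "xx = ECp True e" "e \<in> fE B" "e \<noteq> \<epsilon>" "e \<noteq> \<epsilon>3"
    | (H) e where "xx = ECp False e" "e \<in> fE B" "e \<noteq> \<epsilon>" "e \<noteq> \<epsilon>2"
    | (M) "xx = EMid"
    | (I) e where "xx = EIn e" "e \<in> Ups"
    | (O) e where "xx = EOut e" "e \<in> Los"
  using assms unfolding FE by blast

lemma feB_ne: "e \<in> fE B \<Longrightarrow> e \<noteq> \<epsilon>3 \<Longrightarrow> feB e \<noteq> l3" "e \<in> fE B \<Longrightarrow> e \<noteq> \<epsilon>2 \<Longrightarrow> feB e \<noteq> l2"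
  using feB_inj eps2 eps3 by metis+

lemma in_FV: "v \<in> fV B \<Longrightarrow> v \<noteq> \<iota> \<Longrightarrow> v \<noteq> \<kappa> \<Longrightarrow> Cp b v \<in> fV F"
  "NW \<in> fV F" "NCW \<in> fV F" "e \<in> Ups \<Longrightarrow> NCoc e \<in> fV F" "e \<in> Los \<Longrightarrow> NCon e \<in> fV F"
  unfolding FV by blast+

lemma EC_up: assumes xx: "xx \<in> fE F"
  shows "(fup F xx = None \<longleftrightarrow> fe' xx \<in> gI ` lbls a) \<and>
     (\<forall>v. fup F xx = Some v \<longrightarrow> v \<in> fV F \<and> fe' xx \<in> snd (snd (fv' v)))"
  using xx
proof (cases rule: FE_cases)
  case (T e)
  have l: "feB e \<noteq> l3" using feB_ne T by blast
  show ?thesis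
  proof (cases "e = \<epsilon>2")
    case True
    then have "l2 \<noteq> l3" using T e23 by simp
    then show ?thesis using T True in_FV g_dis by (auto simp: Fup gT_ne eps2)
  next
    case False
    show ?thesis
    proof (cases "fup B e")
      case None
      then have "e \<in> Ups" using T False by (simp add: Ups_def)
      then show ?thesis using T False None in_FV l g_dis by (auto simp: Fup gT_ne)
    next
      case (Some v)
      have v: "v \<in> fV B" "feB e \<in> snd (snd (fvB v))" using B2[OF T(2) Some] by auto
      have "v \<noteq> \<iota>" using up_iota[OF T(2)] Some T False by auto
      moreover have "v \<noteq> \<kappa>" using up_kappa[OF T(2)] Some by auto
      moreover have "gTp (feB e) \<in> gT ` snd (snd (fvB v))" using v(2) gT_ne[OF l] by (metis image_eqI)
      ultimately show ?thesis using T False Some in_FV v l g_dis by (auto simp: Fup gT_ne)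
    qed
  qed
next
  case (H e)
  have l: "feB e \<noteq> l2" using feB_ne H by blast
  show ?thesis
  proof (cases "fup B e")
    case None
    then have "e \<in> Ups" using H by (simp add: Ups_def)
    then show ?thesis using H None in_FV l g_dis by (auto simp: Fup gH_ne)
  next
    case (Some v)
    have v: "v \<in> fV B" "feB e \<in> snd (snd (fvB v))" using B2[OF H(2) Some] by auto
    have "v \<noteq> \<iota>" using up_iota[OF H(2)] Some H by auto
    moreover have "v \<noteq> \<kappa>" using up_kappa[OF H(2)] Some by auto
    moreover have "gHp (feB e) \<in> gH ` snd (snd (fvB v))" using v(2) gH_ne[OF l] by (metis image_eqI)
    ultimately show ?thesis using H Some in_FV v l g_dis by (auto simp: Fup gH_ne)
  qed
next
  case M
  show ?thesis
  proof (cases "\<epsilon>3 = \<epsilon>2")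
    case True
    then have "l2 = l3" using e23 by simp
    then show ?thesis using M True in_FV gTp_ne_mid by (auto simp: Fup gT_l3)
  next
    case False
    show ?thesis
    proof (cases "fup B \<epsilon>3")
      case None
      then have "\<epsilon>3 \<in> Ups" using eps3 False by (simp add: Ups_def)
      then show ?thesis using M False None in_FV gTp_ne_mid by (auto simp: Fup eps3 gT_l3)
    next
      case (Some v)
      have v: "v \<in> fV B" "l3 \<in> snd (snd (fvB v))" using B2[OF eps3(1) Some] eps3 by auto
      have "v \<noteq> \<iota>" using up_iota[OF eps3(1)] Some eps3 False by auto
      moreover have "v \<noteq> \<kappa>" using up_kappa[OF eps3(1)] Some by auto
      moreover have "to_nat (EMid :: nat see) \<in> gT ` snd (snd (fvB v))" using v(2) gT_l3 by (metis image_eqI)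
      ultimately show ?thesis using M False Some in_FV v gTp_ne_mid by (auto simp: Fup gT_l3)
    qed
  qed
next
  case (I e)
  then show ?thesis using Ups_a by (auto simp: Fup)
next
  case (O e)
  then show ?thesis using in_FV g_dis by (auto simp: Fup)
qed

lemma EC_lo: assumes xx: "xx \<in> fE F"
  shows "(flo F xx = None \<longleftrightarrow> fe' xx \<in> gO ` lbls pn) \<and>
     (\<forall>v. flo F xx = Some v \<longrightarrow> v \<in> fV F \<and> fe' xx \<in> fst (snd (fv' v)))"
  using xx
proof (cases rule: FE_cases)
  case (T e)
  have l: "feB e \<noteq> l3" using feB_ne T by blast
  show ?thesis
  proof (cases "flo B e")
    case None
    then have "e \<in> Los" using T by (simp add: Los_def)
    then show ?thesis using T None in_FV l g_dis by (auto simp: Flo)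
  next
    case (Some v)
    have v: "v \<in> fV B" "feB e \<in> fst (snd (fvB v))" using B4[OF T(2) Some] by auto
    have "v \<noteq> \<kappa>" using lo_kappa[OF T(2)] Some T by auto
    moreover have "v \<noteq> \<iota>" using lo_iota[OF T(2)] Some by auto
    moreover have "gTp (feB e) \<in> gT ` fst (snd (fvB v))" using v(2) gT_ne[OF l] by (metis image_eqI)
    ultimately show ?thesis using T Some in_FV v l g_dis by (auto simp: Flo gT_ne)
  qed
next
  case (H e)
  have l: "feB e \<noteq> l2" using feB_ne H by blast
  show ?thesis
  proof (cases "e = \<epsilon>3")
    case True
    then have "l2 \<noteq> l3" using H e23 by simp
    then show ?thesis using H True in_FV g_dis by (auto simp: Flo gH_ne eps3)
  next
    case False
    show ?thesis
    proof (cases "flo B e")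
      case None
      then have "e \<in> Los" using H False by (simp add: Los_def)
      then show ?thesis using H False None in_FV l g_dis by (auto simp: Flo gH_ne)
    next
      case (Some v)
      have v: "v \<in> fV B" "feB e \<in> fst (snd (fvB v))" using B4[OF H(2) Some] by auto
      have "v \<noteq> \<kappa>" using lo_kappa[OF H(2)] Some H False by auto
      moreover have "v \<noteq> \<iota>" using lo_iota[OF H(2)] Some by auto
      moreover have "gHp (feB e) \<in> gH ` fst (snd (fvB v))" using v(2) gH_ne[OF l] by (metis image_eqI)
      ultimately show ?thesis using H False Some in_FV v l g_dis by (auto simp: Flo gH_ne)
    qed
  qed
next
  case M
  show ?thesis
  proof (cases "\<epsilon>2 = \<epsilon>3")
    case True
    then have "l2 = l3" using e23 by simp
    moreover have "gH l3 = to_nat (EMid :: nat see)" using \<open>l2 = l3\<close> gH_l2 by simp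
    ultimately show ?thesis using M True in_FV gTp_ne_mid by (auto simp: Flo gH_l2)
  next
    case False
    show ?thesis
    proof (cases "flo B \<epsilon>2")
      case None
      then have "\<epsilon>2 \<in> Los" using eps2 False by (simp add: Los_def)
      then show ?thesis using M False None in_FV gTp_ne_mid by (auto simp: Flo eps2 gH_l2)
    next
      case (Some v)
      have v: "v \<in> fV B" "l2 \<in> fst (snd (fvB v))" using B4[OF eps2(1) Some] eps2 by auto
      have "v \<noteq> \<kappa>" using lo_kappa[OF eps2(1)] Some eps2 False by auto
      moreover have "v \<noteq> \<iota>" using lo_iota[OF eps2(1)] Some by auto
      moreover have "to_nat (EMid :: nat see) \<in> gH ` fst (snd (fvB v))" using v(2) gH_l2 by (metis image_eqI)
      ultimately show ?thesis using M False Some in_FV v gTp_ne_mid by (auto simp: Flo gH_l2)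
    qed
  qed
next
  case (I e)
  then show ?thesis using in_FV g_dis by (auto simp: Flo)
next
  case (O e)
  then show ?thesis using Los_pn by (auto simp: Flo)
qed

end


lemma sigs_nonempty: "\<sigma> \<in> sigs s \<Longrightarrow> fst (snd \<sigma>) \<union> snd (snd \<sigma>) \<noteq> {}"
  unfolding sigs_set sig_def using atomic_nonempty by fastforce

context bdec
begin

lemma FV_cases:
  assumes "v \<in> fV F"
  obtains (C) b u where "v = Cp b u" "u \<in> fV B" "u \<noteq> \<iota>" "u \<noteq> \<kappa>"
    | (W) "v = NW" | (CW) "v = NCW" | (Co) e where "v = NCoc e" "e \<in> Ups"
    | (Ct) e where "v = NCon e" "e \<in> Los"
  using assms unfolding FV by blast

lemma in_FE: "e \<in> fE B \<Longrightarrow> e \<noteq> \<epsilon> \<Longrightarrow> e \<noteq> \<epsilon>3 \<Longrightarrow> ECp True e \<in> fE F"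
  "e \<in> fE B \<Longrightarrow> e \<noteq> \<epsilon> \<Longrightarrow> e \<noteq> \<epsilon>2 \<Longrightarrow> ECp False e \<in> fE F"
  "EMid \<in> fE F" "e \<in> Ups \<Longrightarrow> EIn e \<in> fE F" "e \<in> Los \<Longrightarrow> EOut e \<in> fE F"
  unfolding FE by blast+

lemma Ups_ne: "e \<in> Ups \<Longrightarrow> e \<noteq> \<epsilon> \<and> e \<noteq> \<epsilon>2" and Los_ne: "e \<in> Los \<Longrightarrow> e \<noteq> \<epsilon> \<and> e \<noteq> \<epsilon>3"
  by (auto simp: Ups_def Los_def)

lemma LOW: assumes v: "v \<in> fV F" and l: "l \<in> snd (snd (fv' v))"
  shows "\<exists>xx\<in>fE F. fup F xx = Some v \<and> fe' xx = l"
  using v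
proof (cases rule: FV_cases)
  case (C b u)
  obtain m where m: "m \<in> snd (snd (fvB u))" "l = (if b then gT m else gH m)"
    using l C by (cases b) auto
  obtain e where e: "e \<in> fE B" "feB e = m" "fup B e = Some u" using B5[OF C(2) m(1)] by blast
  have ne: "e \<noteq> \<epsilon>" "e \<noteq> \<epsilon>2" using e(3) upe eps2(3) C(3) by auto
  show ?thesis
  proof (cases b)
    case True
    show ?thesis
    proof (cases "e = \<epsilon>3")
      case True': True
      have "\<epsilon>3 \<noteq> \<epsilon>2" using ne True' by simp
      then have "fup F EMid = Some v" using e C \<open>b\<close> True' by (simp add: Fup)
      moreover have "fe' EMid = l" using m \<open>b\<close> e True' eps3 gT_l3 by simp
      ultimately show ?thesis using in_FE(3) by blast
    next
      case False
      have "fup F (ECp True e) = Some v" using e C \<open>b\<close> ne by (simp add: Fup)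
      moreover have "fe' (ECp True e) = l" using m \<open>b\<close> e gT_ne feB_ne(1)[OF e(1) False] by simp
      ultimately show ?thesis using in_FE(1)[OF e(1) ne(1) False] by blast
    qed
  next
    case False
    have "fup F (ECp False e) = Some v" using e C \<open>\<not> b\<close> ne by (simp add: Fup)
    moreover have "fe' (ECp False e) = l" using m \<open>\<not> b\<close> e gH_ne feB_ne(2)[OF e(1) ne(2)] by simp
    ultimately show ?thesis using in_FE(2)[OF e(1) ne] by blast
  qed
next
  case W
  then have l: "l = gT l2" using l by simp
  show ?thesis
  proof (cases "\<epsilon>2 = \<epsilon>3")
    case True
    then have "fup F EMid = Some v" using W by (simp add: Fup)
    moreover have "fe' EMid = l" using l True e23 gT_l3 by simp
    ultimately show ?thesis using in_FE(3) by blast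
  next
    case False
    have "fup F (ECp True \<epsilon>2) = Some v" using W by (simp add: Fup)
    moreover have "fe' (ECp True \<epsilon>2) = l" using l False e23 eps2 gT_ne by simp
    ultimately show ?thesis using in_FE(1)[OF eps2(1,2)] False by blast
  qed
next
  case CW
  then show ?thesis using l by simp
next
  case (Co e)
  have e: "e \<in> fE B" "fup B e = None" "e \<noteq> \<epsilon>" "e \<noteq> \<epsilon>2" using Co(2) unfolding Ups_def by blast+
  have "l = gT (feB e) \<or> l = gHp (feB e)" using l Co by simp
  then show ?thesis
  proof
    assume l: "l = gT (feB e)"
    show ?thesis
    proof (cases "e = \<epsilon>3")
      case True
      then have "fup F EMid = Some v" using e Co by (simp add: Fup)
      moreover have "fe' EMid = l" using l True eps3 gT_l3 by simp
      ultimately show ?thesis using in_FE(3) by blast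
    next
      case False
      have "fup F (ECp True e) = Some v" using e Co by (simp add: Fup)
      moreover have "fe' (ECp True e) = l" using l gT_ne feB_ne(1)[OF e(1) False] by simp
      ultimately show ?thesis using in_FE(1)[OF e(1,3) False] by blast
    qed
  next
    assume l: "l = gHp (feB e)"
    have "fup F (ECp False e) = Some v" using e Co by (simp add: Fup)
    moreover have "fe' (ECp False e) = l" using l by simp
    ultimately show ?thesis using in_FE(2)[OF e(1,3,4)] by blast
  qed
next
  case (Ct e)
  then have "fup F (EOut e) = Some v" "fe' (EOut e) = l" using l by (auto simp: Fup)
  then show ?thesis using in_FE(5)[OF Ct(2)] by blast
qed

lemma UPP: assumes v: "v \<in> fV F" and l: "l \<in> fst (snd (fv' v))"
  shows "\<exists>xx\<in>fE F. flo F xx = Some v \<and> fe' xx = l"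
  using v
proof (cases rule: FV_cases)
  case (C b u)
  obtain m where m: "m \<in> fst (snd (fvB u))" "l = (if b then gT m else gH m)"
    using l C by (cases b) auto
  obtain e where e: "e \<in> fE B" "feB e = m" "flo B e = Some u" using B6[OF C(2) m(1)] by blast
  have ne: "e \<noteq> \<epsilon>" "e \<noteq> \<epsilon>3" using e(3) loe eps3(3) C(4) by auto
  show ?thesis
  proof (cases b)
    case True
    have "flo F (ECp True e) = Some v" using e C \<open>b\<close> ne by (simp add: Flo)
    moreover have "fe' (ECp True e) = l" using m \<open>b\<close> e gT_ne feB_ne(1)[OF e(1) ne(2)] by simp
    ultimately show ?thesis using in_FE(1)[OF e(1) ne] by blast
  next
    case False
    show ?thesis
    proof (cases "e = \<epsilon>2")
      case True': True
      have "\<epsilon>2 \<noteq> \<epsilon>3" using ne True' by simp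
      then have "flo F EMid = Some v" using e C \<open>\<not> b\<close> True' by (simp add: Flo)
      moreover have "fe' EMid = l" using m \<open>\<not> b\<close> e True' eps2 gH_l2 by simp
      ultimately show ?thesis using in_FE(3) by blast
    next
      case False'': False
      have "flo F (ECp False e) = Some v" using e C \<open>\<not> b\<close> ne by (simp add: Flo)
      moreover have "fe' (ECp False e) = l" using m \<open>\<not> b\<close> e gH_ne feB_ne(2)[OF e(1) False''] by simp
      ultimately show ?thesis using in_FE(2)[OF e(1) ne(1) False''] by blast
    qed
  qed
next
  case W
  then show ?thesis using l by simp
next
  case CW
  then have l: "l = gH l3" using l by simp
  show ?thesis
  proof (cases "\<epsilon>2 = \<epsilon>3")
    case True
    then have "flo F EMid = Some v" using CW by (simp add: Flo)
    moreover have "fe' EMid = l" using l True e23 gH_l2 by simp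
    ultimately show ?thesis using in_FE(3) by blast
  next
    case False
    have "flo F (ECp False \<epsilon>3) = Some v" using CW by (simp add: Flo)
    moreover have "fe' (ECp False \<epsilon>3) = l" using l False e23 eps3 gH_ne by simp
    ultimately show ?thesis using in_FE(2)[OF eps3(1,2)] False by metis
  qed
next
  case (Co e)
  then have "flo F (EIn e) = Some v" "fe' (EIn e) = l" using l by (auto simp: Flo)
  then show ?thesis using in_FE(4)[OF Co(2)] by blast
next
  case (Ct e)
  have e: "e \<in> fE B" "flo B e = None" "e \<noteq> \<epsilon>" "e \<noteq> \<epsilon>3" using Ct(2) unfolding Los_def by blast+
  have "l = gTp (feB e) \<or> l = gH (feB e)" using l Ct by simp
  then show ?thesis
  proof
    assume l: "l = gTp (feB e)"
    have "flo F (ECp True e) = Some v" using e Ct by (simp add: Flo)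
    moreover have "fe' (ECp True e) = l" using l by simp
    ultimately show ?thesis using in_FE(1)[OF e(1,3,4)] by blast
  next
    assume l: "l = gH (feB e)"
    show ?thesis
    proof (cases "e = \<epsilon>2")
      case True
      then have "flo F EMid = Some v" using e Ct by (simp add: Flo)
      moreover have "fe' EMid = l" using l True eps2 gH_l2 by simp
      ultimately show ?thesis using in_FE(3) by blast
    next
      case False
      have "flo F (ECp False e) = Some v" using e Ct by (simp add: Flo)
      moreover have "fe' (ECp False e) = l" using l gH_ne feB_ne(2)[OF e(1) False] by simp
      ultimately show ?thesis using in_FE(2)[OF e(1,3) False] by blast
    qed
  qed
qed

end


context bdec
begin

lemma rsig_wk: "rsig gT (KWk, {}, {l2}) = (KWk, {}, {gT l2})" by (simp add: rsig_def)
lemma rsig_cw: "rsig gH (KCowk, {l3}, {}) = (KCowk, {gH l3}, {})" by (simp add: rsig_def)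

lemma subP: "(\<lambda>l. (KCoctr, {gI l}, {gT l, gHp l})) ` lbls a \<subseteq> sigs Psi"
  "rsig gT ` (sigs S1 \<union> sigs S2 \<union> sigs S3 \<union> {(KWk, {}, {l2})}) \<subseteq> sigs Psi"
  "rsig gH ` (sigs S1 \<union> sigs S2 \<union> sigs S3 \<union> {(KCowk, {l3}, {})}) \<subseteq> sigs Psi"
  "(\<lambda>l. (KCtr, {gTp l, gH l}, {gO l})) ` lbls pn \<subseteq> sigs Psi"
  by (simp_all only: Psi_props(4)) blast+

lemma VS: assumes v: "v \<in> fV F" shows "fv' v \<in> sigs Psi"
  using v
proof (cases rule: FV_cases)
  case (C b u)
  then have "fvB u \<in> sigs S1 \<union> sigs S2 \<union> sigs S3" using sig_rest by blast
  then have h: "rsig gT (fvB u) \<in> sigs Psi" "rsig gH (fvB u) \<in> sigs Psi"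
    using subsetD[OF subP(2) imageI] subsetD[OF subP(3) imageI] by blast+
  then show ?thesis using C(1) by (cases b) simp_all
next
  case W
  have "rsig gT (KWk, {}, {l2}) \<in> sigs Psi" using subsetD[OF subP(2) imageI] by blast
  then show ?thesis using W rsig_wk by simp
next
  case CW
  have "rsig gH (KCowk, {l3}, {}) \<in> sigs Psi" using subsetD[OF subP(3) imageI] by blast
  then show ?thesis using CW rsig_cw by simp
next
  case (Co e) then show ?thesis using Ups_a subsetD[OF subP(1) imageI, of "feB e"] by simp
next
  case (Ct e) then show ?thesis using Los_pn subsetD[OF subP(4) imageI, of "feB e"] by simp
qed

lemma SURJ: assumes s: "\<sigma> \<in> sigs Psi" shows "\<exists>v\<in>fV F. fv' v = \<sigma>"
proof -
  from s consider (a) l where "l \<in> lbls a" "\<sigma> = (KCoctr, {gI l}, {gT l, gHp l})"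
    | (t) s0 where "s0 \<in> sigs S1 \<union> sigs S2 \<union> sigs S3" "\<sigma> = rsig gT s0"
    | (w) "\<sigma> = rsig gT (KWk, {}, {l2})"
    | (h) s0 where "s0 \<in> sigs S1 \<union> sigs S2 \<union> sigs S3" "\<sigma> = rsig gH s0"
    | (cw) "\<sigma> = rsig gH (KCowk, {l3}, {})"
    | (n) l where "l \<in> lbls pn" "\<sigma> = (KCtr, {gTp l, gH l}, {gO l})"
    unfolding Psi_props(4) by blast
  then show ?thesis
  proof cases
    case a
    obtain e where e: "e \<in> fE B" "feB e = l" using feB_surj a(1) by blast
    have "e \<noteq> \<epsilon>" using e fe_eps a(1) le_a by auto
    moreover have "e \<noteq> \<epsilon>2" using e eps2 a(1) l2_a by auto
    moreover have "fup B e = None" using B1[OF e(1)] e a(1) by simp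
    ultimately have "e \<in> Ups" using e by (simp add: Ups_def)
    then show ?thesis using in_FV(4) a e by force
  next
    case t
    then obtain u where "u \<in> fV B - {\<iota>, \<kappa>}" "s0 = fvB u" using sig_rest by blast
    then show ?thesis using in_FV(1)[of u True] t by force
  next
    case w then show ?thesis using in_FV(2) rsig_wk by force
  next
    case h
    then obtain u where "u \<in> fV B - {\<iota>, \<kappa>}" "s0 = fvB u" using sig_rest by blast
    then show ?thesis using in_FV(1)[of u False] h by force
  next
    case cw then show ?thesis using in_FV(3) rsig_cw by force
  next
    case n
    have "l \<in> lbls a \<union> created S" using n(1) EQ by blast
    then obtain e where e: "e \<in> fE B" "feB e = l" using feB_surj by blast
    have "e \<noteq> \<epsilon>" using e fe_eps n(1) le_pn by auto
    moreover have "e \<noteq> \<epsilon>3" using e eps3 n(1) l3_pn by auto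
    moreover have "flo B e = None" using B3[OF e(1)] e n(1) by simp
    ultimately have "e \<in> Los" using e by (simp add: Los_def)
    then show ?thesis using in_FV(5) n e by force
  qed
qed

lemma inner: "ECp b e \<in> fE F \<Longrightarrow> e \<in> fE B" "EIn e \<in> fE F \<Longrightarrow> e \<in> fE B" "EOut e \<in> fE F \<Longrightarrow> e \<in> fE B"
  unfolding FE Ups_def Los_def by auto

lemma fe'_inj: "inj_on fe' (fE F)"
proof (rule inj_onI)
  fix x1 x2 assume x1: "x1 \<in> fE F" and x2: "x2 \<in> fE F" and eq: "fe' x1 = fe' x2"
  then have m: "map_see feB x1 = map_see feB x2" by (simp add: fe'_def)
  show "x1 = x2"
  proof (cases x1)
    case (ECp b e)
    then obtain e' where "x2 = ECp b e'" "feB e = feB e'" using m by (cases x2) auto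
    then show ?thesis using ECp x1 x2 inner feB_inj by metis
  next
    case (EIn e)
    then obtain e' where "x2 = EIn e'" "feB e = feB e'" using m by (cases x2) auto
    then show ?thesis using EIn x1 x2 inner feB_inj by metis
  next
    case (EOut e)
    then obtain e' where "x2 = EOut e'" "feB e = feB e'" using m by (cases x2) auto
    then show ?thesis using EOut x1 x2 inner feB_inj by metis
  next
    case EMid
    then show ?thesis using m by (cases x2) auto
  qed
qed

lemma fv'_inj: "inj_on fv' (fV F)"
proof (rule inj_onI)
  fix v1 v2 assume v1: "v1 \<in> fV F" and v2: "v2 \<in> fV F" and eq: "fv' v1 = fv' v2"
  have ne: "fst (snd (fv' v1)) \<union> snd (snd (fv' v1)) \<noteq> {}" using sigs_nonempty[OF VS[OF v1]] .
  then obtain l where "l \<in> fst (snd (fv' v1)) \<or> l \<in> snd (snd (fv' v1))" by blast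
  then show "v1 = v2"
  proof
    assume l: "l \<in> fst (snd (fv' v1))"
    obtain x1 where x1: "x1 \<in> fE F" "flo F x1 = Some v1" "fe' x1 = l" using UPP[OF v1 l] by blast
    obtain x2 where x2: "x2 \<in> fE F" "flo F x2 = Some v2" "fe' x2 = l" using UPP[OF v2] l eq by metis
    have "x1 = x2" using fe'_inj x1 x2 by (metis inj_onD)
    then show ?thesis using x1 x2 by simp
  next
    assume l: "l \<in> snd (snd (fv' v1))"
    obtain x1 where x1: "x1 \<in> fE F" "fup F x1 = Some v1" "fe' x1 = l" using LOW[OF v1 l] by blast
    obtain x2 where x2: "x2 \<in> fE F" "fup F x2 = Some v2" "fe' x2 = l" using LOW[OF v2] l eq by metis
    have "x1 = x2" using fe'_inj x1 x2 by (metis inj_onD)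
    then show ?thesis using x1 x2 by simp
  qed
qed

lemma fv'_fst: "fst (fv' (Cp b u)) = fst (fvB u)" by (cases b) simp_all

lemma lab': "v \<in> fV F \<Longrightarrow> fst (fv' v) = flab F v"
  by (erule FV_cases) (auto simp: Flab labB fv'_fst)

lemma main_iso: "flow_iso F (SF P0 Psi)"
proof -
  have PP: "lbls P0 = gI ` lbls a" by simp
  have QQ: "lbls (endf P0 Psi) = gO ` lbls pn" using Psi_props(2) by simp
  have bv: "bij_betw fv' (fV F) (sigs Psi)"
    unfolding bij_betw_def using fv'_inj VS SURJ by blast
  have img: "fe' ` fE F = lbls P0 \<union> \<Union> ((snd \<circ> snd) ` sigs Psi)"
  proof
    show "fe' ` fE F \<subseteq> lbls P0 \<union> \<Union> ((snd \<circ> snd) ` sigs Psi)"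
    proof
      fix l assume "l \<in> fe' ` fE F"
      then obtain xx where xx: "xx \<in> fE F" "l = fe' xx" by blast
      show "l \<in> lbls P0 \<union> \<Union> ((snd \<circ> snd) ` sigs Psi)"
      proof (cases "fup F xx")
        case None then show ?thesis using EC_up[OF xx(1)] xx PP by auto
      next
        case (Some v)
        then have "v \<in> fV F" "fe' xx \<in> snd (snd (fv' v))" using EC_up[OF xx(1)] by auto
        then show ?thesis using VS xx by force
      qed
    qed
  next
    show "lbls P0 \<union> \<Union> ((snd \<circ> snd) ` sigs Psi) \<subseteq> fe' ` fE F"
    proof
      fix l assume "l \<in> lbls P0 \<union> \<Union> ((snd \<circ> snd) ` sigs Psi)"
      then consider "l \<in> gI ` lbls a" | \<sigma> where "\<sigma> \<in> sigs Psi" "l \<in> snd (snd \<sigma>)" using PP by auto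
      then show "l \<in> fe' ` fE F"
      proof cases
        case 1
        then obtain m where m: "m \<in> lbls a" "l = gI m" by blast
        obtain e where e: "e \<in> fE B" "feB e = m" using feB_surj m(1) by blast
        have "e \<noteq> \<epsilon>" using e fe_eps m(1) le_a by auto
        moreover have "e \<noteq> \<epsilon>2" using e eps2 m(1) l2_a by auto
        moreover have "fup B e = None" using B1[OF e(1)] e m(1) by simp
        ultimately have "e \<in> Ups" using e by (simp add: Ups_def)
        then show ?thesis using in_FE(4) e m by force
      next
        case 2
        then obtain v where v: "v \<in> fV F" "fv' v = \<sigma>" using SURJ by blast
        then show ?thesis using LOW[of v l] 2 by force
      qed
    qed
  qed
  have be: "bij_betw fe' (fE F) (lbls P0 \<union> \<Union> ((snd \<circ> snd) ` sigs Psi))"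
    unfolding bij_betw_def using fe'_inj img by blast
  show ?thesis
    by (rule iso_crit[OF bv be]) (use lab' EC_up EC_lo good_sigs_disj[OF Psi_props(1)] PP QQ in auto)
qed

end


lemma the_pos_out: "good a s \<Longrightarrow> i < length s \<Longrightarrow> is_atomic (snd (s ! i)) \<Longrightarrow> e \<in> lbls (rconcl (snd (s ! i))) \<Longrightarrow>
  (THE i. i < length s \<and> is_atomic (snd (s ! i)) \<and> e \<in> lbls (rconcl (snd (s ! i)))) = i"
proof (rule the_equality)
  fix j assume g: "good a s" and i: "i < length s" "is_atomic (snd (s ! i))" "e \<in> lbls (rconcl (snd (s ! i)))"
    and j: "j < length s \<and> is_atomic (snd (s ! j)) \<and> e \<in> lbls (rconcl (snd (s ! j)))"
  show "j = i"
  proof (rule ccontr)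
    assume "j \<noteq> i" then have "i < j \<or> j < i" by arith
    then show False using good_pos_disj[OF g] i j by fastforce
  qed
qed simp

lemma the_pos_in: "good a s \<Longrightarrow> i < length s \<Longrightarrow> is_atomic (snd (s ! i)) \<Longrightarrow> e \<in> lbls (rprem (snd (s ! i))) \<Longrightarrow>
  (THE i. i < length s \<and> is_atomic (snd (s ! i)) \<and> e \<in> lbls (rprem (snd (s ! i)))) = i"
proof (rule the_equality)
  fix j assume g: "good a s" and i: "i < length s" "is_atomic (snd (s ! i))" "e \<in> lbls (rprem (snd (s ! i)))"
    and j: "j < length s \<and> is_atomic (snd (s ! j)) \<and> e \<in> lbls (rprem (snd (s ! j)))"
  show "j = i"
  proof (rule ccontr)
    assume "j \<noteq> i" then have "i < j \<or> j < i" by arith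
    then show False using good_pos_disj[OF g] i j by fastforce
  qed
qed simp

lemma flow_of_ann_af:
  assumes g: "good a s"
  shows "\<forall>e\<in>fE (flow_of_ann (a, s)). (\<forall>v. fup (flow_of_ann (a, s)) e = Some v \<longrightarrow> v \<in> fV (flow_of_ann (a, s))) \<and>
     (\<forall>v. flo (flow_of_ann (a, s)) e = Some v \<longrightarrow> v \<in> fV (flow_of_ann (a, s)))"
proof (intro ballI conjI allI impI)
  fix e v assume e: "e \<in> fE (flow_of_ann (a, s))"
  then have eE: "e \<in> lbls a \<union> created s" using good_allL[OF g] by (simp add: flow_of_ann_def Let_def)
  {
    assume u: "fup (flow_of_ann (a, s)) e = Some v"
    then have n: "e \<notin> lbls a" by (simp add: flow_of_ann_def Let_def hd_forms split: if_splits)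
    then have "e \<in> created s" using eE by blast
    then obtain c r where cr: "(c, r) \<in> set s" "is_atomic r" "e \<in> lbls (rconcl r)"
      by (auto simp: created_set split: if_splits)
    then obtain i where i: "i < length s" "s ! i = (c, r)" by (auto simp: in_set_conv_nth)
    have "v = i" using u n the_pos_out[OF g i(1), of e] i cr by (simp add: flow_of_ann_def Let_def hd_forms)
    then show "v \<in> fV (flow_of_ann (a, s))" using i cr by (simp add: flow_of_ann_def Let_def)
  }
  {
    assume u: "flo (flow_of_ann (a, s)) e = Some v"
    then have n: "e \<notin> lbls (endf a s)" by (simp add: flow_of_ann_def Let_def last_forms split: if_splits)
    then have "e \<in> consumed s" using eE good_G2[OF g] by blast
    then obtain c r where cr: "(c, r) \<in> set s" "is_atomic r" "e \<in> lbls (rprem r)"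
      by (auto simp: consumed_set split: if_splits)
    then obtain i where i: "i < length s" "s ! i = (c, r)" by (auto simp: in_set_conv_nth)
    have "v = i" using u n the_pos_in[OF g i(1), of e] i cr by (simp add: flow_of_ann_def Let_def last_forms)
    then show "v \<in> fV (flow_of_ann (a, s))" using i cr by (simp add: flow_of_ann_def Let_def)
  }
qed

lemma SF_up: assumes g: "good a s" and e: "e \<in> lbls a \<union> created s" and u: "fup (SF a s) e = Some \<sigma>"
  shows "\<sigma> \<in> sigs s \<and> e \<in> snd (snd \<sigma>)"
proof -
  have n: "e \<notin> lbls a" using u by (simp add: sigflow_def split: if_splits)
  then have "e \<in> created s" using e by blast
  then obtain \<sigma>' where s': "\<sigma>' \<in> sigs s" "e \<in> snd (snd \<sigma>')" using created_ex by blast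
  have "(THE \<sigma>. \<sigma> \<in> sigs s \<and> e \<in> snd (snd \<sigma>)) = \<sigma>'" using the_sig_out[OF g s'] .
  then have "\<sigma> = \<sigma>'" using u n by (simp add: sigflow_def)
  then show ?thesis using s' by simp
qed

lemma SF_lo: assumes g: "good a s" and e: "e \<in> lbls a \<union> created s" and u: "flo (SF a s) e = Some \<sigma>"
  shows "\<sigma> \<in> sigs s \<and> e \<in> fst (snd \<sigma>)"
proof -
  have n: "e \<notin> lbls (endf a s)" using u by (simp add: sigflow_def split: if_splits)
  then have "e \<in> consumed s" using e good_G2[OF g] by blast
  then obtain \<sigma>' where s': "\<sigma>' \<in> sigs s" "e \<in> fst (snd \<sigma>')" using consumed_ex by blast
  have "(THE \<sigma>. \<sigma> \<in> sigs s \<and> e \<in> fst (snd \<sigma>)) = \<sigma>'" using the_sig_in[OF g s'] .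
  then have "\<sigma> = \<sigma>'" using u n by (simp add: sigflow_def)
  then show ?thesis using s' by simp
qed

theorem theorem5p3:
  fixes B :: "('v, 'e) flow" and C :: "('w, 'f) flow" and Phi :: "'n atom deriv"
  assumes "se_red B C"
    and "sks_deriv Phi"
    and "is_flow_of B Phi"
  shows "\<exists>Psi :: 'n atom deriv. sks_deriv Psi \<and> premiss Psi = premiss Phi \<and>
           conclusion Psi = conclusion Phi \<and> is_flow_of C Psi"
proof -
  from assms(1) obtain \<epsilon> \<iota> \<kappa> where afl: "atomic_flow B" and eps: "\<epsilon> \<in> fE B" "fup B \<epsilon> = Some \<iota>"
    "flab B \<iota> = KInt" "flo B \<epsilon> = Some \<kappa>" "flab B \<kappa> = KCut" and isoC: "flow_iso C (se_construct B \<epsilon>)"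
    unfolding se_red_def by blast
  from assms(3) obtain D where D: "ann_ok D" "erase D = Phi" "flow_iso B (flow_of_ann D)"
    unfolding is_flow_of_def by blast
  obtain a S where aS: "D = (a, S)" by (cases D)
  have "ann_ok (a, S)" using D(1) aS by simp
  then have "good (fst (a, S)) (snd (a, S)) \<and> sksA (snd (a, S))" by (rule ann_ok_iff[THEN iffD1])
  then have gS: "good a S" and sS: "sksA S" by auto
  have isoB: "flow_iso B (SF a S)" using flow_iso_trans[OF D(3)[unfolded aS] flow_of_ann_SF[OF gS]] .
  then obtain fvB feB where f: "bij_betw fvB (fV B) (fV (SF a S))" "bij_betw feB (fE B) (fE (SF a S))"
     "\<forall>v\<in>fV B. flab (SF a S) (fvB v) = flab B v"
     "\<forall>e\<in>fE B. fup (SF a S) (feB e) = map_option fvB (fup B e) \<and> flo (SF a S) (feB e) = map_option fvB (flo B e)"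
    unfolding flow_iso_def by blast
  have VSF: "fV (SF a S) = sigs S" "fE (SF a S) = lbls a \<union> created S" "flab (SF a S) = fst"
    by (auto simp: sigflow_def created_sigs)
  have afB: "\<forall>e\<in>fE B. (\<forall>v. fup B e = Some v \<longrightarrow> v \<in> fV B) \<and> (\<forall>v. flo B e = Some v \<longrightarrow> v \<in> fV B)"
    using conjunct1[OF conjunct2[OF conjunct2[OF afl[unfolded atomic_flow_def]]]] .
  have iV: "\<iota> \<in> fV B" "\<kappa> \<in> fV B" using afB eps by auto
  have fvin: "fvB v \<in> sigs S" if "v \<in> fV B" for v using f(1) VSF that by (auto simp: bij_betw_def)
  obtain c r where cr: "fvB \<iota> = sig r" "(c, r) \<in> set S" "is_atomic r"
    using fvin[OF iV(1)] unfolding sigs_set by blast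
  have "kind r = KInt" using f(3) iV eps cr VSF by (auto simp: sig_def)
  then obtain x y where r: "r = RInt x y" using cr(3) by (cases r) auto
  obtain c' r' where cr': "fvB \<kappa> = sig r'" "(c', r') \<in> set S" "is_atomic r'"
    using fvin[OF iV(2)] unfolding sigs_set by blast
  have "kind r' = KCut" using f(3) iV eps cr' VSF by (auto simp: sig_def)
  then obtain x' y' where r': "r' = RCut x' y'" using cr'(3) by (cases r') auto
  define le where "le = feB \<epsilon>"
  have leE: "le \<in> lbls a \<union> created S" using f(2) eps VSF le_def by (auto simp: bij_betw_def)
  have "fup (SF a S) le = Some (fvB \<iota>)" using f(4) eps le_def by auto
  then have "le \<in> snd (snd (fvB \<iota>))" using SF_up[OF gS leE] by blast
  then have le1: "le = snd x \<or> le = snd y" using cr r by (auto simp: sig_def)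
  have "flo (SF a S) le = Some (fvB \<kappa>)" using f(4) eps le_def by auto
  then have "le \<in> fst (snd (fvB \<kappa>))" using SF_lo[OF gS leE] by blast
  then have le2: "le = snd x' \<or> le = snd y'" using cr' r' by (auto simp: sig_def)
  obtain S1 R where S1: "S = S1 @ (c, RInt x y) # R" using cr(2) r by (meson split_list)
  have "(c', RCut x' y') \<in> set R"
  proof -
    have m: "(c', RCut x' y') \<in> set S" using cr'(2) r' by simp
    have "(c', RCut x' y') \<notin> set S1"
    proof
      assume "(c', RCut x' y') \<in> set S1"
      then have "le \<in> consumed S1" using consumed_mem[of c' "RCut x' y'" S1] le2 by auto
      moreover have gS1: "good a S1" using gS S1 by (simp add: good_append)
      ultimately have "le \<in> lbls a \<union> created S1" using good_G2[OF gS1] by blast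
      moreover have "le \<notin> created S1"
        using good_earlier[of a S1 c "RInt x y" R] gS S1 le1 by auto
      moreover have "le \<notin> lbls a"
      proof
        assume "le \<in> lbls a"
        moreover have "le \<in> created S" using S1 le1 by auto
        ultimately show False using good_fresh0[OF gS] by blast
      qed
      ultimately show False by blast
    qed
    then show ?thesis using m S1 by auto
  qed
  then obtain S2 S3 where R: "R = S2 @ (c', RCut x' y') # S3" by (meson split_list)
  have S': "S = S1 @ (c, RInt x y) # S2 @ (c', RCut x' y') # S3" using S1 R by simp
  interpret bd: bdec a S1 c x y S2 c' x' y' S3 le B \<epsilon> \<iota> \<kappa> fvB feB
  proof
    show "good a (S1 @ (c, RInt x y) # S2 @ (c', RCut x' y') # S3)" using gS S' by simp
    show "sksA (S1 @ (c, RInt x y) # S2 @ (c', RCut x' y') # S3)" using sS S' by simp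
    show "le = snd x \<or> le = snd y" by (rule le1)
    show "le = snd x' \<or> le = snd y'" by (rule le2)
    show "\<forall>e\<in>fE B. (\<forall>v. fup B e = Some v \<longrightarrow> v \<in> fV B) \<and> (\<forall>v. flo B e = Some v \<longrightarrow> v \<in> fV B)" by (rule afB)
    show "\<epsilon> \<in> fE B" "fup B \<epsilon> = Some \<iota>" "flo B \<epsilon> = Some \<kappa>" using eps by auto
    show "bij_betw fvB (fV B) (sigs (S1 @ (c, RInt x y) # S2 @ (c', RCut x' y') # S3))"
      using f(1) VSF S' by simp
    show "bij_betw feB (fE B) (lbls a \<union> created (S1 @ (c, RInt x y) # S2 @ (c', RCut x' y') # S3))"
      using f(2) VSF S' by simp
    show "\<forall>v\<in>fV B. fst (fvB v) = flab B v" using f(3) VSF by simp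
    show "\<forall>e\<in>fE B. fup (SF a (S1 @ (c, RInt x y) # S2 @ (c', RCut x' y') # S3)) (feB e) = map_option fvB (fup B e) \<and>
                flo (SF a (S1 @ (c, RInt x y) # S2 @ (c', RCut x' y') # S3)) (feB e) = map_option fvB (flo B e)"
      using f(4) S' by simp
    show "fvB \<iota> = sig (RInt x y)" using cr r by simp
    show "fvB \<kappa> = sig (RCut x' y')" using cr' r' by simp
    show "feB \<epsilon> = le" by (simp add: le_def)
  qed
  let ?P0 = "rlf bd.gI a"
  have gP: "good ?P0 bd.Psi" by (rule bd.Psi_props(1))
  have iso2: "flow_iso (se_construct B \<epsilon>) (SF ?P0 bd.Psi)" by (rule bd.main_iso)
  have iso3: "flow_iso (SF ?P0 bd.Psi) (flow_of_ann (?P0, bd.Psi))"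
    by (rule flow_iso_sym[OF flow_of_ann_af[OF gP] flow_of_ann_SF[OF gP]])
  have isoF: "flow_iso C (flow_of_ann (?P0, bd.Psi))"
    using flow_iso_trans[OF isoC flow_iso_trans[OF iso2 iso3]] .
  have ann: "ann_ok (?P0, bd.Psi)" using gP bd.Psi_props(3) by (simp add: ann_ok_iff)
  let ?Psi = "erase (?P0, bd.Psi)"
  have 1: "sks_deriv ?Psi" using ann by (simp add: ann_ok_def)
  have PhiE: "Phi = (map_formula fst a, mapS fst S)" using D(2) aS by (simp add: erase_eq)
  have 2: "premiss ?Psi = premiss Phi"
    using PhiE by (simp add: premiss_def erase_eq erase_rl)
  have ePhi: "endf a S = bd.pn" using bd.ch(3) S' by simp
  have c1: "conclusion ?Psi = map_formula fst (endf ?P0 bd.Psi)"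
    by (simp only: conclusion_def erase_eq last_forms endf_map fst_conv snd_conv)
  have c2: "conclusion Phi = map_formula fst (endf a S)"
    using PhiE by (simp only: conclusion_def last_forms endf_map fst_conv snd_conv)
  have 3: "conclusion ?Psi = conclusion Phi"
    unfolding c1 c2 bd.Psi_props(2) ePhi by (simp add: erase_rl)
  have 4: "is_flow_of C ?Psi" unfolding is_flow_of_def using ann isoF by blast
  show ?thesis using 1 2 3 4 by blast
qed


end
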